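(* Let $m\in\mathbb{N}_+$, $T=2^m$, $d\ge1$, $G>0$, and run fixed-horizon Haar OLR (described in the context) with horizon $T$ and hyperparameter $\varepsilon=1$. Then for every $u_{1:T}\in(\mathbb{R}^d)^T$, $$\mathrm{Reg}_T(u_{1:T})=\tilde O\Big(\|\bar u\|_2\sqrt T+\sqrt{K\bar E}\Big),$$ where $\bar u=\frac1T\sum_t u_t$, $K=\sum_{t=1}^{T-1}\mathbf 1[u_{t+1}\ne u_t]$, $\bar E=\sum_{t=1}^T\|u_t-\bar u\|_2^2$, and $\tilde O$ hides constant factors (possibly depending on $G$) and factors poly-logarithmic in $T$ and $\max_t\|u_t\|_2$.
   Context: Online convex optimization game: in each round $t$ the player picks $x_t\in\mathbb{R}^d$; an adversarial environment reveals a convex, $G$-Lipschitz (w.r.t. $\|\cdot\|_2$) loss $l_t$, possibly depending on $x_1,\ldots,x_t$; the player observes $g_t\in\partial l_t(x_t)$. Unconstrained dynamic regret: $\mathrm{Reg}_T(u_{1:T})=\sup_{\text{environments}}[\sum_{t=1}^T l_t(x_t)-\sum_{t=1}^T l_t(u_t)]$. Haar dictionary for $T=2^m$: for $j\in[1:m]$, $l\in[1:2^{-j}T]$, $h^{(j,l)}\in\mathbb{R}^T$ has $t$-th entry $1$ for $t\in[2^j(l-1)+1:2^j(l-1)+2^{j-1}]$, $-1$ for $t\in[2^j(l-1)+2^{j-1}+1:2^jl]$, $0$ otherwise; with the all-one vector these $N=T$ vectors are the columns of a $T\times T$ matrix whose $t$-th row is written $(h_{t,1},\ldots,h_{t,N})$.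 FreeGrad (dimension $d$, hyperparameter $\varepsilon'$, Lipschitz constant $\hat G=G$): initialize $s=0$, $v=\hat G^2$; predict $\hat x=-\varepsilon' s\frac{(2v+\hat G\|s\|_2)\hat G^2}{2(v+\hat G\|s\|_2)^2\sqrt v}\exp(\frac{\|s\|_2^2}{2v+2\hat G\|s\|_2})$; observe $\hat g$; update $s\leftarrow s+\hat g$, $v\leftarrow v+\|\hat g\|_2^2$. Fixed-horizon Haar OLR (horizon $T$, hyperparameter $\varepsilon$): $N=T$ copies $\mathcal{A}_n$ of $d$-dimensional FreeGrad with hyperparameter $\varepsilon/N$; in round $t$, for each $n$ with $h_{t,n}\ne0$ query $\mathcal{A}_n$ for $\hat x_{t,n}$ (else arbitrary), set $w_{t,n}=h_{t,n}\hat x_{t,n}$, predict $x_t=\sum_n w_{t,n}$; after $g_t$, for each $n$ with $h_{t,n}\ne0$ send $h_{t,n}g_t$ to $\mathcal{A}_n$. *)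

theory Defs
  imports Complex_Main
begin

(* Vectors of R^d are represented as functions nat => real vanishing at all
   coordinates i >= d; the dimension d is an explicit natural number so that the
   hidden constants of the O~-bound can be required to be independent of d. *)

type_synonym vec = "nat \<Rightarrow> real"

definition Vd :: "nat \<Rightarrow> vec set" where
  "Vd d = {x. \<forall>i\<ge>d. x i = 0}"

definition inner_d :: "nat \<Rightarrow> vec \<Rightarrow> vec \<Rightarrow> real" where
  "inner_d d x y = (\<Sum>i<d. x i * y i)"

definition norm_d :: "nat \<Rightarrow> vec \<Rightarrow> real" where
  "norm_d d x = sqrt (inner_d d x x)"

definition convex_d :: "nat \<Rightarrow> (vec \<Rightarrow> real) \<Rightarrow> bool" where
  "convex_d d f \<longleftrightarrow> (\<forall>x\<in>Vd d. \<forall>y\<in>Vd d. \<forall>a::real. 0 \<le> a \<and> a \<le> 1 \<longrightarrow>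
      f (\<lambda>i. a * x i + (1 - a) * y i) \<le> a * f x + (1 - a) * f y)"

definition lipschitz_d :: "nat \<Rightarrow> real \<Rightarrow> (vec \<Rightarrow> real) \<Rightarrow> bool" where
  "lipschitz_d d G f \<longleftrightarrow> (\<forall>x\<in>Vd d. \<forall>y\<in>Vd d. \<bar>f x - f y\<bar> \<le> G * norm_d d (\<lambda>i. x i - y i))"

definition subgrad_d :: "nat \<Rightarrow> (vec \<Rightarrow> real) \<Rightarrow> vec \<Rightarrow> vec \<Rightarrow> bool" where
  "subgrad_d d f x g \<longleftrightarrow> g \<in> Vd d \<and> (\<forall>y\<in>Vd d. f y \<ge> f x + inner_d d g (\<lambda>i. y i - x i))"

(* Haar dictionary for T = 2^m.  Index (0,0) is the all-one vector; index (j,l)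
   with 1 <= j <= m, 1 <= l <= 2^(m-j) is h^(j,l).  Rounds t are 1-based. *)
definition haar_idx :: "nat \<Rightarrow> (nat \<times> nat) set" where
  "haar_idx m = {(0,0)} \<union> {(j,l). 1 \<le> j \<and> j \<le> m \<and> 1 \<le> l \<and> l \<le> 2^(m-j)}"

fun haar :: "nat \<times> nat \<Rightarrow> nat \<Rightarrow> real" where
  "haar (j,l) t =
     (if j = 0 then 1
      else if 2^j*(l-1) + 1 \<le> t \<and> t \<le> 2^j*(l-1) + 2^(j-1) then 1
      else if 2^j*(l-1) + 2^(j-1) + 1 \<le> t \<and> t \<le> 2^j*l then -1
      else 0)"

definition fg_state :: "nat \<Rightarrow> real \<Rightarrow> vec list \<Rightarrow> vec \<times> real" where
  "fg_state d G gs = foldl (\<lambda>(s,v) g. ((\<lambda>i. s i + g i), v + (norm_d d g)^2)) ((\<lambda>i. 0), G^2) gs"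

definition fg_pred :: "nat \<Rightarrow> real \<Rightarrow> real \<Rightarrow> vec \<times> real \<Rightarrow> vec" where
  "fg_pred d eps' G sv = (case sv of (s,v) \<Rightarrow>
     (\<lambda>i. - eps' * s i * ((2*v + G * norm_d d s) * G^2 / (2 * (v + G * norm_d d s)^2 * sqrt v))
           * exp ((norm_d d s)^2 / (2*v + 2*G * norm_d d s))))"

(* gradients received by copy n after the player's gradients gs = [g_1,...,g_{t-1}] *)
definition received :: "nat \<times> nat \<Rightarrow> vec list \<Rightarrow> vec list" where
  "received n gs = map (\<lambda>(\<tau>,g). (\<lambda>i. haar n \<tau> * g i))
                     (filter (\<lambda>(\<tau>,g). haar n \<tau> \<noteq> 0) (zip [1..<length gs + 1] gs))"

definition haar_pred :: "nat \<Rightarrow> nat \<Rightarrow> real \<Rightarrow> real \<Rightarrow> vec list \<Rightarrow> vec" where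
  "haar_pred m d G eps gs = (let t = length gs + 1 in
     (\<lambda>i. \<Sum>n\<in>{n\<in>haar_idx m. haar n t \<noteq> 0}.
            haar n t * fg_pred d (eps / 2^m) G (fg_state d G (received n gs)) i))"

(* Interaction with an adaptive environment: after seeing x_1..x_t the environment
   fixes loss A [x_1..x_t] and reveals the subgradient S [x_1..x_t] at x_t.
   haar_run ... t is the list of the first t pairs (x_tau, g_tau). *)
fun haar_run :: "nat \<Rightarrow> nat \<Rightarrow> real \<Rightarrow> real \<Rightarrow> (vec list \<Rightarrow> vec) \<Rightarrow> nat \<Rightarrow> (vec \<times> vec) list" where
  "haar_run m d G eps S 0 = []"
| "haar_run m d G eps S (Suc t) =
     (let h = haar_run m d G eps S t;
          x = haar_pred m d G eps (map snd h);
          g = S (map fst h @ [x])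
      in h @ [(x, g)])"

definition valid_env :: "nat \<Rightarrow> real \<Rightarrow> (vec list \<Rightarrow> vec \<Rightarrow> real) \<Rightarrow> (vec list \<Rightarrow> vec) \<Rightarrow> bool" where
  "valid_env d G A S \<longleftrightarrow> (\<forall>xs. xs \<noteq> [] \<and> set xs \<subseteq> Vd d \<longrightarrow>
      convex_d d (A xs) \<and> lipschitz_d d G (A xs) \<and> subgrad_d d (A xs) (last xs) (S xs))"

definition haar_regret :: "nat \<Rightarrow> nat \<Rightarrow> real \<Rightarrow> real \<Rightarrow> (vec list \<Rightarrow> vec \<Rightarrow> real) \<Rightarrow> (vec list \<Rightarrow> vec)
     \<Rightarrow> (nat \<Rightarrow> vec) \<Rightarrow> real" where
  "haar_regret m d G eps A S u = (let xs = map fst (haar_run m d G eps S (2^m)) in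
     (\<Sum>t=1..2^m. A (take t xs) (xs ! (t-1)) - A (take t xs) (u t)))"

definition ubar :: "nat \<Rightarrow> (nat \<Rightarrow> vec) \<Rightarrow> vec" where
  "ubar T u = (\<lambda>i. (\<Sum>t=1..T. u t i) / real T)"

definition switches :: "nat \<Rightarrow> (nat \<Rightarrow> vec) \<Rightarrow> nat" where
  "switches T u = card {t\<in>{1..<T}. u (t+1) \<noteq> u t}"

definition Ebar :: "nat \<Rightarrow> nat \<Rightarrow> (nat \<Rightarrow> vec) \<Rightarrow> real" where
  "Ebar d T u = (\<Sum>t=1..T. (norm_d d (\<lambda>i. u t i - ubar T u i))^2)"

definition umax :: "nat \<Rightarrow> nat \<Rightarrow> (nat \<Rightarrow> vec) \<Rightarrow> real" where
  "umax d T u = Max ((\<lambda>t. norm_d d (u t)) ` {1..T})"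

end

theory Submission
  imports Defs "HOL-Analysis.L2_Norm"
begin

lemma P1_nonneg_cert: fixes x2 x4 x1 x3 :: real assumes "0 \<le> x2" "0 \<le> x4" "0 \<le> x1" "0 \<le> x3"
  shows "0 \<le> 8*x3*x4 + 12*x3^2 + 32*x2*x3*x4 + 48*x2*x3^2 + 48*x2^2*x3*x4 + 72*x2^2*x3^2 + 32*x2^3*x3*x4 + 48*x2^3*x3^2 + 8*x2^4*x3*x4 + 12*x2^4*x3^2 + 24*x1*x4 + 72*x1*x3*x4 + 96*x1*x3^2*x4 + 104*x1*x3^3 + 96*x1*x2*x4 + 256*x1*x2*x3*x4 + 328*x1*x2*x3^2*x4 + 352*x1*x2*x3^3 + 144*x1*x2^2*x4 + 336*x1*x2^2*x3*x4 + 408*x1*x2^2*x3^2*x4 + 432*x1*x2^2*x3^3 + 96*x1*x2^3*x4 + 192*x1*x2^3*x3*x4 + 216*x1*x2^3*x3^2*x4 + 224*x1*x2^3*x3^3 + 24*x1*x2^4*x4 + 40*x1*x2^4*x3 + 72*x1^2*x4 + 152*x1^2*x3*x4 + 188*x1^2*x3^2*x4 + 204*x1^2*x3^3*x4 + 200*x1^2*x3^4 + 216*x1^2*x2*x4 + 408*x1^2*x2*x3*x4 + 472*x1^2*x2*x3^2*x4 + 504*x1^2*x2*x3^3*x4 + 496*x1^2*x2*x3^4 + 216*x1^2*x2^2*x4 + 360*x1^2*x2^2*x3*x4 + 380*x1^2*x2^2*x3^2*x4 + 396*x1^2*x2^2*x3^3*x4 + 392*x1^2*x2^2*x3^4 +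 72*x1^2*x2^3*x4 + 104*x1^2*x2^3*x3*x4 + 96*x1^2*x2^3*x3^2 + 88*x1^3*x4 + 144*x1^3*x3*x4 + 172*x1^3*x3^2*x4 + 184*x1^3*x3^3*x4 + 180*x1^3*x3^4 + 184*x1^3*x2*x4 + 264*x1^3*x2*x3*x4 + 288*x1^3*x2*x3^2*x4 + 300*x1^3*x2*x3^3*x4 + 296*x1^3*x2*x3^4 + 104*x1^3*x2^2*x4 + 128*x1^3*x2^2*x3*x4 + 124*x1^3*x2^2*x3^2 + 8*x1^3*x2^3 + 54*x1^4*x4 + 68*x1^4*x3*x4 + 81*x1^4*x3^2*x4 + 84*x1^4*x3^3*x4 + 83*x1^4*x3^4 + 68*x1^4*x2*x4 + 74*x1^4*x2*x3*x4 + 79*x1^4*x2*x3^2 + 14*x1^4*x2^2 + 14*x1^5*x4 + 14*x1^5*x3*x4 + 17*x1^5*x3^2 + 6*x1^5*x2"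
  using assms by (intro add_nonneg_nonneg mult_nonneg_nonneg zero_le_power; simp)
lemma P1_nonneg: fixes r v g :: real assumes "0 \<le> r" "1 \<le> v" "0 \<le> g" "g \<le> 1"
  shows "0 \<le> 2*(v+r+g+g^2)*4*(v+r)^4 - (2*v+g^2)*4*(v+r)^2*(-g*(v+r)^2+(1+g)*v^2-r^2*(v+r)) - (2*v+g^2)*(v+r+g+g^2)*r^2*(2*v+r)^2"
proof -
  have e: "2*(v+r+g+g^2)*4*(v+r)^4 - (2*v+g^2)*4*(v+r)^2*(-g*(v+r)^2+(1+g)*v^2-r^2*(v+r)) - (2*v+g^2)*(v+r+g+g^2)*r^2*(2*v+r)^2 = 8*g*(1-g) + 12*g^2 + 32*(v-1)*g*(1-g) + 48*(v-1)*g^2 + 48*(v-1)^2*g*(1-g) + 72*(v-1)^2*g^2 + 32*(v-1)^3*g*(1-g) + 48*(v-1)^3*g^2 + 8*(v-1)^4*g*(1-g) + 12*(v-1)^4*g^2 + 24*r*(1-g) + 72*r*g*(1-g) + 96*r*g^2*(1-g) + 104*r*g^3 + 96*r*(v-1)*(1-g) + 256*r*(v-1)*g*(1-g) + 328*r*(v-1)*g^2*(1-g) + 352*r*(v-1)*g^3 + 144*r*(v-1)^2*(1-g) + 336*r*(v-1)^2*g*(1-g) + 408*r*(v-1)^2*g^2*(1-g) + 432*r*(v-1)^2*g^3 + 96*r*(v-1)^3*(1-g) + 192*r*(v-1)^3*g*(1-g) + 216*r*(v-1)^3*g^2*(1-g) + 224*r*(v-1)^3*g^3 + 24*r*(v-1)^4*(1-g)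 + 40*r*(v-1)^4*g + 72*r^2*(1-g) + 152*r^2*g*(1-g) + 188*r^2*g^2*(1-g) + 204*r^2*g^3*(1-g) + 200*r^2*g^4 + 216*r^2*(v-1)*(1-g) + 408*r^2*(v-1)*g*(1-g) + 472*r^2*(v-1)*g^2*(1-g) + 504*r^2*(v-1)*g^3*(1-g) + 496*r^2*(v-1)*g^4 + 216*r^2*(v-1)^2*(1-g) + 360*r^2*(v-1)^2*g*(1-g) + 380*r^2*(v-1)^2*g^2*(1-g) + 396*r^2*(v-1)^2*g^3*(1-g) + 392*r^2*(v-1)^2*g^4 + 72*r^2*(v-1)^3*(1-g) + 104*r^2*(v-1)^3*g*(1-g) + 96*r^2*(v-1)^3*g^2 + 88*r^3*(1-g) + 144*r^3*g*(1-g) + 172*r^3*g^2*(1-g) + 184*r^3*g^3*(1-g) + 180*r^3*g^4 + 184*r^3*(v-1)*(1-g) + 264*r^3*(v-1)*g*(1-g) + 288*r^3*(v-1)*g^2*(1-g) + 300*r^3*(v-1)*g^3*(1-g) + 296*r^3*(v-1)*g^4 + 104*r^3*(v-1)^2*(1-g) + 128*r^3*(v-1)^2*g*(1-g) + 124*r^3*(v-1)^2*g^2 + 8*r^3*(v-1)^3 + 54*r^4*(1-g) + 68*r^4*g*(1-g) + 81*r^4*g^2*(1-g) + 84*r^4*g^3*(1-g) + 83*r^4*g^4 + 68*r^4*(v-1)*(1-g) + 74*r^4*(v-1)*g*(1-g) + 79*r^4*(v-1)*g^2 + 14*r^4*(v-1)^2 + 14*r^5*(1-g) + 14*r^5*g*(1-g)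 + 17*r^5*g^2 + 6*r^5*(v-1)" by algebra
  have "0 \<le> 8*g*(1-g) + 12*g^2 + 32*(v-1)*g*(1-g) + 48*(v-1)*g^2 + 48*(v-1)^2*g*(1-g) + 72*(v-1)^2*g^2 + 32*(v-1)^3*g*(1-g) + 48*(v-1)^3*g^2 + 8*(v-1)^4*g*(1-g) + 12*(v-1)^4*g^2 + 24*r*(1-g) + 72*r*g*(1-g) + 96*r*g^2*(1-g) + 104*r*g^3 + 96*r*(v-1)*(1-g) + 256*r*(v-1)*g*(1-g) + 328*r*(v-1)*g^2*(1-g) + 352*r*(v-1)*g^3 + 144*r*(v-1)^2*(1-g) + 336*r*(v-1)^2*g*(1-g) + 408*r*(v-1)^2*g^2*(1-g) + 432*r*(v-1)^2*g^3 + 96*r*(v-1)^3*(1-g) + 192*r*(v-1)^3*g*(1-g) + 216*r*(v-1)^3*g^2*(1-g) + 224*r*(v-1)^3*g^3 + 24*r*(v-1)^4*(1-g) + 40*r*(v-1)^4*g + 72*r^2*(1-g) + 152*r^2*g*(1-g) + 188*r^2*g^2*(1-g) + 204*r^2*g^3*(1-g) + 200*r^2*g^4 + 216*r^2*(v-1)*(1-g) + 408*r^2*(v-1)*g*(1-g) + 472*r^2*(v-1)*g^2*(1-g) + 504*r^2*(v-1)*g^3*(1-g) + 496*r^2*(v-1)*g^4 + 216*r^2*(v-1)^2*(1-g) + 360*r^2*(v-1)^2*g*(1-g) + 380*r^2*(v-1)^2*g^2*(1-g) + 396*r^2*(v-1)^2*g^3*(1-g) + 392*r^2*(v-1)^2*g^4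 + 72*r^2*(v-1)^3*(1-g) + 104*r^2*(v-1)^3*g*(1-g) + 96*r^2*(v-1)^3*g^2 + 88*r^3*(1-g) + 144*r^3*g*(1-g) + 172*r^3*g^2*(1-g) + 184*r^3*g^3*(1-g) + 180*r^3*g^4 + 184*r^3*(v-1)*(1-g) + 264*r^3*(v-1)*g*(1-g) + 288*r^3*(v-1)*g^2*(1-g) + 300*r^3*(v-1)*g^3*(1-g) + 296*r^3*(v-1)*g^4 + 104*r^3*(v-1)^2*(1-g) + 128*r^3*(v-1)^2*g*(1-g) + 124*r^3*(v-1)^2*g^2 + 8*r^3*(v-1)^3 + 54*r^4*(1-g) + 68*r^4*g*(1-g) + 81*r^4*g^2*(1-g) + 84*r^4*g^3*(1-g) + 83*r^4*g^4 + 68*r^4*(v-1)*(1-g) + 74*r^4*(v-1)*g*(1-g) + 79*r^4*(v-1)*g^2 + 14*r^4*(v-1)^2 + 14*r^5*(1-g) + 14*r^5*g*(1-g) + 17*r^5*g^2 + 6*r^5*(v-1)"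
    by (rule P1_nonneg_cert[of "(v-1)" "(1-g)" "r" "g"]) (use assms in auto)
  then show ?thesis by (simp only: e)
qed
lemma P2_nonneg_cert: fixes x1 x2 x3 x4 :: real assumes "0 \<le> x1" "0 \<le> x2" "0 \<le> x3" "0 \<le> x4"
  shows "0 \<le> 16*x3*x4 + 44*x3^2*x4 + 60*x3^3*x4 + 74*x3^4*x4 + 68*x3^5*x4 + 53*x3^6*x4 + 47*x3^7*x4 + 46*x3^8 + 64*x2*x3*x4 + 136*x2*x3^2*x4 + 152*x2*x3^3*x4 + 160*x2*x3^4*x4 + 120*x2*x3^5*x4 + 97*x2*x3^6*x4 + 95*x2*x3^7 + 96*x2^2*x3*x4 + 144*x2^2*x3^2*x4 + 128*x2^2*x3^3*x4 + 110*x2^2*x3^4*x4 + 76*x2^2*x3^5 + 64*x2^3*x3*x4 + 56*x2^3*x3^2*x4 + 40*x2^3*x3^3*x4 + 28*x2^3*x3^4 + 16*x2^4*x3*x4 + 4*x2^4*x3^2 + 24*x1*x4 + 120*x1*x3*x4 + 208*x1*x3^2*x4 + 256*x1*x3^3*x4 + 254*x1*x3^4*x4 + 210*x1*x3^5*x4 + 185*x1*x3^6*x4 + 179*x1*x3^7 + 96*x1*x2*x4 + 368*x1*x2*x3*x4 + 488*x1*x2*x3^2*x4 + 500*x1*x2*x3^3*x4 + 410*x1*x2*x3^4*x4 + 334*x1*x2*x3^5*x4 + 322*x1*x2*x3^6 + 144*x1*x2^2*x4 + 384*x1*x2^2*x3*x4 + 360*x1*x2^2*x3^2*x4 + 304*x1*x2^2*x3^3*x4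 + 224*x1*x2^2*x3^4*x4 + 220*x1*x2^2*x3^5 + 96*x1*x2^3*x4 + 144*x1*x2^3*x3*x4 + 88*x1*x2^3*x3^2*x4 + 68*x1*x2^3*x3^3 + 24*x1*x2^4*x4 + 8*x1*x2^4*x3 + 72*x1^2*x4 + 232*x1^2*x3*x4 + 328*x1^2*x3^2*x4 + 338*x1^2*x3^3*x4 + 292*x1^2*x3^4*x4 + 256*x1^2*x3^5*x4 + 242*x1^2*x3^6 + 216*x1^2*x2*x4 + 504*x1^2*x2*x3*x4 + 536*x1^2*x2*x3^2*x4 + 444*x1^2*x2*x3^3*x4 + 358*x1^2*x2*x3^4*x4 + 334*x1^2*x2*x3^5 + 216*x1^2*x2^2*x4 + 312*x1^2*x2^2*x3*x4 + 232*x1^2*x2^2*x3^2*x4 + 162*x1^2*x2^2*x3^3*x4 + 154*x1^2*x2^2*x3^4 + 72*x1^2*x2^3*x4 + 40*x1^2*x2^3*x3*x4 + 24*x1^2*x2^3*x3^2 + 88*x1^3*x4 + 204*x1^3*x3*x4 + 220*x1^3*x3^2*x4 + 192*x1^3*x3^3*x4 + 174*x1^3*x3^4*x4 + 158*x1^3*x3^5 + 184*x1^3*x2*x4 + 280*x1^3*x2*x3*x4 + 212*x1^3*x2*x3^2*x4 + 172*x1^3*x2*x3^3*x4 + 152*x1^3*x2*x3^4 + 104*x1^3*x2^2*x4 + 76*x1^3*x2^2*x3*x4 + 40*x1^3*x2^2*x3^2*x4 + 36*x1^3*x2^2*x3^3 + 8*x1^3*x2^3*x4 + 54*x1^4*x4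 + 78*x1^4*x3*x4 + 59*x1^4*x3^2*x4 + 61*x1^4*x3^3*x4 + 52*x1^4*x3^4 + 68*x1^4*x2*x4 + 48*x1^4*x2*x3*x4 + 37*x1^4*x2*x3^2*x4 + 31*x1^4*x2*x3^3 + 14*x1^4*x2^2*x4 + 2*x1^4*x2^2*x3 + 14*x1^5*x4 + 6*x1^5*x3*x4 + 9*x1^5*x3^2*x4 + 7*x1^5*x3^3 + 6*x1^5*x2*x4 + 2*x1^5*x2*x3"
  using assms by (intro add_nonneg_nonneg mult_nonneg_nonneg zero_le_power; simp)
lemma P2_nonneg: fixes r v g :: real assumes "0 \<le> r + g" "1 \<le> v" "-1 \<le> g" "g \<le> 0"
  shows "0 \<le> 2*(v+r+g+g^2)*2*(v+r)^2*(2*(v+r)^2+g*r*(2*v+r)) - (2*v+g^2)*2*(2*(v+r)^2+g*r*(2*v+r))*(-g*(v+r)^2+(1+g)*v^2-r^2*(v+r)) - (2*v+g^2)*(v+r+g+g^2)*r^2*(2*v+r)^2"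
proof -
  have e: "2*(v+r+g+g^2)*2*(v+r)^2*(2*(v+r)^2+g*r*(2*v+r)) - (2*v+g^2)*2*(2*(v+r)^2+g*r*(2*v+r))*(-g*(v+r)^2+(1+g)*v^2-r^2*(v+r)) - (2*v+g^2)*(v+r+g+g^2)*r^2*(2*v+r)^2 = 16*(-g)*(1+g) + 44*(-g)^2*(1+g) + 60*(-g)^3*(1+g) + 74*(-g)^4*(1+g) + 68*(-g)^5*(1+g) + 53*(-g)^6*(1+g) + 47*(-g)^7*(1+g) + 46*(-g)^8 + 64*(v-1)*(-g)*(1+g) + 136*(v-1)*(-g)^2*(1+g) + 152*(v-1)*(-g)^3*(1+g) + 160*(v-1)*(-g)^4*(1+g) + 120*(v-1)*(-g)^5*(1+g) + 97*(v-1)*(-g)^6*(1+g) + 95*(v-1)*(-g)^7 + 96*(v-1)^2*(-g)*(1+g) + 144*(v-1)^2*(-g)^2*(1+g) + 128*(v-1)^2*(-g)^3*(1+g) + 110*(v-1)^2*(-g)^4*(1+g) + 76*(v-1)^2*(-g)^5 + 64*(v-1)^3*(-g)*(1+g) + 56*(v-1)^3*(-g)^2*(1+g) + 40*(v-1)^3*(-g)^3*(1+g) + 28*(v-1)^3*(-g)^4 + 16*(v-1)^4*(-g)*(1+g) + 4*(v-1)^4*(-g)^2 + 24*(r+g)*(1+g) + 120*(r+g)*(-g)*(1+g) + 208*(r+g)*(-g)^2*(1+g) + 256*(r+g)*(-g)^3*(1+g) + 254*(r+g)*(-g)^4*(1+g) + 210*(r+g)*(-g)^5*(1+g) + 185*(r+g)*(-g)^6*(1+g)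 + 179*(r+g)*(-g)^7 + 96*(r+g)*(v-1)*(1+g) + 368*(r+g)*(v-1)*(-g)*(1+g) + 488*(r+g)*(v-1)*(-g)^2*(1+g) + 500*(r+g)*(v-1)*(-g)^3*(1+g) + 410*(r+g)*(v-1)*(-g)^4*(1+g) + 334*(r+g)*(v-1)*(-g)^5*(1+g) + 322*(r+g)*(v-1)*(-g)^6 + 144*(r+g)*(v-1)^2*(1+g) + 384*(r+g)*(v-1)^2*(-g)*(1+g) + 360*(r+g)*(v-1)^2*(-g)^2*(1+g) + 304*(r+g)*(v-1)^2*(-g)^3*(1+g) + 224*(r+g)*(v-1)^2*(-g)^4*(1+g) + 220*(r+g)*(v-1)^2*(-g)^5 + 96*(r+g)*(v-1)^3*(1+g) + 144*(r+g)*(v-1)^3*(-g)*(1+g) + 88*(r+g)*(v-1)^3*(-g)^2*(1+g) + 68*(r+g)*(v-1)^3*(-g)^3 + 24*(r+g)*(v-1)^4*(1+g) + 8*(r+g)*(v-1)^4*(-g) + 72*(r+g)^2*(1+g) + 232*(r+g)^2*(-g)*(1+g) + 328*(r+g)^2*(-g)^2*(1+g) + 338*(r+g)^2*(-g)^3*(1+g) + 292*(r+g)^2*(-g)^4*(1+g) + 256*(r+g)^2*(-g)^5*(1+g) + 242*(r+g)^2*(-g)^6 + 216*(r+g)^2*(v-1)*(1+g) + 504*(r+g)^2*(v-1)*(-g)*(1+g) + 536*(r+g)^2*(v-1)*(-g)^2*(1+g) + 444*(r+g)^2*(v-1)*(-g)^3*(1+g) + 358*(r+g)^2*(v-1)*(-g)^4*(1+g)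 + 334*(r+g)^2*(v-1)*(-g)^5 + 216*(r+g)^2*(v-1)^2*(1+g) + 312*(r+g)^2*(v-1)^2*(-g)*(1+g) + 232*(r+g)^2*(v-1)^2*(-g)^2*(1+g) + 162*(r+g)^2*(v-1)^2*(-g)^3*(1+g) + 154*(r+g)^2*(v-1)^2*(-g)^4 + 72*(r+g)^2*(v-1)^3*(1+g) + 40*(r+g)^2*(v-1)^3*(-g)*(1+g) + 24*(r+g)^2*(v-1)^3*(-g)^2 + 88*(r+g)^3*(1+g) + 204*(r+g)^3*(-g)*(1+g) + 220*(r+g)^3*(-g)^2*(1+g) + 192*(r+g)^3*(-g)^3*(1+g) + 174*(r+g)^3*(-g)^4*(1+g) + 158*(r+g)^3*(-g)^5 + 184*(r+g)^3*(v-1)*(1+g) + 280*(r+g)^3*(v-1)*(-g)*(1+g) + 212*(r+g)^3*(v-1)*(-g)^2*(1+g) + 172*(r+g)^3*(v-1)*(-g)^3*(1+g) + 152*(r+g)^3*(v-1)*(-g)^4 + 104*(r+g)^3*(v-1)^2*(1+g) + 76*(r+g)^3*(v-1)^2*(-g)*(1+g) + 40*(r+g)^3*(v-1)^2*(-g)^2*(1+g) + 36*(r+g)^3*(v-1)^2*(-g)^3 + 8*(r+g)^3*(v-1)^3*(1+g) + 54*(r+g)^4*(1+g) + 78*(r+g)^4*(-g)*(1+g) + 59*(r+g)^4*(-g)^2*(1+g) + 61*(r+g)^4*(-g)^3*(1+g) + 52*(r+g)^4*(-g)^4 + 68*(r+g)^4*(v-1)*(1+g) + 48*(r+g)^4*(v-1)*(-g)*(1+g)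 + 37*(r+g)^4*(v-1)*(-g)^2*(1+g) + 31*(r+g)^4*(v-1)*(-g)^3 + 14*(r+g)^4*(v-1)^2*(1+g) + 2*(r+g)^4*(v-1)^2*(-g) + 14*(r+g)^5*(1+g) + 6*(r+g)^5*(-g)*(1+g) + 9*(r+g)^5*(-g)^2*(1+g) + 7*(r+g)^5*(-g)^3 + 6*(r+g)^5*(v-1)*(1+g) + 2*(r+g)^5*(v-1)*(-g)" by algebra
  have "0 \<le> 16*(-g)*(1+g) + 44*(-g)^2*(1+g) + 60*(-g)^3*(1+g) + 74*(-g)^4*(1+g) + 68*(-g)^5*(1+g) + 53*(-g)^6*(1+g) + 47*(-g)^7*(1+g) + 46*(-g)^8 + 64*(v-1)*(-g)*(1+g) + 136*(v-1)*(-g)^2*(1+g) + 152*(v-1)*(-g)^3*(1+g) + 160*(v-1)*(-g)^4*(1+g) + 120*(v-1)*(-g)^5*(1+g) + 97*(v-1)*(-g)^6*(1+g) + 95*(v-1)*(-g)^7 + 96*(v-1)^2*(-g)*(1+g) + 144*(v-1)^2*(-g)^2*(1+g) + 128*(v-1)^2*(-g)^3*(1+g) + 110*(v-1)^2*(-g)^4*(1+g) + 76*(v-1)^2*(-g)^5 + 64*(v-1)^3*(-g)*(1+g) + 56*(v-1)^3*(-g)^2*(1+g) + 40*(v-1)^3*(-g)^3*(1+g) + 28*(v-1)^3*(-g)^4 + 16*(v-1)^4*(-g)*(1+g) + 4*(v-1)^4*(-g)^2 + 24*(r+g)*(1+g) + 120*(r+g)*(-g)*(1+g) + 208*(r+g)*(-g)^2*(1+g)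 + 256*(r+g)*(-g)^3*(1+g) + 254*(r+g)*(-g)^4*(1+g) + 210*(r+g)*(-g)^5*(1+g) + 185*(r+g)*(-g)^6*(1+g) + 179*(r+g)*(-g)^7 + 96*(r+g)*(v-1)*(1+g) + 368*(r+g)*(v-1)*(-g)*(1+g) + 488*(r+g)*(v-1)*(-g)^2*(1+g) + 500*(r+g)*(v-1)*(-g)^3*(1+g) + 410*(r+g)*(v-1)*(-g)^4*(1+g) + 334*(r+g)*(v-1)*(-g)^5*(1+g) + 322*(r+g)*(v-1)*(-g)^6 + 144*(r+g)*(v-1)^2*(1+g) + 384*(r+g)*(v-1)^2*(-g)*(1+g) + 360*(r+g)*(v-1)^2*(-g)^2*(1+g) + 304*(r+g)*(v-1)^2*(-g)^3*(1+g) + 224*(r+g)*(v-1)^2*(-g)^4*(1+g) + 220*(r+g)*(v-1)^2*(-g)^5 + 96*(r+g)*(v-1)^3*(1+g) + 144*(r+g)*(v-1)^3*(-g)*(1+g) + 88*(r+g)*(v-1)^3*(-g)^2*(1+g) + 68*(r+g)*(v-1)^3*(-g)^3 + 24*(r+g)*(v-1)^4*(1+g) + 8*(r+g)*(v-1)^4*(-g) + 72*(r+g)^2*(1+g) + 232*(r+g)^2*(-g)*(1+g) + 328*(r+g)^2*(-g)^2*(1+g) + 338*(r+g)^2*(-g)^3*(1+g) + 292*(r+g)^2*(-g)^4*(1+g) + 256*(r+g)^2*(-g)^5*(1+g) + 242*(r+g)^2*(-g)^6 + 216*(r+g)^2*(v-1)*(1+g) + 504*(r+g)^2*(v-1)*(-g)*(1+g)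 + 536*(r+g)^2*(v-1)*(-g)^2*(1+g) + 444*(r+g)^2*(v-1)*(-g)^3*(1+g) + 358*(r+g)^2*(v-1)*(-g)^4*(1+g) + 334*(r+g)^2*(v-1)*(-g)^5 + 216*(r+g)^2*(v-1)^2*(1+g) + 312*(r+g)^2*(v-1)^2*(-g)*(1+g) + 232*(r+g)^2*(v-1)^2*(-g)^2*(1+g) + 162*(r+g)^2*(v-1)^2*(-g)^3*(1+g) + 154*(r+g)^2*(v-1)^2*(-g)^4 + 72*(r+g)^2*(v-1)^3*(1+g) + 40*(r+g)^2*(v-1)^3*(-g)*(1+g) + 24*(r+g)^2*(v-1)^3*(-g)^2 + 88*(r+g)^3*(1+g) + 204*(r+g)^3*(-g)*(1+g) + 220*(r+g)^3*(-g)^2*(1+g) + 192*(r+g)^3*(-g)^3*(1+g) + 174*(r+g)^3*(-g)^4*(1+g) + 158*(r+g)^3*(-g)^5 + 184*(r+g)^3*(v-1)*(1+g) + 280*(r+g)^3*(v-1)*(-g)*(1+g) + 212*(r+g)^3*(v-1)*(-g)^2*(1+g) + 172*(r+g)^3*(v-1)*(-g)^3*(1+g) + 152*(r+g)^3*(v-1)*(-g)^4 + 104*(r+g)^3*(v-1)^2*(1+g) + 76*(r+g)^3*(v-1)^2*(-g)*(1+g) + 40*(r+g)^3*(v-1)^2*(-g)^2*(1+g) + 36*(r+g)^3*(v-1)^2*(-g)^3 + 8*(r+g)^3*(v-1)^3*(1+g) + 54*(r+g)^4*(1+g) + 78*(r+g)^4*(-g)*(1+g) + 59*(r+g)^4*(-g)^2*(1+g)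 + 61*(r+g)^4*(-g)^3*(1+g) + 52*(r+g)^4*(-g)^4 + 68*(r+g)^4*(v-1)*(1+g) + 48*(r+g)^4*(v-1)*(-g)*(1+g) + 37*(r+g)^4*(v-1)*(-g)^2*(1+g) + 31*(r+g)^4*(v-1)*(-g)^3 + 14*(r+g)^4*(v-1)^2*(1+g) + 2*(r+g)^4*(v-1)^2*(-g) + 14*(r+g)^5*(1+g) + 6*(r+g)^5*(-g)*(1+g) + 9*(r+g)^5*(-g)^2*(1+g) + 7*(r+g)^5*(-g)^3 + 6*(r+g)^5*(v-1)*(1+g) + 2*(r+g)^5*(v-1)*(-g)"
    by (rule P2_nonneg_cert[of "(r+g)" "(v-1)" "(-g)" "(1+g)"]) (use assms in auto)
  then show ?thesis by (simp only: e)
qed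
lemma Q_nonneg_cert: fixes x2 x3 x4 x1 :: real assumes "0 \<le> x2" "0 \<le> x3" "0 \<le> x4" "0 \<le> x1"
  shows "0 \<le> 8*x3^3*x4^7 + 60*x3^4*x4^6 + 192*x3^5*x4^5 + 340*x3^6*x4^4 + 360*x3^7*x4^3 + 228*x3^8*x4^2 + 80*x3^9*x4 + 12*x3^10 + 88*x1*x3^3*x4^6 + 552*x1*x3^4*x4^5 + 1428*x1*x3^5*x4^4 + 1952*x1*x3^6*x4^3 + 1488*x1*x3^7*x4^2 + 600*x1*x3^8*x4 + 100*x1*x3^9 + 24*x1^2*x3*x4^7 + 168*x1^2*x3^2*x4^6 + 912*x1^2*x3^3*x4^5 + 2872*x1^2*x3^4*x4^4 + 4814*x1^2*x3^5*x4^3 + 4318*x1^2*x3^6*x4^2 + 1962*x1^2*x3^7*x4 + 354*x1^2*x3^8 + 16*x1^3*x4^7 + 328*x1^3*x3*x4^6 + 1664*x1^3*x3^2*x4^5 + 4892*x1^3*x3^3*x4^4 + 8586*x1^3*x3^4*x4^3 + 8312*x1^3*x3^5*x4^2 + 3982*x1^3*x3^6*x4 + 716*x1^3*x3^7 + 140*x1^4*x4^6 + 1680*x1^4*x3*x4^5 + 6454*x1^4*x3^2*x4^4 + 12674*x1^4*x3^3*x4^3 + 13125*x1^4*x3^4*x4^2 + 6371*x1^4*x3^5*x4 + 1015*x1^4*x3^6 + 520*x1^5*x4^5 + 4436*x1^5*x3*x4^4 + 12632*x1^5*x3^2*x4^3 + 16198*x1^5*x3^3*x4^2 + 8798*x1^5*x3^4*x4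 + 1295*x1^5*x3^5 + 1074*x1^6*x4^4 + 6652*x1^6*x3*x4^3 + 12978*x1^6*x3^2*x4^2 + 9280*x1^6*x3^3*x4 + 1598*x1^6*x3^4 + 1330*x1^7*x4^3 + 5618*x1^7*x3*x4^2 + 6314*x1^7*x3^2*x4 + 1546*x1^7*x3^3 + 967*x1^8*x4^2 + 2363*x1^8*x3*x4 + 959*x1^8*x3^2 + 362*x1^9*x4 + 327*x1^9*x3 + 46*x1^10 + 32*x2*x3^3*x4^6 + 208*x2*x3^4*x4^5 + 560*x2*x3^5*x4^4 + 800*x2*x3^6*x4^3 + 640*x2*x3^7*x4^2 + 272*x2*x3^8*x4 + 48*x2*x3^9 + 288*x2*x1*x3^3*x4^5 + 1520*x2*x1*x3^4*x4^4 + 3164*x2*x1*x3^5*x4^3 + 3252*x2*x1*x3^6*x4^2 + 1652*x2*x1*x3^7*x4 + 332*x2*x1*x3^8 + 96*x2*x1^2*x3*x4^6 + 552*x2*x1^2*x3^2*x4^5 + 2376*x2*x1^2*x3^3*x4^4 + 5876*x2*x1^2*x3^4*x4^3 + 7292*x2*x1^2*x3^5*x4^2 + 4284*x2*x1^2*x3^6*x4 + 948*x2*x1^2*x3^7 + 64*x2*x1^3*x4^6 + 1072*x2*x1^3*x3*x4^5 + 4312*x2*x1^3*x3^2*x4^4 + 9528*x2*x1^3*x3^3*x4^3 + 11784*x2*x1^3*x3^4*x4^2 + 7064*x2*x1^3*x3^5*x4 + 1516*x2*x1^3*x3^6 + 456*x2*x1^4*x4^5 + 4328*x2*x1^4*x3*x4^4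 + 12476*x2*x1^4*x3^2*x4^3 + 16686*x2*x1^4*x3^3*x4^2 + 9893*x2*x1^4*x3^4*x4 + 1761*x2*x1^4*x3^5 + 1336*x2*x1^5*x4^4 + 8548*x2*x1^5*x3*x4^3 + 16568*x2*x1^5*x3^2*x4^2 + 11828*x2*x1^5*x3^3*x4 + 2015*x2*x1^5*x3^4 + 2072*x2*x1^6*x4^3 + 8746*x2*x1^6*x3*x4^2 + 9550*x2*x1^6*x3^2*x4 + 2142*x2*x1^6*x3^3 + 1760*x2*x1^7*x4^2 + 4184*x2*x1^7*x3*x4 + 1546*x2*x1^7*x3^2 + 729*x2*x1^8*x4 + 605*x2*x1^8*x3 + 95*x2*x1^9 + 48*x2^2*x3^3*x4^5 + 264*x2^2*x3^4*x4^4 + 576*x2^2*x3^5*x4^3 + 624*x2^2*x3^6*x4^2 + 336*x2^2*x3^7*x4 + 72*x2^2*x3^8 + 336*x2^2*x1*x3^3*x4^4 + 1440*x2^2*x1*x3^4*x4^3 + 2268*x2^2*x1*x3^5*x4^2 + 1560*x2^2*x1*x3^6*x4 + 396*x2^2*x1*x3^7 + 144*x2^2*x1^2*x3*x4^5 + 648*x2^2*x1^2*x3^2*x4^4 + 2064*x2^2*x1^2*x3^3*x4^3 + 3716*x2^2*x1^2*x3^4*x4^2 + 3014*x2^2*x1^2*x3^5*x4 + 862*x2^2*x1^2*x3^6 + 96*x2^2*x1^3*x4^5 + 1248*x2^2*x1^3*x3*x4^4 + 3712*x2^2*x1^3*x3^2*x4^3 + 5516*x2^2*x1^3*x3^3*x4^2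 + 4026*x2^2*x1^3*x3^4*x4 + 1028*x2^2*x1^3*x3^5 + 528*x2^2*x1^4*x4^4 + 3696*x2^2*x1^4*x3*x4^3 + 7138*x2^2*x1^4*x3^2*x4^2 + 5204*x2^2*x1^4*x3^3*x4 + 992*x2^2*x1^4*x3^4 + 1136*x2^2*x1^5*x4^3 + 4876*x2^2*x1^5*x3*x4^2 + 5156*x2^2*x1^5*x3^2*x4 + 1076*x2^2*x1^5*x3^3 + 1182*x2^2*x1^6*x4^2 + 2742*x2^2*x1^6*x3*x4 + 926*x2^2*x1^6*x3^2 + 554*x2^2*x1^7*x4 + 428*x2^2*x1^7*x3 + 76*x2^2*x1^8 + 32*x2^3*x3^3*x4^3 + 112*x2^3*x3^4*x4^2 + 128*x2^3*x3^5*x4 + 48*x2^3*x3^6 + 128*x2^3*x1*x3^3*x4^2 + 288*x2^3*x1*x3^4*x4 + 148*x2^3*x1*x3^5 + 96*x2^3*x1^2*x3*x4^3 + 216*x2^3*x1^2*x3^2*x4^2 + 304*x2^3*x1^2*x3^3*x4 + 148*x2^3*x1^2*x3^4 + 64*x2^3*x1^3*x4^3 + 432*x2^3*x1^3*x3*x4^2 + 496*x2^3*x1^3*x3^2*x4 + 96*x2^3*x1^3*x3^3 + 184*x2^3*x1^4*x4^2 + 512*x2^3*x1^4*x3*x4 + 128*x2^3*x1^4*x3^2 + 160*x2^3*x1^5*x4 + 108*x2^3*x1^5*x3 + 28*x2^3*x1^6 + 8*x2^4*x3^3*x4 + 12*x2^4*x3^4 + 8*x2^4*x1*x3^3 + 24*x2^4*x1^2*x3*x4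 + 16*x2^4*x1^3*x4 + 8*x2^4*x1^3*x3 + 4*x2^4*x1^4"
  using assms by (intro add_nonneg_nonneg mult_nonneg_nonneg zero_le_power; simp)
lemma Q_nonneg: fixes r v g :: real assumes "0 \<le> r" "r + g \<le> 0" "1 \<le> v" "-1 \<le> g"
  shows "0 \<le> -((-g-r)^2*2*(v+r)^2*(2*v+g^2)*(2*(v+r)^2+g*r*(2*v+r)) - r^2*2*(v+r)*((v+g^2)+(-g-r))*(2*v+g^2)*(2*(v+r)^2+g*r*(2*v+r)) - g^2*4*((v+g^2)+(-g-r))*(v+r)^2*(2*(v+r)^2+g*r*(2*v+r)) + (-g)*r*(2*v+r)*2*((v+g^2)+(-g-r))*(2*v+g^2)*(2*(v+r)^2+g*r*(2*v+r)) + g^2*r^2*(2*v+r)^2*((v+g^2)+(-g-r))*(2*v+g^2))"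
proof -
  have e: "-((-g-r)^2*2*(v+r)^2*(2*v+g^2)*(2*(v+r)^2+g*r*(2*v+r)) - r^2*2*(v+r)*((v+g^2)+(-g-r))*(2*v+g^2)*(2*(v+r)^2+g*r*(2*v+r)) - g^2*4*((v+g^2)+(-g-r))*(v+r)^2*(2*(v+r)^2+g*r*(2*v+r)) + (-g)*r*(2*v+r)*2*((v+g^2)+(-g-r))*(2*v+g^2)*(2*(v+r)^2+g*r*(2*v+r)) + g^2*r^2*(2*v+r)^2*((v+g^2)+(-g-r))*(2*v+g^2)) = 8*(-g-r)^3*(1+g)^7 + 60*(-g-r)^4*(1+g)^6 + 192*(-g-r)^5*(1+g)^5 + 340*(-g-r)^6*(1+g)^4 + 360*(-g-r)^7*(1+g)^3 + 228*(-g-r)^8*(1+g)^2 + 80*(-g-r)^9*(1+g) + 12*(-g-r)^10 + 88*r*(-g-r)^3*(1+g)^6 + 552*r*(-g-r)^4*(1+g)^5 + 1428*r*(-g-r)^5*(1+g)^4 + 1952*r*(-g-r)^6*(1+g)^3 + 1488*r*(-g-r)^7*(1+g)^2 + 600*r*(-g-r)^8*(1+g) + 100*r*(-g-r)^9 + 24*r^2*(-g-r)*(1+g)^7 + 168*r^2*(-g-r)^2*(1+g)^6 + 912*r^2*(-g-r)^3*(1+g)^5 + 2872*r^2*(-g-r)^4*(1+g)^4 + 4814*r^2*(-g-r)^5*(1+g)^3 + 4318*r^2*(-g-r)^6*(1+g)^2 + 1962*r^2*(-g-r)^7*(1+g) + 354*r^2*(-g-r)^8 + 16*r^3*(1+g)^7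 + 328*r^3*(-g-r)*(1+g)^6 + 1664*r^3*(-g-r)^2*(1+g)^5 + 4892*r^3*(-g-r)^3*(1+g)^4 + 8586*r^3*(-g-r)^4*(1+g)^3 + 8312*r^3*(-g-r)^5*(1+g)^2 + 3982*r^3*(-g-r)^6*(1+g) + 716*r^3*(-g-r)^7 + 140*r^4*(1+g)^6 + 1680*r^4*(-g-r)*(1+g)^5 + 6454*r^4*(-g-r)^2*(1+g)^4 + 12674*r^4*(-g-r)^3*(1+g)^3 + 13125*r^4*(-g-r)^4*(1+g)^2 + 6371*r^4*(-g-r)^5*(1+g) + 1015*r^4*(-g-r)^6 + 520*r^5*(1+g)^5 + 4436*r^5*(-g-r)*(1+g)^4 + 12632*r^5*(-g-r)^2*(1+g)^3 + 16198*r^5*(-g-r)^3*(1+g)^2 + 8798*r^5*(-g-r)^4*(1+g) + 1295*r^5*(-g-r)^5 + 1074*r^6*(1+g)^4 + 6652*r^6*(-g-r)*(1+g)^3 + 12978*r^6*(-g-r)^2*(1+g)^2 + 9280*r^6*(-g-r)^3*(1+g) + 1598*r^6*(-g-r)^4 + 1330*r^7*(1+g)^3 + 5618*r^7*(-g-r)*(1+g)^2 + 6314*r^7*(-g-r)^2*(1+g) + 1546*r^7*(-g-r)^3 + 967*r^8*(1+g)^2 + 2363*r^8*(-g-r)*(1+g) + 959*r^8*(-g-r)^2 + 362*r^9*(1+g) + 327*r^9*(-g-r) + 46*r^10 + 32*(v-1)*(-g-r)^3*(1+g)^6 + 208*(v-1)*(-g-r)^4*(1+g)^5 + 560*(v-1)*(-g-r)^5*(1+g)^4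 + 800*(v-1)*(-g-r)^6*(1+g)^3 + 640*(v-1)*(-g-r)^7*(1+g)^2 + 272*(v-1)*(-g-r)^8*(1+g) + 48*(v-1)*(-g-r)^9 + 288*(v-1)*r*(-g-r)^3*(1+g)^5 + 1520*(v-1)*r*(-g-r)^4*(1+g)^4 + 3164*(v-1)*r*(-g-r)^5*(1+g)^3 + 3252*(v-1)*r*(-g-r)^6*(1+g)^2 + 1652*(v-1)*r*(-g-r)^7*(1+g) + 332*(v-1)*r*(-g-r)^8 + 96*(v-1)*r^2*(-g-r)*(1+g)^6 + 552*(v-1)*r^2*(-g-r)^2*(1+g)^5 + 2376*(v-1)*r^2*(-g-r)^3*(1+g)^4 + 5876*(v-1)*r^2*(-g-r)^4*(1+g)^3 + 7292*(v-1)*r^2*(-g-r)^5*(1+g)^2 + 4284*(v-1)*r^2*(-g-r)^6*(1+g) + 948*(v-1)*r^2*(-g-r)^7 + 64*(v-1)*r^3*(1+g)^6 + 1072*(v-1)*r^3*(-g-r)*(1+g)^5 + 4312*(v-1)*r^3*(-g-r)^2*(1+g)^4 + 9528*(v-1)*r^3*(-g-r)^3*(1+g)^3 + 11784*(v-1)*r^3*(-g-r)^4*(1+g)^2 + 7064*(v-1)*r^3*(-g-r)^5*(1+g) + 1516*(v-1)*r^3*(-g-r)^6 + 456*(v-1)*r^4*(1+g)^5 + 4328*(v-1)*r^4*(-g-r)*(1+g)^4 + 12476*(v-1)*r^4*(-g-r)^2*(1+g)^3 + 16686*(v-1)*r^4*(-g-r)^3*(1+g)^2 + 9893*(v-1)*r^4*(-g-r)^4*(1+g)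 + 1761*(v-1)*r^4*(-g-r)^5 + 1336*(v-1)*r^5*(1+g)^4 + 8548*(v-1)*r^5*(-g-r)*(1+g)^3 + 16568*(v-1)*r^5*(-g-r)^2*(1+g)^2 + 11828*(v-1)*r^5*(-g-r)^3*(1+g) + 2015*(v-1)*r^5*(-g-r)^4 + 2072*(v-1)*r^6*(1+g)^3 + 8746*(v-1)*r^6*(-g-r)*(1+g)^2 + 9550*(v-1)*r^6*(-g-r)^2*(1+g) + 2142*(v-1)*r^6*(-g-r)^3 + 1760*(v-1)*r^7*(1+g)^2 + 4184*(v-1)*r^7*(-g-r)*(1+g) + 1546*(v-1)*r^7*(-g-r)^2 + 729*(v-1)*r^8*(1+g) + 605*(v-1)*r^8*(-g-r) + 95*(v-1)*r^9 + 48*(v-1)^2*(-g-r)^3*(1+g)^5 + 264*(v-1)^2*(-g-r)^4*(1+g)^4 + 576*(v-1)^2*(-g-r)^5*(1+g)^3 + 624*(v-1)^2*(-g-r)^6*(1+g)^2 + 336*(v-1)^2*(-g-r)^7*(1+g) + 72*(v-1)^2*(-g-r)^8 + 336*(v-1)^2*r*(-g-r)^3*(1+g)^4 + 1440*(v-1)^2*r*(-g-r)^4*(1+g)^3 + 2268*(v-1)^2*r*(-g-r)^5*(1+g)^2 + 1560*(v-1)^2*r*(-g-r)^6*(1+g) + 396*(v-1)^2*r*(-g-r)^7 + 144*(v-1)^2*r^2*(-g-r)*(1+g)^5 + 648*(v-1)^2*r^2*(-g-r)^2*(1+g)^4 + 2064*(v-1)^2*r^2*(-g-r)^3*(1+g)^3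 + 3716*(v-1)^2*r^2*(-g-r)^4*(1+g)^2 + 3014*(v-1)^2*r^2*(-g-r)^5*(1+g) + 862*(v-1)^2*r^2*(-g-r)^6 + 96*(v-1)^2*r^3*(1+g)^5 + 1248*(v-1)^2*r^3*(-g-r)*(1+g)^4 + 3712*(v-1)^2*r^3*(-g-r)^2*(1+g)^3 + 5516*(v-1)^2*r^3*(-g-r)^3*(1+g)^2 + 4026*(v-1)^2*r^3*(-g-r)^4*(1+g) + 1028*(v-1)^2*r^3*(-g-r)^5 + 528*(v-1)^2*r^4*(1+g)^4 + 3696*(v-1)^2*r^4*(-g-r)*(1+g)^3 + 7138*(v-1)^2*r^4*(-g-r)^2*(1+g)^2 + 5204*(v-1)^2*r^4*(-g-r)^3*(1+g) + 992*(v-1)^2*r^4*(-g-r)^4 + 1136*(v-1)^2*r^5*(1+g)^3 + 4876*(v-1)^2*r^5*(-g-r)*(1+g)^2 + 5156*(v-1)^2*r^5*(-g-r)^2*(1+g) + 1076*(v-1)^2*r^5*(-g-r)^3 + 1182*(v-1)^2*r^6*(1+g)^2 + 2742*(v-1)^2*r^6*(-g-r)*(1+g) + 926*(v-1)^2*r^6*(-g-r)^2 + 554*(v-1)^2*r^7*(1+g) + 428*(v-1)^2*r^7*(-g-r) + 76*(v-1)^2*r^8 + 32*(v-1)^3*(-g-r)^3*(1+g)^3 + 112*(v-1)^3*(-g-r)^4*(1+g)^2 + 128*(v-1)^3*(-g-r)^5*(1+g) + 48*(v-1)^3*(-g-r)^6 + 128*(v-1)^3*r*(-g-r)^3*(1+g)^2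 + 288*(v-1)^3*r*(-g-r)^4*(1+g) + 148*(v-1)^3*r*(-g-r)^5 + 96*(v-1)^3*r^2*(-g-r)*(1+g)^3 + 216*(v-1)^3*r^2*(-g-r)^2*(1+g)^2 + 304*(v-1)^3*r^2*(-g-r)^3*(1+g) + 148*(v-1)^3*r^2*(-g-r)^4 + 64*(v-1)^3*r^3*(1+g)^3 + 432*(v-1)^3*r^3*(-g-r)*(1+g)^2 + 496*(v-1)^3*r^3*(-g-r)^2*(1+g) + 96*(v-1)^3*r^3*(-g-r)^3 + 184*(v-1)^3*r^4*(1+g)^2 + 512*(v-1)^3*r^4*(-g-r)*(1+g) + 128*(v-1)^3*r^4*(-g-r)^2 + 160*(v-1)^3*r^5*(1+g) + 108*(v-1)^3*r^5*(-g-r) + 28*(v-1)^3*r^6 + 8*(v-1)^4*(-g-r)^3*(1+g) + 12*(v-1)^4*(-g-r)^4 + 8*(v-1)^4*r*(-g-r)^3 + 24*(v-1)^4*r^2*(-g-r)*(1+g) + 16*(v-1)^4*r^3*(1+g) + 8*(v-1)^4*r^3*(-g-r) + 4*(v-1)^4*r^4" by algebra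
  have "0 \<le> 8*(-g-r)^3*(1+g)^7 + 60*(-g-r)^4*(1+g)^6 + 192*(-g-r)^5*(1+g)^5 + 340*(-g-r)^6*(1+g)^4 + 360*(-g-r)^7*(1+g)^3 + 228*(-g-r)^8*(1+g)^2 + 80*(-g-r)^9*(1+g) + 12*(-g-r)^10 + 88*r*(-g-r)^3*(1+g)^6 + 552*r*(-g-r)^4*(1+g)^5 + 1428*r*(-g-r)^5*(1+g)^4 + 1952*r*(-g-r)^6*(1+g)^3 + 1488*r*(-g-r)^7*(1+g)^2 + 600*r*(-g-r)^8*(1+g) + 100*r*(-g-r)^9 + 24*r^2*(-g-r)*(1+g)^7 + 168*r^2*(-g-r)^2*(1+g)^6 + 912*r^2*(-g-r)^3*(1+g)^5 + 2872*r^2*(-g-r)^4*(1+g)^4 + 4814*r^2*(-g-r)^5*(1+g)^3 + 4318*r^2*(-g-r)^6*(1+g)^2 + 1962*r^2*(-g-r)^7*(1+g) + 354*r^2*(-g-r)^8 + 16*r^3*(1+g)^7 + 328*r^3*(-g-r)*(1+g)^6 + 1664*r^3*(-g-r)^2*(1+g)^5 + 4892*r^3*(-g-r)^3*(1+g)^4 + 8586*r^3*(-g-r)^4*(1+g)^3 + 8312*r^3*(-g-r)^5*(1+g)^2 + 3982*r^3*(-g-r)^6*(1+g) + 716*r^3*(-g-r)^7 + 140*r^4*(1+g)^6 + 1680*r^4*(-g-r)*(1+g)^5 + 6454*r^4*(-g-r)^2*(1+g)^4 + 12674*r^4*(-g-r)^3*(1+g)^3 + 13125*r^4*(-g-r)^4*(1+g)^2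 + 6371*r^4*(-g-r)^5*(1+g) + 1015*r^4*(-g-r)^6 + 520*r^5*(1+g)^5 + 4436*r^5*(-g-r)*(1+g)^4 + 12632*r^5*(-g-r)^2*(1+g)^3 + 16198*r^5*(-g-r)^3*(1+g)^2 + 8798*r^5*(-g-r)^4*(1+g) + 1295*r^5*(-g-r)^5 + 1074*r^6*(1+g)^4 + 6652*r^6*(-g-r)*(1+g)^3 + 12978*r^6*(-g-r)^2*(1+g)^2 + 9280*r^6*(-g-r)^3*(1+g) + 1598*r^6*(-g-r)^4 + 1330*r^7*(1+g)^3 + 5618*r^7*(-g-r)*(1+g)^2 + 6314*r^7*(-g-r)^2*(1+g) + 1546*r^7*(-g-r)^3 + 967*r^8*(1+g)^2 + 2363*r^8*(-g-r)*(1+g) + 959*r^8*(-g-r)^2 + 362*r^9*(1+g) + 327*r^9*(-g-r) + 46*r^10 + 32*(v-1)*(-g-r)^3*(1+g)^6 + 208*(v-1)*(-g-r)^4*(1+g)^5 + 560*(v-1)*(-g-r)^5*(1+g)^4 + 800*(v-1)*(-g-r)^6*(1+g)^3 + 640*(v-1)*(-g-r)^7*(1+g)^2 + 272*(v-1)*(-g-r)^8*(1+g) + 48*(v-1)*(-g-r)^9 + 288*(v-1)*r*(-g-r)^3*(1+g)^5 + 1520*(v-1)*r*(-g-r)^4*(1+g)^4 + 3164*(v-1)*r*(-g-r)^5*(1+g)^3 + 3252*(v-1)*r*(-g-r)^6*(1+g)^2 + 1652*(v-1)*r*(-g-r)^7*(1+g) + 332*(v-1)*r*(-g-r)^8 +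 96*(v-1)*r^2*(-g-r)*(1+g)^6 + 552*(v-1)*r^2*(-g-r)^2*(1+g)^5 + 2376*(v-1)*r^2*(-g-r)^3*(1+g)^4 + 5876*(v-1)*r^2*(-g-r)^4*(1+g)^3 + 7292*(v-1)*r^2*(-g-r)^5*(1+g)^2 + 4284*(v-1)*r^2*(-g-r)^6*(1+g) + 948*(v-1)*r^2*(-g-r)^7 + 64*(v-1)*r^3*(1+g)^6 + 1072*(v-1)*r^3*(-g-r)*(1+g)^5 + 4312*(v-1)*r^3*(-g-r)^2*(1+g)^4 + 9528*(v-1)*r^3*(-g-r)^3*(1+g)^3 + 11784*(v-1)*r^3*(-g-r)^4*(1+g)^2 + 7064*(v-1)*r^3*(-g-r)^5*(1+g) + 1516*(v-1)*r^3*(-g-r)^6 + 456*(v-1)*r^4*(1+g)^5 + 4328*(v-1)*r^4*(-g-r)*(1+g)^4 + 12476*(v-1)*r^4*(-g-r)^2*(1+g)^3 + 16686*(v-1)*r^4*(-g-r)^3*(1+g)^2 + 9893*(v-1)*r^4*(-g-r)^4*(1+g) + 1761*(v-1)*r^4*(-g-r)^5 + 1336*(v-1)*r^5*(1+g)^4 + 8548*(v-1)*r^5*(-g-r)*(1+g)^3 + 16568*(v-1)*r^5*(-g-r)^2*(1+g)^2 + 11828*(v-1)*r^5*(-g-r)^3*(1+g) + 2015*(v-1)*r^5*(-g-r)^4 + 2072*(v-1)*r^6*(1+g)^3 + 8746*(v-1)*r^6*(-g-r)*(1+g)^2 + 9550*(v-1)*r^6*(-g-r)^2*(1+g) + 2142*(v-1)*r^6*(-g-r)^3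 + 1760*(v-1)*r^7*(1+g)^2 + 4184*(v-1)*r^7*(-g-r)*(1+g) + 1546*(v-1)*r^7*(-g-r)^2 + 729*(v-1)*r^8*(1+g) + 605*(v-1)*r^8*(-g-r) + 95*(v-1)*r^9 + 48*(v-1)^2*(-g-r)^3*(1+g)^5 + 264*(v-1)^2*(-g-r)^4*(1+g)^4 + 576*(v-1)^2*(-g-r)^5*(1+g)^3 + 624*(v-1)^2*(-g-r)^6*(1+g)^2 + 336*(v-1)^2*(-g-r)^7*(1+g) + 72*(v-1)^2*(-g-r)^8 + 336*(v-1)^2*r*(-g-r)^3*(1+g)^4 + 1440*(v-1)^2*r*(-g-r)^4*(1+g)^3 + 2268*(v-1)^2*r*(-g-r)^5*(1+g)^2 + 1560*(v-1)^2*r*(-g-r)^6*(1+g) + 396*(v-1)^2*r*(-g-r)^7 + 144*(v-1)^2*r^2*(-g-r)*(1+g)^5 + 648*(v-1)^2*r^2*(-g-r)^2*(1+g)^4 + 2064*(v-1)^2*r^2*(-g-r)^3*(1+g)^3 + 3716*(v-1)^2*r^2*(-g-r)^4*(1+g)^2 + 3014*(v-1)^2*r^2*(-g-r)^5*(1+g) + 862*(v-1)^2*r^2*(-g-r)^6 + 96*(v-1)^2*r^3*(1+g)^5 + 1248*(v-1)^2*r^3*(-g-r)*(1+g)^4 + 3712*(v-1)^2*r^3*(-g-r)^2*(1+g)^3 + 5516*(v-1)^2*r^3*(-g-r)^3*(1+g)^2 + 4026*(v-1)^2*r^3*(-g-r)^4*(1+g) + 1028*(v-1)^2*r^3*(-g-r)^5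 + 528*(v-1)^2*r^4*(1+g)^4 + 3696*(v-1)^2*r^4*(-g-r)*(1+g)^3 + 7138*(v-1)^2*r^4*(-g-r)^2*(1+g)^2 + 5204*(v-1)^2*r^4*(-g-r)^3*(1+g) + 992*(v-1)^2*r^4*(-g-r)^4 + 1136*(v-1)^2*r^5*(1+g)^3 + 4876*(v-1)^2*r^5*(-g-r)*(1+g)^2 + 5156*(v-1)^2*r^5*(-g-r)^2*(1+g) + 1076*(v-1)^2*r^5*(-g-r)^3 + 1182*(v-1)^2*r^6*(1+g)^2 + 2742*(v-1)^2*r^6*(-g-r)*(1+g) + 926*(v-1)^2*r^6*(-g-r)^2 + 554*(v-1)^2*r^7*(1+g) + 428*(v-1)^2*r^7*(-g-r) + 76*(v-1)^2*r^8 + 32*(v-1)^3*(-g-r)^3*(1+g)^3 + 112*(v-1)^3*(-g-r)^4*(1+g)^2 + 128*(v-1)^3*(-g-r)^5*(1+g) + 48*(v-1)^3*(-g-r)^6 + 128*(v-1)^3*r*(-g-r)^3*(1+g)^2 + 288*(v-1)^3*r*(-g-r)^4*(1+g) + 148*(v-1)^3*r*(-g-r)^5 + 96*(v-1)^3*r^2*(-g-r)*(1+g)^3 + 216*(v-1)^3*r^2*(-g-r)^2*(1+g)^2 + 304*(v-1)^3*r^2*(-g-r)^3*(1+g) + 148*(v-1)^3*r^2*(-g-r)^4 + 64*(v-1)^3*r^3*(1+g)^3 + 432*(v-1)^3*r^3*(-g-r)*(1+g)^2 + 496*(v-1)^3*r^3*(-g-r)^2*(1+g) + 96*(v-1)^3*r^3*(-g-r)^3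 + 184*(v-1)^3*r^4*(1+g)^2 + 512*(v-1)^3*r^4*(-g-r)*(1+g) + 128*(v-1)^3*r^4*(-g-r)^2 + 160*(v-1)^3*r^5*(1+g) + 108*(v-1)^3*r^5*(-g-r) + 28*(v-1)^3*r^6 + 8*(v-1)^4*(-g-r)^3*(1+g) + 12*(v-1)^4*(-g-r)^4 + 8*(v-1)^4*r*(-g-r)^3 + 24*(v-1)^4*r^2*(-g-r)*(1+g) + 16*(v-1)^4*r^3*(1+g) + 8*(v-1)^4*r^3*(-g-r) + 4*(v-1)^4*r^4"
    by (rule Q_nonneg_cert[of "(v-1)" "(-g-r)" "(1+g)" "r"]) (use assms in auto)
  then show ?thesis by (simp only: e)
qed

lemma mul_frac_aux: fixes X D C N :: real assumes "D \<noteq> 0" "X = D*C" shows "X*(N/D) = N*C"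
  using assms by simp

lemma M_pos: fixes r v g :: real assumes "0 \<le> r" "1 \<le> v" "-1 \<le> g" "g \<le> 0"
  shows "0 < (2*(v+r)^2+g*r*(2*v+r))"
proof -
  have "-(r*(2*v+r)) \<le> g*(r*(2*v+r))" using mult_right_mono[of "-1" g "r*(2*v+r)"] assms by simp
  have "2*(v+r)^2 - r*(2*v+r) = r^2 + 2*r*v + 2*v^2" by algebra
  moreover have "0 < r^2 + 2*r*v + 2*v^2" using assms by (intro add_nonneg_pos add_nonneg_nonneg) auto
  ultimately have "r*(2*v+r) < 2*(v+r)^2" by linarith
  moreover have "g*r*(2*v+r) = g*(r*(2*v+r))" by simp
  ultimately show ?thesis using \<open>-(r*(2*v+r)) \<le> g*(r*(2*v+r))\<close> by linarith
qed
lemma T1: fixes r v g :: real assumes "0 \<le> r" "1 \<le> v" "0 \<le> g" "g \<le> 1"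
  shows "(((r+g)^2)/(2*(v+g^2+(r+g)))) - ((r^2)/(2*(v+r))) - ((g^2)/(2*v+g^2)) \<le> ((g*(r*(2*v+r)))/(2*(v+r)^2)) - ((g^2*(r*(2*v+r))^2)/(8*(v+r)^4))"
proof -
  have gg: "0 \<le> g^2" by simp
  have pos: "0 < (v+g^2+(r+g))" "0 < v + r" "0 < 2*v+g^2" using assms gg by linarith+
  have p: "0 \<le> 2*(v+r+g+g^2)*4*(v+r)^4 - (2*v+g^2)*4*(v+r)^2*(-g*(v+r)^2+(1+g)*v^2-r^2*(v+r)) - (2*v+g^2)*(v+r+g+g^2)*r^2*(2*v+r)^2" by (rule P1_nonneg) (use assms in auto)
  have c0: "(8*(2*v+g^2)*(v+g^2+(r+g))*(v+r)^4) * ((g*(r*(2*v+r)))/(2*(v+r)^2)) = (g*(r*(2*v+r))) * (4*(2*v+g^2)*(v+g^2+(r+g))*(v+r)^2)"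
    by (rule mul_frac_aux) (use pos  in simp, algebra)
  have c1: "(8*(2*v+g^2)*(v+g^2+(r+g))*(v+r)^4) * ((g^2*(r*(2*v+r))^2)/(8*(v+r)^4)) = (g^2*(r*(2*v+r))^2) * ((2*v+g^2)*(v+g^2+(r+g)))"
    by (rule mul_frac_aux) (use pos  in simp, algebra)
  have c2: "(8*(2*v+g^2)*(v+g^2+(r+g))*(v+r)^4) * (((r+g)^2)/(2*(v+g^2+(r+g)))) = ((r+g)^2) * (4*(2*v+g^2)*(v+r)^4)"
    by (rule mul_frac_aux) (use pos  in simp, algebra)
  have c3: "(8*(2*v+g^2)*(v+g^2+(r+g))*(v+r)^4) * ((r^2)/(2*(v+r))) = (r^2) * (4*(2*v+g^2)*(v+g^2+(r+g))*(v+r)^3)"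
    by (rule mul_frac_aux) (use pos  in simp, algebra)
  have c4: "(8*(2*v+g^2)*(v+g^2+(r+g))*(v+r)^4) * ((g^2)/(2*v+g^2)) = (g^2) * (8*(v+g^2+(r+g))*(v+r)^4)"
    by (rule mul_frac_aux) (use pos  in simp, algebra)
  have dp: "0 < (8*(2*v+g^2)*(v+g^2+(r+g))*(v+r)^4)" using pos  by simp
  have idt: "((g*(r*(2*v+r))) * (4*(2*v+g^2)*(v+g^2+(r+g))*(v+r)^2)) - ((g^2*(r*(2*v+r))^2) * ((2*v+g^2)*(v+g^2+(r+g)))) - ((((r+g)^2) * (4*(2*v+g^2)*(v+r)^4)) - ((r^2) * (4*(2*v+g^2)*(v+g^2+(r+g))*(v+r)^3)) - ((g^2) * (8*(v+g^2+(r+g))*(v+r)^4))) = g^2 * (2*(v+r+g+g^2)*4*(v+r)^4 - (2*v+g^2)*4*(v+r)^2*(-g*(v+r)^2+(1+g)*v^2-r^2*(v+r)) - (2*v+g^2)*(v+r+g+g^2)*r^2*(2*v+r)^2)" by algebra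
  have "(8*(2*v+g^2)*(v+g^2+(r+g))*(v+r)^4) * (((g*(r*(2*v+r)))/(2*(v+r)^2)) - ((g^2*(r*(2*v+r))^2)/(8*(v+r)^4)) - ((((r+g)^2)/(2*(v+g^2+(r+g)))) - ((r^2)/(2*(v+r))) - ((g^2)/(2*v+g^2)))) = g^2 * (2*(v+r+g+g^2)*4*(v+r)^4 - (2*v+g^2)*4*(v+r)^2*(-g*(v+r)^2+(1+g)*v^2-r^2*(v+r)) - (2*v+g^2)*(v+r+g+g^2)*r^2*(2*v+r)^2)"
    unfolding idt[symmetric] c0[symmetric] c1[symmetric] c2[symmetric] c3[symmetric] c4[symmetric] by (simp only: right_diff_distrib)
  then have "0 \<le> (8*(2*v+g^2)*(v+g^2+(r+g))*(v+r)^4) * (((g*(r*(2*v+r)))/(2*(v+r)^2)) - ((g^2*(r*(2*v+r))^2)/(8*(v+r)^4)) - ((((r+g)^2)/(2*(v+g^2+(r+g)))) - ((r^2)/(2*(v+r))) - ((g^2)/(2*v+g^2))))" using p gg by simp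
  then have "0 \<le> ((g*(r*(2*v+r)))/(2*(v+r)^2)) - ((g^2*(r*(2*v+r))^2)/(8*(v+r)^4)) - ((((r+g)^2)/(2*(v+g^2+(r+g)))) - ((r^2)/(2*(v+r))) - ((g^2)/(2*v+g^2)))" using dp by (simp add: zero_le_mult_iff)
  then show ?thesis by linarith
qed
lemma T2: fixes r v g :: real assumes "0 \<le> r + g" "1 \<le> v" "-1 \<le> g" "g \<le> 0"
  shows "(((r+g)^2)/(2*(v+g^2+(r+g)))) - ((r^2)/(2*(v+r))) - ((g^2)/(2*v+g^2)) \<le> ((g*(r*(2*v+r)))/(2*(v+r)^2)) - ((g^2*(r*(2*v+r))^2)/(4*(v+r)^2*(2*(v+r)^2+g*r*(2*v+r))))"
proof -
  have gg: "0 \<le> g^2" by simp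
  have pos: "0 < (v+g^2+(r+g))" "0 < v + r" "0 < 2*v+g^2" using assms gg by linarith+
  have pM: "0 < (2*(v+r)^2+g*r*(2*v+r))" by (rule M_pos) (use assms in auto)
  have p: "0 \<le> 2*(v+r+g+g^2)*2*(v+r)^2*(2*(v+r)^2+g*r*(2*v+r)) - (2*v+g^2)*2*(2*(v+r)^2+g*r*(2*v+r))*(-g*(v+r)^2+(1+g)*v^2-r^2*(v+r)) - (2*v+g^2)*(v+r+g+g^2)*r^2*(2*v+r)^2" by (rule P2_nonneg) (use assms in auto)
  have c0: "(4*(2*v+g^2)*(v+g^2+(r+g))*(v+r)^2*(2*(v+r)^2+g*r*(2*v+r))) * ((g*(r*(2*v+r)))/(2*(v+r)^2)) = (g*(r*(2*v+r))) * (2*(2*v+g^2)*(v+g^2+(r+g))*(2*(v+r)^2+g*r*(2*v+r)))"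
    by (rule mul_frac_aux) (use pos pM in simp, algebra)
  have c1: "(4*(2*v+g^2)*(v+g^2+(r+g))*(v+r)^2*(2*(v+r)^2+g*r*(2*v+r))) * ((g^2*(r*(2*v+r))^2)/(4*(v+r)^2*(2*(v+r)^2+g*r*(2*v+r)))) = (g^2*(r*(2*v+r))^2) * ((2*v+g^2)*(v+g^2+(r+g)))"
    by (rule mul_frac_aux) (use pos pM in simp, algebra)
  have c2: "(4*(2*v+g^2)*(v+g^2+(r+g))*(v+r)^2*(2*(v+r)^2+g*r*(2*v+r))) * (((r+g)^2)/(2*(v+g^2+(r+g)))) = ((r+g)^2) * (2*(2*v+g^2)*(v+r)^2*(2*(v+r)^2+g*r*(2*v+r)))"
    by (rule mul_frac_aux) (use pos pM in simp, algebra)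
  have c3: "(4*(2*v+g^2)*(v+g^2+(r+g))*(v+r)^2*(2*(v+r)^2+g*r*(2*v+r))) * ((r^2)/(2*(v+r))) = (r^2) * (2*(2*v+g^2)*(v+g^2+(r+g))*(v+r)*(2*(v+r)^2+g*r*(2*v+r)))"
    by (rule mul_frac_aux) (use pos pM in simp, algebra)
  have c4: "(4*(2*v+g^2)*(v+g^2+(r+g))*(v+r)^2*(2*(v+r)^2+g*r*(2*v+r))) * ((g^2)/(2*v+g^2)) = (g^2) * (4*(v+g^2+(r+g))*(v+r)^2*(2*(v+r)^2+g*r*(2*v+r)))"
    by (rule mul_frac_aux) (use pos pM in simp, algebra)
  have dp: "0 < (4*(2*v+g^2)*(v+g^2+(r+g))*(v+r)^2*(2*(v+r)^2+g*r*(2*v+r)))" using pos pM by simp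
  have idt: "((g*(r*(2*v+r))) * (2*(2*v+g^2)*(v+g^2+(r+g))*(2*(v+r)^2+g*r*(2*v+r)))) - ((g^2*(r*(2*v+r))^2) * ((2*v+g^2)*(v+g^2+(r+g)))) - ((((r+g)^2) * (2*(2*v+g^2)*(v+r)^2*(2*(v+r)^2+g*r*(2*v+r)))) - ((r^2) * (2*(2*v+g^2)*(v+g^2+(r+g))*(v+r)*(2*(v+r)^2+g*r*(2*v+r)))) - ((g^2) * (4*(v+g^2+(r+g))*(v+r)^2*(2*(v+r)^2+g*r*(2*v+r))))) = g^2 * (2*(v+r+g+g^2)*2*(v+r)^2*(2*(v+r)^2+g*r*(2*v+r)) - (2*v+g^2)*2*(2*(v+r)^2+g*r*(2*v+r))*(-g*(v+r)^2+(1+g)*v^2-r^2*(v+r)) - (2*v+g^2)*(v+r+g+g^2)*r^2*(2*v+r)^2)" by algebra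
  have "(4*(2*v+g^2)*(v+g^2+(r+g))*(v+r)^2*(2*(v+r)^2+g*r*(2*v+r))) * (((g*(r*(2*v+r)))/(2*(v+r)^2)) - ((g^2*(r*(2*v+r))^2)/(4*(v+r)^2*(2*(v+r)^2+g*r*(2*v+r)))) - ((((r+g)^2)/(2*(v+g^2+(r+g)))) - ((r^2)/(2*(v+r))) - ((g^2)/(2*v+g^2)))) = g^2 * (2*(v+r+g+g^2)*2*(v+r)^2*(2*(v+r)^2+g*r*(2*v+r)) - (2*v+g^2)*2*(2*(v+r)^2+g*r*(2*v+r))*(-g*(v+r)^2+(1+g)*v^2-r^2*(v+r)) - (2*v+g^2)*(v+r+g+g^2)*r^2*(2*v+r)^2)"
    unfolding idt[symmetric] c0[symmetric] c1[symmetric] c2[symmetric] c3[symmetric] c4[symmetric] by (simp only: right_diff_distrib)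
  then have "0 \<le> (4*(2*v+g^2)*(v+g^2+(r+g))*(v+r)^2*(2*(v+r)^2+g*r*(2*v+r))) * (((g*(r*(2*v+r)))/(2*(v+r)^2)) - ((g^2*(r*(2*v+r))^2)/(4*(v+r)^2*(2*(v+r)^2+g*r*(2*v+r)))) - ((((r+g)^2)/(2*(v+g^2+(r+g)))) - ((r^2)/(2*(v+r))) - ((g^2)/(2*v+g^2))))" using p gg by simp
  then have "0 \<le> ((g*(r*(2*v+r)))/(2*(v+r)^2)) - ((g^2*(r*(2*v+r))^2)/(4*(v+r)^2*(2*(v+r)^2+g*r*(2*v+r)))) - ((((r+g)^2)/(2*(v+g^2+(r+g)))) - ((r^2)/(2*(v+r))) - ((g^2)/(2*v+g^2)))" using dp by (simp add: zero_le_mult_iff)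
  then show ?thesis by linarith
qed
lemma T3: fixes r v g :: real assumes "0 \<le> r" "r + g \<le> 0" "1 \<le> v" "-1 \<le> g"
  shows "(((-(r+g))^2)/(2*(v+g^2+(-(r+g))))) - ((r^2)/(2*(v+r))) - ((g^2)/(2*v+g^2)) \<le> ((g*(r*(2*v+r)))/(2*(v+r)^2)) - ((g^2*(r*(2*v+r))^2)/(4*(v+r)^2*(2*(v+r)^2+g*r*(2*v+r))))"
proof -
  have gg: "0 \<le> g^2" by simp
  have pos: "0 < (v+g^2+(-(r+g)))" "0 < v + r" "0 < 2*v+g^2" using assms gg by linarith+
  have pM: "0 < (2*(v+r)^2+g*r*(2*v+r))" by (rule M_pos) (use assms in auto)
  have p: "0 \<le> -((-g-r)^2*2*(v+r)^2*(2*v+g^2)*(2*(v+r)^2+g*r*(2*v+r)) - r^2*2*(v+r)*((v+g^2)+(-g-r))*(2*v+g^2)*(2*(v+r)^2+g*r*(2*v+r)) - g^2*4*((v+g^2)+(-g-r))*(v+r)^2*(2*(v+r)^2+g*r*(2*v+r)) + (-g)*r*(2*v+r)*2*((v+g^2)+(-g-r))*(2*v+g^2)*(2*(v+r)^2+g*r*(2*v+r)) + g^2*r^2*(2*v+r)^2*((v+g^2)+(-g-r))*(2*v+g^2))" by (rule Q_nonneg) (use assms in auto)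
  have c0: "(4*(v+g^2+(-(r+g)))*(v+r)^2*(2*v+g^2)*(2*(v+r)^2+g*r*(2*v+r))) * ((g*(r*(2*v+r)))/(2*(v+r)^2)) = (g*(r*(2*v+r))) * (2*(2*v+g^2)*(v+g^2+(-(r+g)))*(2*(v+r)^2+g*r*(2*v+r)))"
    by (rule mul_frac_aux) (use pos pM in simp, algebra)
  have c1: "(4*(v+g^2+(-(r+g)))*(v+r)^2*(2*v+g^2)*(2*(v+r)^2+g*r*(2*v+r))) * ((g^2*(r*(2*v+r))^2)/(4*(v+r)^2*(2*(v+r)^2+g*r*(2*v+r)))) = (g^2*(r*(2*v+r))^2) * ((2*v+g^2)*(v+g^2+(-(r+g))))"
    by (rule mul_frac_aux) (use pos pM in simp, algebra)
  have c2: "(4*(v+g^2+(-(r+g)))*(v+r)^2*(2*v+g^2)*(2*(v+r)^2+g*r*(2*v+r))) * (((-(r+g))^2)/(2*(v+g^2+(-(r+g))))) = ((-(r+g))^2) * (2*(2*v+g^2)*(v+r)^2*(2*(v+r)^2+g*r*(2*v+r)))"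
    by (rule mul_frac_aux) (use pos pM in simp, algebra)
  have c3: "(4*(v+g^2+(-(r+g)))*(v+r)^2*(2*v+g^2)*(2*(v+r)^2+g*r*(2*v+r))) * ((r^2)/(2*(v+r))) = (r^2) * (2*(2*v+g^2)*(v+g^2+(-(r+g)))*(v+r)*(2*(v+r)^2+g*r*(2*v+r)))"
    by (rule mul_frac_aux) (use pos pM in simp, algebra)
  have c4: "(4*(v+g^2+(-(r+g)))*(v+r)^2*(2*v+g^2)*(2*(v+r)^2+g*r*(2*v+r))) * ((g^2)/(2*v+g^2)) = (g^2) * (4*(v+g^2+(-(r+g)))*(v+r)^2*(2*(v+r)^2+g*r*(2*v+r)))"
    by (rule mul_frac_aux) (use pos pM in simp, algebra)
  have dp: "0 < (4*(v+g^2+(-(r+g)))*(v+r)^2*(2*v+g^2)*(2*(v+r)^2+g*r*(2*v+r)))" using pos pM by simp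
  have idt: "((g*(r*(2*v+r))) * (2*(2*v+g^2)*(v+g^2+(-(r+g)))*(2*(v+r)^2+g*r*(2*v+r)))) - ((g^2*(r*(2*v+r))^2) * ((2*v+g^2)*(v+g^2+(-(r+g))))) - ((((-(r+g))^2) * (2*(2*v+g^2)*(v+r)^2*(2*(v+r)^2+g*r*(2*v+r)))) - ((r^2) * (2*(2*v+g^2)*(v+g^2+(-(r+g)))*(v+r)*(2*(v+r)^2+g*r*(2*v+r)))) - ((g^2) * (4*(v+g^2+(-(r+g)))*(v+r)^2*(2*(v+r)^2+g*r*(2*v+r))))) = (-((-g-r)^2*2*(v+r)^2*(2*v+g^2)*(2*(v+r)^2+g*r*(2*v+r)) - r^2*2*(v+r)*((v+g^2)+(-g-r))*(2*v+g^2)*(2*(v+r)^2+g*r*(2*v+r)) - g^2*4*((v+g^2)+(-g-r))*(v+r)^2*(2*(v+r)^2+g*r*(2*v+r)) + (-g)*r*(2*v+r)*2*((v+g^2)+(-g-r))*(2*v+g^2)*(2*(v+r)^2+g*r*(2*v+r)) + g^2*r^2*(2*v+r)^2*((v+g^2)+(-g-r))*(2*v+g^2)))" by algebra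
  have "(4*(v+g^2+(-(r+g)))*(v+r)^2*(2*v+g^2)*(2*(v+r)^2+g*r*(2*v+r))) * (((g*(r*(2*v+r)))/(2*(v+r)^2)) - ((g^2*(r*(2*v+r))^2)/(4*(v+r)^2*(2*(v+r)^2+g*r*(2*v+r)))) - ((((-(r+g))^2)/(2*(v+g^2+(-(r+g))))) - ((r^2)/(2*(v+r))) - ((g^2)/(2*v+g^2)))) = (-((-g-r)^2*2*(v+r)^2*(2*v+g^2)*(2*(v+r)^2+g*r*(2*v+r)) - r^2*2*(v+r)*((v+g^2)+(-g-r))*(2*v+g^2)*(2*(v+r)^2+g*r*(2*v+r)) - g^2*4*((v+g^2)+(-g-r))*(v+r)^2*(2*(v+r)^2+g*r*(2*v+r)) + (-g)*r*(2*v+r)*2*((v+g^2)+(-g-r))*(2*v+g^2)*(2*(v+r)^2+g*r*(2*v+r)) + g^2*r^2*(2*v+r)^2*((v+g^2)+(-g-r))*(2*v+g^2)))"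
    unfolding idt[symmetric] c0[symmetric] c1[symmetric] c2[symmetric] c3[symmetric] c4[symmetric] by (simp only: right_diff_distrib)
  then have "0 \<le> (4*(v+g^2+(-(r+g)))*(v+r)^2*(2*v+g^2)*(2*(v+r)^2+g*r*(2*v+r))) * (((g*(r*(2*v+r)))/(2*(v+r)^2)) - ((g^2*(r*(2*v+r))^2)/(4*(v+r)^2*(2*(v+r)^2+g*r*(2*v+r)))) - ((((-(r+g))^2)/(2*(v+g^2+(-(r+g))))) - ((r^2)/(2*(v+r))) - ((g^2)/(2*v+g^2))))" using p gg by simp
  then have "0 \<le> ((g*(r*(2*v+r)))/(2*(v+r)^2)) - ((g^2*(r*(2*v+r))^2)/(4*(v+r)^2*(2*(v+r)^2+g*r*(2*v+r)))) - ((((-(r+g))^2)/(2*(v+g^2+(-(r+g))))) - ((r^2)/(2*(v+r))) - ((g^2)/(2*v+g^2)))" using dp by (simp add: zero_le_mult_iff)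
  then show ?thesis by linarith
qed
lemma ln_lb1: fixes z :: real assumes "0 \<le> z" shows "2*z/(2+z) \<le> ln (1+z)"
proof -
  let ?f = "\<lambda>t::real. ln (1+t) - 2*t/(2+t)"
  have "?f 0 \<le> ?f z"
  proof (rule DERIV_nonneg_imp_nondecreasing[OF assms])
    fix x :: real assume x: "0 \<le> x" "x \<le> z"
    have d: "DERIV ?f x :> 1/(1+x) - (2*(2+x) - 2*x)/(2+x)^2"
      using x by (auto intro!: derivative_eq_intros simp: power2_eq_square)
    have n: "1+x \<noteq> 0" "2+x \<noteq> 0" using x by linarith+
    have "1/(1+x) - (2*(2+x) - 2*x)/(2+x)^2 = x^2/((1+x)*(2+x)^2)"
      using n by (simp add: divide_simps) algebra
    moreover have "0 \<le> x^2/((1+x)*(2+x)^2)" using x by simp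
    ultimately show "\<exists>y. DERIV ?f x :> y \<and> 0 \<le> y" using d by auto
  qed
  then show ?thesis by simp
qed

lemma ln_lb2: fixes x :: real assumes "0 \<le> x" shows "x - x^2/2 \<le> ln (1+x)"
proof -
  let ?f = "\<lambda>t::real. ln (1+t) - (t - t^2/2)"
  have "?f 0 \<le> ?f x"
  proof (rule DERIV_nonneg_imp_nondecreasing[OF assms])
    fix y :: real assume y: "0 \<le> y" "y \<le> x"
    have d: "DERIV ?f y :> 1/(1+y) - (1 - y)"
      using y by (auto intro!: derivative_eq_intros simp: power2_eq_square)
    have "1/(1+y) - (1 - y) = y^2/(1+y)"
      using y by (simp add: field_simps power2_eq_square) 
    moreover have "0 \<le> y^2/(1+y)" using y by simp
    ultimately show "\<exists>z. DERIV ?f y :> z \<and> 0 \<le> z" using d by auto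
  qed
  then show ?thesis by simp
qed

lemma ln_lb3: fixes x :: real assumes "-1 < x" "x \<le> 0" shows "x - x^2/(2*(1+x)) \<le> ln (1+x)"
proof -
  let ?f = "\<lambda>t::real. ln (1+t) - (t - t^2/(2*(1+t)))"
  have "?f 0 \<le> ?f x"
  proof (rule DERIV_nonpos_imp_nonincreasing[of x 0 ?f])
    show "x \<le> 0" by fact
    fix y :: real assume y: "x \<le> y" "y \<le> 0"
    have y1: "0 < 1 + y" using y assms by linarith
    have d: "DERIV ?f y :> 1/(1+y) - (1 - (2*y*(2*(1+y)) - y^2*2)/(2*(1+y))^2)"
      using y1 by (auto intro!: derivative_eq_intros simp: power2_eq_square)
    have n: "1+y \<noteq> 0" using y1 by linarith
    have "1/(1+y) - (1 - (2*y*(2*(1+y)) - y^2*2)/(2*(1+y))^2) = -(y^2/(2*(1+y)^2))"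
      using n by (simp add: divide_simps) algebra
    moreover have "-(y^2/(2*(1+y)^2)) \<le> 0" using y1 by simp
    ultimately show "\<exists>z. DERIV ?f y :> z \<and> z \<le> 0" using d by auto
  qed
  then show ?thesis by simp
qed

lemma ln_lb0: fixes y :: real assumes "0 < y" shows "1 - 1/y \<le> ln y"
proof -
  have "ln (1/y) \<le> 1/y - 1" using assms by (intro ln_le_minus_one) simp
  then show ?thesis using assms by (simp add: ln_div)
qed

lemma sqfrac_aux: fixes a N D :: real assumes D: "0 < D" and p: "0 < 1 + a*(N/D)"
  shows "(a*(N/D))^2/(2*(1+a*(N/D))) = a^2*N^2/(2*D*(D + a*N))"
proof -
  have e: "1 + a*(N/D) = (D + a*N)/D" using D by (simp add: field_simps)
  then have q: "0 < D + a*N" using p D by (simp add: zero_less_divide_iff)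
  have "(a*(N/D))^2/(2*(1+a*(N/D))) = (a^2*N^2/D^2) / (2*((D + a*N)/D))"
    unfolding e by (simp add: power_mult_distrib power_divide)
  also have "\<dots> = a^2*N^2/(2*D*(D + a*N))" using D q by (simp add: field_simps power2_eq_square)
  finally show ?thesis .
qed

definition phi :: "real \<Rightarrow> real \<Rightarrow> real" where "phi r v = r^2/(2*(v+r))"
definition Kf :: "real \<Rightarrow> real \<Rightarrow> real" where "Kf r v = r*(2*v+r)/(2*(v+r)^2)"

lemma Kf_bounds: assumes "0 \<le> r" "1 \<le> v" shows "0 \<le> Kf r v" "Kf r v < 1/2"
proof -
  have "0 < v + r" using assms by linarith
  then show "0 \<le> Kf r v" using assms by (simp add: Kf_def)
  have "2*(v+r)^2 - 2*(r*(2*v+r)) = 2*v^2" by algebra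
  moreover have "0 < 2*v^2" using assms by simp
  ultimately have "2*(r*(2*v+r)) < 2*(v+r)^2" by linarith
  then show "Kf r v < 1/2" using \<open>0 < v + r\<close> by (simp add: Kf_def field_simps)
qed

lemma oneD:
  fixes r v al :: real
  assumes r: "0 \<le> r" and v: "1 \<le> v" and a1: "-1 \<le> al" and a2: "al \<le> 1"
  shows "phi \<bar>r+al\<bar> (v+al^2) - phi r v - ln ((v+al^2)/v)/2 \<le> ln (1 + al * Kf r v)"
proof -
  define K where "K = Kf r v"
  have kb: "0 \<le> K" "K < 1/2" using Kf_bounds[OF r v] by (auto simp: K_def)
  have vpos: "0 < v" using v by linarith
  have upos: "0 < v + r" using v r by linarith
  define z where "z = al^2/v"
  have z0: "0 \<le> z" unfolding z_def using vpos by simp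
  have "(v+al^2)/v = 1 + z" unfolding z_def using vpos by (simp add: field_simps)
  then have A: "ln ((v+al^2)/v) \<ge> 2*z/(2+z)" using ln_lb1[OF z0] by simp
  have B: "2*z/(2+z) = 2*(al^2/(2*v+al^2))" unfolding z_def using vpos
    by (simp add: field_simps)
  have lnv: "ln ((v+al^2)/v)/2 \<ge> al^2/(2*v+al^2)" using A B by linarith
  have "- K \<le> al * K" using mult_right_mono[of "-1" al K] kb a1 by simp
  then have x1: "-1/2 < al * K" using kb by linarith
  have Kdef: "K = (r*(2*v+r))/(2*(v+r)^2)" by (simp add: K_def Kf_def)
  show ?thesis
  proof (cases "0 \<le> al")
    case True
    have "ln (1 + al*K) \<ge> al*K - (al*K)^2/2"
      using ln_lb2[of "al*K"] True kb by simp
    moreover have "al*K - (al*K)^2/2 = (al*(r*(2*v+r)))/(2*(v+r)^2) - (al^2*(r*(2*v+r))^2)/(8*(v+r)^4)"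
      unfolding Kdef using upos by (simp add: field_simps) algebra
    moreover have "((r+al)^2)/(2*(v+al^2+(r+al))) - (r^2)/(2*(v+r)) - (al^2)/(2*v+al^2) \<le>
        (al*(r*(2*v+r)))/(2*(v+r)^2) - (al^2*(r*(2*v+r))^2)/(8*(v+r)^4)"
      using T1[OF r v True a2] by simp
    moreover have "phi \<bar>r+al\<bar> (v+al^2) = ((r+al)^2)/(2*(v+al^2+(r+al)))"
      using True r by (simp add: phi_def)
    moreover have "phi r v = r^2/(2*(v+r))" by (simp add: phi_def)
    ultimately show ?thesis using lnv by (simp add: K_def)
  next
    case False
    then have aln: "al \<le> 0" by simp
    have M: "0 < 2*(v+r)^2 + al*r*(2*v+r)" by (rule M_pos) (use r v a1 aln in auto)
    have pk: "0 < 1 + al*K" using x1 by linarith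
    have "ln (1 + al*K) \<ge> al*K - (al*K)^2/(2*(1+al*K))"
      using ln_lb3[of "al*K"] x1 aln kb by (simp add: mult_nonneg_nonpos2 mult_le_0_iff)
    moreover have "al*K - (al*K)^2/(2*(1+al*K)) = (al*(r*(2*v+r)))/(2*(v+r)^2) - (al^2*(r*(2*v+r))^2)/(4*(v+r)^2*(2*(v+r)^2+al*r*(2*v+r)))"
    proof -
      have "(al*K)^2/(2*(1+al*K)) = (al^2*(r*(2*v+r))^2)/(4*(v+r)^2*(2*(v+r)^2+al*r*(2*v+r)))"
        unfolding Kdef using sqfrac_aux[of "2*(v+r)^2" al "r*(2*v+r)"] upos pk[unfolded Kdef] by (simp add: algebra_simps)
      moreover have "al*K = (al*(r*(2*v+r)))/(2*(v+r)^2)" unfolding Kdef by simp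
      ultimately show ?thesis by simp
    qed
    moreover have "phi r v = r^2/(2*(v+r))" by (simp add: phi_def)
    moreover have "phi \<bar>r+al\<bar> (v+al^2) - r^2/(2*(v+r)) - al^2/(2*v+al^2) \<le>
        (al*(r*(2*v+r)))/(2*(v+r)^2) - (al^2*(r*(2*v+r))^2)/(4*(v+r)^2*(2*(v+r)^2+al*r*(2*v+r)))"
    proof (cases "0 \<le> r + al")
      case True
      then show ?thesis using T2[OF True v a1 aln] by (simp add: phi_def)
    next
      case False
      then have "r + al \<le> 0" by simp
      then show ?thesis using T3[OF r _ v a1] False by (simp add: phi_def)
    qed
    ultimately show ?thesis using lnv by (simp add: K_def)
  qed
qed

lemma phi_mono_w: assumes "0 \<le> y" "0 < w" "w \<le> w'" shows "phi y w' \<le> phi y w"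
  unfolding phi_def using assms by (intro divide_left_mono mult_pos_pos) auto

lemma phi_shift: assumes y0: "0 \<le> y0" and y1: "y0 \<le> y1" and w: "0 < w"
  shows "phi y1 w - phi y0 w \<le> (y1^2 - y0^2)/(2*w)"
proof -
  have "y1^2/(2*(w+y1)) \<le> y1^2/(2*(w+y0))" using assms by (intro divide_left_mono mult_pos_pos) auto
  then have "phi y1 w - phi y0 w \<le> (y1^2 - y0^2)/(2*(w+y0))"
    unfolding phi_def by (simp add: diff_divide_distrib)
  also have "\<dots> \<le> (y1^2 - y0^2)/(2*w)"
    using assms by (intro divide_left_mono mult_pos_pos) (auto intro: power_mono)
  finally show ?thesis .
qed

lemma exp_half_ln: assumes "0 < x" shows "exp (ln x / 2) = sqrt x"
proof -
  have "exp (ln x / 2) = x powr (1/2)" using assms by (simp add: powr_def)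
  then show ?thesis using assms by (simp add: powr_half_sqrt)
qed

lemma step_norm:
  fixes r v a al :: real
  assumes r: "0 \<le> r" and v: "1 \<le> v" and a0: "0 \<le> a" and a1: "a \<le> 1" and aa: "al^2 \<le> a"
  shows "exp (phi (sqrt (r^2 + 2*r*al + a)) (v+a)) / sqrt (v+a)
          \<le> (1 + al * Kf r v) * exp (phi r v) / sqrt v"
proof -
  have al1: "\<bar>al\<bar> \<le> 1"
  proof -
    have "al^2 \<le> 1" using aa a1 by linarith
    then show ?thesis by (simp add: abs_square_le_1)
  qed
  then have alb: "-1 \<le> al" "al \<le> 1" by auto
  define y0 where "y0 = \<bar>r + al\<bar>"
  define y1 where "y1 = sqrt (r^2 + 2*r*al + a)"
  have sq: "r^2 + 2*r*al + a = (r+al)^2 + (a - al^2)" by algebra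
  have y0sq: "y0^2 = (r+al)^2" unfolding y0_def by simp
  have nn: "0 \<le> r^2 + 2*r*al + a" unfolding sq using aa by simp
  have y1sq: "y1^2 = r^2 + 2*r*al + a" unfolding y1_def using nn by simp
  have y0nn: "0 \<le> y0" unfolding y0_def by simp
  have y01: "y0 \<le> y1" unfolding y0_def y1_def
    by (rule real_le_rsqrt) (use aa sq in \<open>simp add: power2_abs\<close>)
  have vpos: "0 < v" using v by linarith
  have w0: "0 < v + a" using vpos a0 by linarith
  have w1: "0 < v + al^2" using vpos by (simp add: add_pos_nonneg)
  have s1: "phi y1 (v+a) - phi y0 (v+a) \<le> (a - al^2)/(2*(v+a))"
    using phi_shift[OF y0nn y01 w0] y0sq y1sq sq by simp
  have s2: "phi y0 (v+a) \<le> phi y0 (v+al^2)" by (rule phi_mono_w[OF y0nn w1]) (use aa in simp)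
  have s3: "ln ((v+a)/(v+al^2)) \<ge> (a - al^2)/(v+a)"
  proof -
    have "ln ((v+a)/(v+al^2)) \<ge> 1 - 1/((v+a)/(v+al^2))" using w0 w1 by (intro ln_lb0) simp
    moreover have "1 - 1/((v+a)/(v+al^2)) = (a - al^2)/(v+a)" using w0 w1 by (simp add: field_simps)
    ultimately show ?thesis by simp
  qed
  have lnsplit: "ln ((v+a)/v) = ln ((v+a)/(v+al^2)) + ln ((v+al^2)/v)"
    using w0 w1 vpos by (simp add: ln_div)
  have od: "phi y0 (v+al^2) - phi r v - ln ((v+al^2)/v)/2 \<le> ln (1 + al * Kf r v)"
    using oneD[OF r v alb] unfolding y0_def .
  define X where "X = (a - al^2)/(v+a)"
  define A where "A = ln ((v+a)/(v+al^2))"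
  define B where "B = ln ((v+al^2)/v)"
  define LK where "LK = ln (1 + al * Kf r v)"
  have half: "(a - al^2)/(2*(v+a)) = X/2" unfolding X_def by simp
  have s1': "phi y1 (v+a) - phi y0 (v+a) \<le> X/2" using s1 by (simp only: half)
  have s3': "X \<le> A" using s3 unfolding X_def A_def .
  have od': "phi y0 (v+al^2) - phi r v - B/2 \<le> LK" using od unfolding B_def LK_def .
  have t1: "phi y1 (v+a) \<le> phi y0 (v+a) + X/2" using s1' by linarith
  have t2: "phi y0 (v+a) + X/2 \<le> phi y0 (v+al^2) + A/2" using s2 s3' by linarith
  have t3: "phi y0 (v+al^2) \<le> phi r v + B/2 + LK" using od' by linarith
  have t12: "phi y1 (v+a) \<le> phi y0 (v+al^2) + A/2" using t1 t2 by (rule order_trans)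
  have "phi y0 (v+al^2) + A/2 \<le> phi r v + LK + (A + B)/2" using t3 by (simp add: field_simps)
  with t12 have "phi y1 (v+a) \<le> phi r v + LK + (A + B)/2" by (rule order_trans)
  then have key: "phi y1 (v+a) \<le> phi r v + ln (1 + al * Kf r v) + ln ((v+a)/v)/2"
    unfolding LK_def A_def B_def lnsplit by simp
  have kb: "0 \<le> Kf r v" "Kf r v < 1/2" using Kf_bounds[OF r v] by auto
  have "- Kf r v \<le> al * Kf r v" using mult_right_mono[of "-1" al "Kf r v"] kb alb by simp
  then have pk: "0 < 1 + al * Kf r v" using kb by linarith
  have "exp (phi y1 (v+a)) \<le> exp (phi r v + ln (1 + al * Kf r v) + ln ((v+a)/v)/2)"
    using key by simp
  also have "\<dots> = exp (phi r v) * (1 + al * Kf r v) * sqrt ((v+a)/v)"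
    using pk w0 vpos by (simp add: exp_add exp_half_ln)
  finally have e1: "exp (phi y1 (v+a)) \<le> exp (phi r v) * (1 + al * Kf r v) * sqrt ((v+a)/v)" .
  have "exp (phi y1 (v+a)) / sqrt (v+a) \<le> exp (phi r v) * (1 + al * Kf r v) * sqrt ((v+a)/v) / sqrt (v+a)"
    using e1 w0 by (intro divide_right_mono) auto
  also have "\<dots> = (1 + al * Kf r v) * exp (phi r v) / sqrt v"
    using w0 vpos by (simp add: real_sqrt_divide field_simps)
  finally show ?thesis unfolding y1_def .
qed

lemma scal_aux: fixes G r W Z p :: real assumes "G \<noteq> 0" "r \<noteq> 0" "W \<noteq> 0"
  shows "(p/(r*G)) * ((r/G)*(Z/G^2)/(2*(W/G^2)^2)) = p*Z/(2*W^2)"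
  using assms by (simp add: field_simps power2_eq_square)

lemma scal_aux2: fixes G W Z p E sv :: real assumes "W \<noteq> 0" "sv \<noteq> 0"
  shows "G * (G * ((1 + p*Z/(2*W^2)) * E) / sv) = G^2*E/sv + p*(Z*G^2/(2*W^2*sv))*E"
  using assms by (simp add: field_simps power2_eq_square)

lemma step_G:
  fixes G r v a p :: real
  assumes G: "0 < G" and r: "0 \<le> r" and v: "G^2 \<le> v" and a0: "0 \<le> a" and a1: "a \<le> G^2"
    and pa: "p^2 \<le> r^2 * a"
  shows "G^2*exp((r^2+2*p+a)/(2*(v+a)+2*G*sqrt(r^2+2*p+a)))/sqrt(v+a)
     \<le> G^2*exp(r^2/(2*v+2*G*r))/sqrt v + p*((2*v+G*r)*G^2/(2*(v+G*r)^2*sqrt v))*exp(r^2/(2*v+2*G*r))"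
proof -
  define rr where "rr = r/G"
  define vv where "vv = v/G^2"
  define aa where "aa = a/G^2"
  define al where "al = (if r = 0 then 0 else p/(r*G))"
  have G2: "0 < G^2" using G by simp
  have vpos: "0 < v" using v G2 by linarith
  have rr0: "0 \<le> rr" unfolding rr_def using r G by simp
  have vv1: "1 \<le> vv" unfolding vv_def using v G2 by simp
  have aa0: "0 \<le> aa" unfolding aa_def using a0 G2 by simp
  have aa1: "aa \<le> 1" unfolding aa_def using a1 G2 by simp
  have p_r: "r * (G * al) = p"
  proof (cases "r = 0")
    case True
    then have "p^2 \<le> 0" using pa by simp
    then have "p = 0" by simp
    then show ?thesis using True by (simp add: al_def)
  next
    case False
    then show ?thesis using G by (simp add: al_def)
  qed
  have alaa: "al^2 \<le> aa"
  proof (cases "r = 0")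
    case True
    then show ?thesis using aa0 by (simp add: al_def)
  next
    case False
    have "al^2 = p^2/(r^2*G^2)" using False G by (simp add: al_def power_divide power_mult_distrib)
    also have "\<dots> \<le> (r^2*a)/(r^2*G^2)" using pa False G by (intro divide_right_mono) auto
    also have "\<dots> = aa" using False unfolding aa_def by simp
    finally show ?thesis .
  qed
  have sn: "exp (phi (sqrt (rr^2 + 2*rr*al + aa)) (vv+aa)) / sqrt (vv+aa)
          \<le> (1 + al * Kf rr vv) * exp (phi rr vv) / sqrt vv"
    by (rule step_norm[OF rr0 vv1 aa0 aa1 alaa])
  define Q where "Q = r^2+2*p+a"
  have Qe: "rr^2 + 2*rr*al + aa = Q/G^2"
    unfolding rr_def aa_def Q_def using G p_r[symmetric] by (simp add: field_simps power2_eq_square)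
  have Qnn: "0 \<le> Q"
  proof -
    have "0 \<le> rr^2 + 2*rr*al + aa"
    proof -
      have "(rr + al)^2 \<ge> 0" by simp
      then show ?thesis using alaa by (simp add: power2_eq_square algebra_simps)
    qed
    then show ?thesis using Qe G2 by (simp add: zero_le_divide_iff)
  qed
  have sq1: "sqrt (rr^2 + 2*rr*al + aa) = sqrt Q / G"
    unfolding Qe using G by (simp add: real_sqrt_divide)
  have e1: "phi (sqrt Q / G) (vv+aa) = Q/(2*(v+a)+2*G*sqrt Q)"
  proof -
    have "phi (sqrt Q / G) (vv+aa) = (sqrt Q/G)^2/(2*((v+a)/G^2 + sqrt Q/G))"
      unfolding phi_def vv_def aa_def by (simp add: add_divide_distrib)
    also have "\<dots> = Q/(2*(v+a)+2*G*sqrt Q)"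
      using G Qnn by (simp add: power_divide field_simps power2_eq_square)
    finally show ?thesis .
  qed
  have e2: "sqrt (vv+aa) = sqrt (v+a) / G"
    unfolding vv_def aa_def using G by (simp add: add_divide_distrib[symmetric] real_sqrt_divide)
  have e3: "phi rr vv = r^2/(2*v+2*G*r)"
    unfolding phi_def rr_def vv_def using G by (simp add: field_simps power2_eq_square)
  have e4: "sqrt vv = sqrt v / G" unfolding vv_def using G by (simp add: real_sqrt_divide)
  have e5: "al * Kf rr vv = p*(2*v+G*r)/(2*(v+G*r)^2)"
  proof (cases "r = 0")
    case True
    then show ?thesis using p_r by (simp add: al_def Kf_def rr_def)
  next
    case False
    have "al * Kf rr vv = (p/(r*G)) * ((r/G)*(2*(v/G^2)+r/G)/(2*(v/G^2+r/G)^2))"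
      using False by (simp add: al_def Kf_def rr_def vv_def)
    also have "\<dots> = p*(2*v+G*r)/(2*(v+G*r)^2)"
    proof -
      have vg: "0 < v + G*r" using vpos G r by (simp add: add_pos_nonneg)
      have f1: "2*(v/G^2)+r/G = (2*v+G*r)/G^2" using G by (simp add: field_simps power2_eq_square)
      have f2: "v/G^2+r/G = (v+G*r)/G^2" using G by (simp add: field_simps power2_eq_square)
      have "(p/(r*G)) * ((r/G)*(2*(v/G^2)+r/G)/(2*(v/G^2+r/G)^2))
          = (p/(r*G)) * ((r/G)*((2*v+G*r)/G^2)/(2*((v+G*r)/G^2)^2))"
        by (simp only: f1 f2)
      also have "\<dots> = p*(2*v+G*r)/(2*(v+G*r)^2)"
        by (rule scal_aux) (use G False vg in auto)
      finally show ?thesis .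
    qed
    finally show ?thesis .
  qed
  have va: "0 < v + a" using vpos a0 by linarith
  from sn have "exp (Q/(2*(v+a)+2*G*sqrt Q)) / (sqrt (v+a) / G)
      \<le> (1 + p*(2*v+G*r)/(2*(v+G*r)^2)) * exp (r^2/(2*v+2*G*r)) / (sqrt v / G)"
    unfolding sq1 e1 e2 e3 e4 e5 .
  then have "G * exp (Q/(2*(v+a)+2*G*sqrt Q)) / sqrt (v+a)
      \<le> G * ((1 + p*(2*v+G*r)/(2*(v+G*r)^2)) * exp (r^2/(2*v+2*G*r))) / sqrt v"
    using G by (simp add: field_simps)
  then have mono: "G * (G * exp (Q/(2*(v+a)+2*G*sqrt Q)) / sqrt (v+a))
      \<le> G * (G * ((1 + p*(2*v+G*r)/(2*(v+G*r)^2)) * exp (r^2/(2*v+2*G*r))) / sqrt v)"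
    using G by (intro mult_left_mono) auto
  have eq2: "G * (G * ((1 + p*(2*v+G*r)/(2*(v+G*r)^2)) * exp (r^2/(2*v+2*G*r))) / sqrt v)
     = G^2*exp(r^2/(2*v+2*G*r))/sqrt v + p*((2*v+G*r)*G^2/(2*(v+G*r)^2*sqrt v))*exp(r^2/(2*v+2*G*r))"
  proof (rule scal_aux2)
    have "0 \<le> G*r" using G r by simp
    then show "v + G*r \<noteq> 0" using vpos by linarith
    show "sqrt v \<noteq> 0" using vpos by simp
  qed
  have eq1: "G^2*exp(Q/(2*(v+a)+2*G*sqrt Q))/sqrt(v+a) = G * (G * exp (Q/(2*(v+a)+2*G*sqrt Q)) / sqrt (v+a))"
    by (simp add: power2_eq_square)
  have "G^2*exp(Q/(2*(v+a)+2*G*sqrt Q))/sqrt(v+a) \<le> G^2*exp(r^2/(2*v+2*G*r))/sqrt v + p*((2*v+G*r)*G^2/(2*(v+G*r)^2*sqrt v))*exp(r^2/(2*v+2*G*r))"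
    unfolding eq1 eq2[symmetric] by (rule mono)
  then show ?thesis unfolding Q_def .
qed

lemma norm_d_L2: "norm_d d x = L2_set x {..<d}"
  unfolding norm_d_def inner_d_def L2_set_def by (simp add: power2_eq_square)

lemma norm_d_nonneg[simp]: "0 \<le> norm_d d x"
  by (simp add: norm_d_L2)

lemma inner_d_self: "inner_d d x x = (\<Sum>i<d. (x i)^2)"
  unfolding inner_d_def by (simp add: power2_eq_square)

lemma norm_d_sq: "(norm_d d x)^2 = inner_d d x x"
  unfolding norm_d_def using inner_d_self[of d x] by (simp add: sum_nonneg)

lemma inner_d_commute: "inner_d d x y = inner_d d y x"
  unfolding inner_d_def by (simp add: mult.commute)

lemma inner_d_add_right: "inner_d d x (\<lambda>i. y i + z i) = inner_d d x y + inner_d d x z"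
  unfolding inner_d_def by (simp add: distrib_left sum.distrib)

lemma inner_d_diff_right: "inner_d d x (\<lambda>i. y i - z i) = inner_d d x y - inner_d d x z"
  unfolding inner_d_def by (simp add: right_diff_distrib sum_subtractf)

lemma inner_d_add_left: "inner_d d (\<lambda>i. y i + z i) x = inner_d d y x + inner_d d z x"
  unfolding inner_d_def by (simp add: distrib_right sum.distrib)

lemma inner_d_scale_left: "inner_d d (\<lambda>i. c * y i) x = c * inner_d d y x"
  unfolding inner_d_def by (simp add: sum_distrib_left mult.assoc)

lemma inner_d_scale_right: "inner_d d x (\<lambda>i. c * y i) = c * inner_d d x y"
  unfolding inner_d_def by (simp add: sum_distrib_left mult.left_commute)

lemma inner_d_sum_right: "inner_d d x (\<lambda>i. \<Sum>k\<in>K. y k i) = (\<Sum>k\<in>K. inner_d d x (y k))"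
  unfolding inner_d_def by (simp add: sum_distrib_left sum.swap[of _ K])

lemma inner_d_sum_left: "inner_d d (\<lambda>i. \<Sum>k\<in>K. y k i) x = (\<Sum>k\<in>K. inner_d d (y k) x)"
  unfolding inner_d_def by (simp add: sum_distrib_right sum.swap[of _ K])

lemma inner_d_cs: "\<bar>inner_d d x y\<bar> \<le> norm_d d x * norm_d d y"
proof -
  have "\<bar>inner_d d x y\<bar> \<le> (\<Sum>i<d. \<bar>x i\<bar> * \<bar>y i\<bar>)"
    unfolding inner_d_def by (rule order_trans[OF sum_abs]) (simp add: abs_mult)
  also have "\<dots> \<le> L2_set x {..<d} * L2_set y {..<d}" by (rule L2_set_mult_ineq)
  finally show ?thesis by (simp add: norm_d_L2)
qed

lemma norm_d_add_sq: "(norm_d d (\<lambda>i. s i + g i))^2 = (norm_d d s)^2 + 2 * inner_d d g s + (norm_d d g)^2"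
  unfolding norm_d_sq inner_d_add_left inner_d_add_right inner_d_commute[of d s g] by simp

definition PhiF :: "nat \<Rightarrow> real \<Rightarrow> real \<Rightarrow> vec \<times> real \<Rightarrow> real" where
  "PhiF d eps G sv = (case sv of (s,v) \<Rightarrow> eps * (G^2 * exp ((norm_d d s)^2/(2*v+2*G*norm_d d s)) / sqrt v))"

lemma inner_fg_pred:
  "inner_d d g (fg_pred d eps G (s,v)) = (- eps * ((2*v + G * norm_d d s) * G^2 / (2 * (v + G * norm_d d s)^2 * sqrt v)) *
     exp ((norm_d d s)^2 / (2*v + 2*G * norm_d d s))) * inner_d d g s"
proof -
  have "fg_pred d eps G (s,v) = (\<lambda>i. (- eps * ((2*v + G * norm_d d s) * G^2 / (2 * (v + G * norm_d d s)^2 * sqrt v)) *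
     exp ((norm_d d s)^2 / (2*v + 2*G * norm_d d s))) * s i)"
    unfolding fg_pred_def by (simp add: fun_eq_iff mult_ac)
  then show ?thesis by (simp only: inner_d_scale_right)
qed

lemma ring_aux: fixes eps A p C E :: real shows "eps*(A + p*C*E) = eps*A - (-eps*C*E)*p"
  by algebra

lemma fg_step:
  fixes G eps v :: real and s g :: vec
  assumes G: "0 < G" and eps: "0 < eps" and v: "G^2 \<le> v" and g: "norm_d d g \<le> G"
  shows "PhiF d eps G ((\<lambda>i. s i + g i), v + (norm_d d g)^2)
         \<le> PhiF d eps G (s,v) - inner_d d g (fg_pred d eps G (s,v))"
proof -
  define r where "r = norm_d d s"
  define a where "a = (norm_d d g)^2"
  define p where "p = inner_d d g s"
  have r0: "0 \<le> r" unfolding r_def by simp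
  have a0: "0 \<le> a" unfolding a_def by simp
  have a1: "a \<le> G^2" unfolding a_def using g by (intro power_mono) auto
  have pa: "p^2 \<le> r^2 * a"
  proof -
    have "\<bar>p\<bar> \<le> norm_d d g * r" unfolding p_def r_def by (rule inner_d_cs)
    then have "\<bar>p\<bar>^2 \<le> (norm_d d g * r)^2" by (intro power_mono) auto
    then show ?thesis unfolding a_def by (simp add: power_mult_distrib mult.commute)
  qed
  have sg: "(norm_d d (\<lambda>i. s i + g i))^2 = r^2 + 2*p + a"
    unfolding r_def p_def a_def by (rule norm_d_add_sq)
  have sg2: "norm_d d (\<lambda>i. s i + g i) = sqrt (r^2 + 2*p + a)"
    unfolding sg[symmetric] by simp
  have st: "G^2*exp((r^2+2*p+a)/(2*(v+a)+2*G*sqrt(r^2+2*p+a)))/sqrt(v+a)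
     \<le> G^2*exp(r^2/(2*v+2*G*r))/sqrt v + p*((2*v+G*r)*G^2/(2*(v+G*r)^2*sqrt v))*exp(r^2/(2*v+2*G*r))"
    by (rule step_G[OF G r0 v a0 a1 pa])
  have sg3: "(sqrt (r^2 + 2*p + a))^2 = r^2 + 2*p + a" using sg sg2 by simp
  have "PhiF d eps G ((\<lambda>i. s i + g i), v + (norm_d d g)^2)
      = eps * (G^2*exp((norm_d d (\<lambda>i. s i + g i))^2/(2*(v+a)+2*G*norm_d d (\<lambda>i. s i + g i)))/sqrt(v+a))"
    unfolding PhiF_def a_def by simp
  also have "\<dots> = eps * (G^2*exp((r^2+2*p+a)/(2*(v+a)+2*G*sqrt(r^2+2*p+a)))/sqrt(v+a))"
    by (simp only: sg2 sg3)
  finally have "PhiF d eps G ((\<lambda>i. s i + g i), v + (norm_d d g)^2)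
      = eps * (G^2*exp((r^2+2*p+a)/(2*(v+a)+2*G*sqrt(r^2+2*p+a)))/sqrt(v+a))" .
  also have "\<dots> \<le> eps * (G^2*exp(r^2/(2*v+2*G*r))/sqrt v + p*((2*v+G*r)*G^2/(2*(v+G*r)^2*sqrt v))*exp(r^2/(2*v+2*G*r)))"
    using st eps by (intro mult_left_mono) auto
  also have "\<dots> = PhiF d eps G (s,v) - inner_d d g (fg_pred d eps G (s,v))"
    unfolding PhiF_def inner_fg_pred r_def p_def by (simp only: prod.case) (rule ring_aux)
  finally show ?thesis .
qed

lemma fg_state_Nil: "fg_state d G [] = ((\<lambda>i. 0), G^2)"
  unfolding fg_state_def by simp

lemma fg_state_snoc: "fg_state d G (L @ [x]) =
   ((\<lambda>i. fst (fg_state d G L) i + x i), snd (fg_state d G L) + (norm_d d x)^2)"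
  unfolding fg_state_def by (simp add: case_prod_beta)

lemma fg_state_fst: "fst (fg_state d G L) = (\<lambda>i. \<Sum>k<length L. (L!k) i)"
proof (induction L rule: rev_induct)
  case Nil
  then show ?case by (simp add: fg_state_Nil)
next
  case (snoc x L)
  then show ?case by (simp add: fg_state_snoc nth_append fun_eq_iff)
qed

lemma fg_state_snd: "snd (fg_state d G L) = G^2 + (\<Sum>k<length L. (norm_d d (L!k))^2)"
proof (induction L rule: rev_induct)
  case Nil
  then show ?case by (simp add: fg_state_Nil)
next
  case (snoc x L)
  then show ?case by (simp add: fg_state_snoc nth_append)
qed

lemma fg_state_snd_ge: "G^2 \<le> snd (fg_state d G L)"
  unfolding fg_state_snd by (simp add: sum_nonneg)

lemma fg_state_snd_le:
  assumes "\<forall>x\<in>set L. norm_d d x \<le> G"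
  shows "snd (fg_state d G L) \<le> G^2 * (1 + real (length L))"
proof -
  have "(\<Sum>k<length L. (norm_d d (L!k))^2) \<le> (\<Sum>k<length L. G^2)"
  proof (rule sum_mono)
    fix k assume "k \<in> {..<length L}"
    then have "norm_d d (L!k) \<le> G" using assms by auto
    then show "(norm_d d (L!k))^2 \<le> G^2" by (intro power_mono) auto
  qed
  then show ?thesis unfolding fg_state_snd by (simp add: algebra_simps)
qed

lemma norm_d_zero[simp]: "norm_d d (\<lambda>i. 0) = 0"
  unfolding norm_d_def inner_d_def by simp

lemma fg_list:
  fixes G eps :: real and L :: "vec list"
  assumes G: "0 < G" and eps: "0 < eps" and L: "\<forall>x\<in>set L. norm_d d x \<le> G"
  shows "(\<Sum>k<length L. inner_d d (L!k) (fg_pred d eps G (fg_state d G (take k L))))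
          \<le> eps*G - PhiF d eps G (fg_state d G L)"
  using L
proof (induction L rule: rev_induct)
  case Nil
  have "PhiF d eps G (fg_state d G []) = eps * G"
    using G by (simp add: fg_state_Nil PhiF_def power2_eq_square)
  then show ?case by simp
next
  case (snoc x L)
  have IH: "(\<Sum>k<length L. inner_d d (L!k) (fg_pred d eps G (fg_state d G (take k L))))
          \<le> eps*G - PhiF d eps G (fg_state d G L)" using snoc by auto
  have xG: "norm_d d x \<le> G" using snoc.prems by auto
  obtain s v where sv: "fg_state d G L = (s,v)" by (cases "fg_state d G L")
  have v: "G^2 \<le> v" using fg_state_snd_ge[of G d L] sv by simp
  have st: "PhiF d eps G ((\<lambda>i. s i + x i), v + (norm_d d x)^2)
         \<le> PhiF d eps G (s,v) - inner_d d x (fg_pred d eps G (s,v))"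
    by (rule fg_step[OF G eps v xG])
  have eqs: "(\<Sum>k<length (L@[x]). inner_d d ((L@[x])!k) (fg_pred d eps G (fg_state d G (take k (L@[x])))))
      = (\<Sum>k<length L. inner_d d (L!k) (fg_pred d eps G (fg_state d G (take k L))))
        + inner_d d x (fg_pred d eps G (fg_state d G L))"
    by (simp add: nth_append)
  have "fg_state d G (L@[x]) = ((\<lambda>i. s i + x i), v + (norm_d d x)^2)"
    using sv by (simp add: fg_state_snoc)
  then show ?case using eqs IH st sv by simp
qed

lemma conj_bound:
  fixes G eps V R C :: real
  assumes G: "0 < G" and eps: "0 < eps" and V: "G^2 \<le> V" and R: "0 \<le> R" and C: "0 \<le> C"
  shows "R*C - eps*(G^2*exp(R^2/(2*V+2*G*R))/sqrt V) \<le> C*sqrt V*16*(1 + ln (1 + C*V/(eps*G^2)))"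
proof -
  define A where "A = C*V/(eps*G^2)"
  define xi0 where "xi0 = 16*(1 + ln (1 + A))"
  have G2: "0 < G^2" using G by simp
  have Vp: "0 < V" using V G2 by linarith
  have sV: "0 < sqrt V" using Vp by simp
  have A0: "0 \<le> A" unfolding A_def using C Vp eps G2 by simp
  have lnA: "0 \<le> ln (1 + A)" using A0 by simp
  have phinn: "0 \<le> eps*(G^2*exp(R^2/(2*V+2*G*R))/sqrt V)" using eps sV by simp
  show ?thesis
  proof (cases "R \<le> sqrt V * xi0")
    case True
    have "R*C \<le> sqrt V * xi0 * C" using True C by (intro mult_right_mono) auto
    then show ?thesis using phinn unfolding xi0_def A_def by (simp add: algebra_simps)
  next
    case False
    then have Rbig: "sqrt V * xi0 < R" by simp
    define xi where "xi = R / sqrt V"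
    have xiR: "R = sqrt V * xi" unfolding xi_def using sV by simp
    have xi0: "xi0 < xi" unfolding xi_def using Rbig sV by (simp add: field_simps)
    have xi16: "16 \<le> xi0" unfolding xi0_def using lnA by simp
    have GsV: "G \<le> sqrt V" using V G by (metis less_imp_le real_le_rsqrt)
    have xipos: "1 \<le> xi" using xi0 xi16 by linarith
    have Rpos: "0 < R" unfolding xiR using xipos sV by simp
    have "sqrt V * 1 \<le> sqrt V * xi" using xipos sV by (intro mult_left_mono) auto
    then have sVR: "sqrt V \<le> R" unfolding xiR by simp
    have q: "xi/4 \<le> R^2/(2*V+2*G*R)"
    proof -
      have "2*V+2*G*R \<le> 2*V + 2*sqrt V*R" using GsV R by (simp add: mult_right_mono)
      also have "\<dots> = 2*sqrt V*(sqrt V + R)" using Vp by (simp add: algebra_simps)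
      also have "\<dots> \<le> 2*sqrt V*(2*R)" using sVR sV by (intro mult_left_mono) auto
      finally have den: "2*V+2*G*R \<le> 4*sqrt V*R" by simp
      have dpos: "0 < 2*V+2*G*R" using Vp G R by (simp add: add_pos_nonneg)
      have "R^2/(4*sqrt V*R) \<le> R^2/(2*V+2*G*R)" using den dpos Rpos sV by (intro divide_left_mono) (auto intro!: mult_pos_pos)
      moreover have "R^2/(4*sqrt V*R) = xi/4" unfolding xi_def using Rpos sV by (simp add: power2_eq_square)
      ultimately show ?thesis by simp
    qed
    have e1: "xi/8 \<le> exp (xi/8)" using exp_ge_add_one_self[of "xi/8"] by linarith
    have e2: "8*A \<le> exp (xi/8)"
    proof -
      have "xi0/8 < xi/8" using xi0 by simp
      moreover have "xi0/8 = 2 + 2*ln (1+A)" unfolding xi0_def by simp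
      ultimately have "2 + 2*ln (1+A) \<le> xi/8" by simp
      then have "exp (2 + 2*ln (1+A)) \<le> exp (xi/8)" by simp
      moreover have "exp (2 + 2*ln (1+A)) = exp 2 * (1+A)^2"
      proof -
        have "exp (2 + 2*ln (1+A)) = exp 2 * (exp (ln (1+A)) * exp (ln (1+A)))"
          by (simp add: exp_add[symmetric])
        also have "\<dots> = exp 2 * (1+A)^2" using A0 by (simp add: power2_eq_square)
        finally show ?thesis .
      qed
      moreover have e3: "3 \<le> exp (2::real)" using exp_ge_add_one_self[of 2] by simp
      moreover have h1: "4*A \<le> (1+A)^2"
      proof -
        have "(1+A)^2 - 4*A = (A - 1)^2" by algebra
        then show ?thesis by (smt (verit) zero_le_power2)
      qed
      moreover have "8*A \<le> exp 2 * (1+A)^2"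
      proof -
        have "8*A \<le> 3*(4*A)" using A0 by simp
        also have "\<dots> \<le> exp 2 * (1+A)^2" using e3 h1 A0 by (intro mult_mono) auto
        finally show ?thesis .
      qed
      ultimately show ?thesis by simp
    qed
    have "xi * A \<le> exp (xi/8) * exp (xi/8)"
    proof -
      have "xi/8 * (8*A) \<le> exp (xi/8) * exp (xi/8)" using e1 e2 A0 xi0 xi16
        by (intro mult_mono) auto
      then show ?thesis by simp
    qed
    also have "\<dots> = exp (xi/4)" by (simp add: exp_add[symmetric])
    also have "\<dots> \<le> exp (R^2/(2*V+2*G*R))" using q by simp
    finally have ex: "xi * A \<le> exp (R^2/(2*V+2*G*R))" .
    have "R*C = eps*G^2/sqrt V * (xi * A)"
      unfolding A_def xi_def using sV eps G2 Vp by (simp add: field_simps)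
    also have "\<dots> \<le> eps*G^2/sqrt V * exp (R^2/(2*V+2*G*R))"
      using ex eps G2 sV by (intro mult_left_mono) auto
    finally have "R*C \<le> eps*(G^2*exp(R^2/(2*V+2*G*R))/sqrt V)" by (simp add: field_simps)
    moreover have "0 \<le> C*sqrt V*16*(1 + ln (1 + C*V/(eps*G^2)))"
      using C sV lnA unfolding A_def by simp
    ultimately show ?thesis by linarith
  qed
qed

lemma fg_copy:
  fixes G eps :: real and L :: "vec list" and c :: vec and N :: nat
  assumes G: "0 < G" and eps: "0 < eps" and L: "\<forall>x\<in>set L. norm_d d x \<le> G" and N: "length L \<le> N"
  shows "(\<Sum>k<length L. inner_d d (L!k) (\<lambda>i. fg_pred d eps G (fg_state d G (take k L)) i - c i))
     \<le> eps*G + norm_d d c * (G*sqrt(1+real N)) * 16 * (1 + ln(1 + norm_d d c*(1+real N)/eps))"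
proof -
  obtain s v where sv: "fg_state d G L = (s,v)" by (cases "fg_state d G L")
  have s: "s = (\<lambda>i. \<Sum>k<length L. (L!k) i)" using fg_state_fst[of d G L] sv by simp
  have v1: "G^2 \<le> v" using fg_state_snd_ge[of G d L] sv by simp
  have v2: "v \<le> G^2 * (1 + real (length L))" using fg_state_snd_le[OF L] sv by simp
  have v3: "v \<le> G^2 * (1 + real N)"
    using v2 N by (smt (verit) G of_nat_mono mult_left_mono zero_le_power2)
  have split: "(\<Sum>k<length L. inner_d d (L!k) (\<lambda>i. fg_pred d eps G (fg_state d G (take k L)) i - c i))
     = (\<Sum>k<length L. inner_d d (L!k) (fg_pred d eps G (fg_state d G (take k L))))
       - (\<Sum>k<length L. inner_d d (L!k) c)"
    by (simp add: inner_d_diff_right sum_subtractf)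
  have sc: "(\<Sum>k<length L. inner_d d (L!k) c) = inner_d d s c"
    unfolding s by (rule inner_d_sum_left[symmetric])
  have cs: "- inner_d d s c \<le> norm_d d s * norm_d d c"
    using inner_d_cs[of d s c] by linarith
  have fl: "(\<Sum>k<length L. inner_d d (L!k) (fg_pred d eps G (fg_state d G (take k L))))
          \<le> eps*G - PhiF d eps G (s,v)" using fg_list[OF G eps L] sv by simp
  have cb: "norm_d d s * norm_d d c - eps*(G^2*exp((norm_d d s)^2/(2*v+2*G*norm_d d s))/sqrt v)
      \<le> norm_d d c*sqrt v*16*(1 + ln (1 + norm_d d c*v/(eps*G^2)))"
    by (rule conj_bound[OF G eps v1]) auto
  have G2: "0 < G^2" using G by simp
  have m1: "sqrt v \<le> G*sqrt(1+real N)"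
  proof -
    have "sqrt v \<le> sqrt (G^2 * (1 + real N))" using v3 by simp
    also have "\<dots> = G*sqrt(1+real N)" using G by (simp add: real_sqrt_mult)
    finally show ?thesis .
  qed
  have m2: "norm_d d c*v/(eps*G^2) \<le> norm_d d c*(1+real N)/eps"
  proof -
    have "norm_d d c*v/(eps*G^2) \<le> norm_d d c*(G^2*(1+real N))/(eps*G^2)"
      using v3 eps G2 by (intro divide_right_mono mult_left_mono) auto
    also have "\<dots> = norm_d d c*(1+real N)/eps" using G2 by simp
    finally show ?thesis .
  qed
  have vpos: "0 < v" using v1 G2 by linarith
  have m3: "ln (1 + norm_d d c*v/(eps*G^2)) \<le> ln(1 + norm_d d c*(1+real N)/eps)"
    using m2 vpos eps G2 by (subst ln_le_cancel_iff) (auto intro!: add_pos_nonneg)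
  have m4: "norm_d d c*sqrt v*16*(1 + ln (1 + norm_d d c*v/(eps*G^2)))
      \<le> norm_d d c * (G*sqrt(1+real N)) * 16 * (1 + ln(1 + norm_d d c*(1+real N)/eps))"
  proof -
    have l0: "0 \<le> ln (1 + norm_d d c*v/(eps*G^2))" using vpos eps G2 by simp
    have "norm_d d c*sqrt v \<le> norm_d d c * (G*sqrt(1+real N))" using m1 by (simp add: mult_left_mono)
    then have A: "norm_d d c*sqrt v*16 \<le> norm_d d c * (G*sqrt(1+real N))*16" by simp
    have C: "0 \<le> norm_d d c * (G*sqrt(1+real N))*16" using G by simp
    have B: "1 + ln (1 + norm_d d c*v/(eps*G^2)) \<le> 1 + ln(1 + norm_d d c*(1+real N)/eps)" using m3 by simp
    have D: "0 \<le> 1 + ln (1 + norm_d d c*v/(eps*G^2))" using l0 by simp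
    show ?thesis by (rule mult_mono[OF A B C D])
  qed
  have "PhiF d eps G (s,v) = eps*(G^2*exp((norm_d d s)^2/(2*v+2*G*norm_d d s))/sqrt v)"
    by (simp add: PhiF_def)
  then show ?thesis using split sc cs fl cb m4 by linarith
qed


lemma run_len[simp]: "length (haar_run m d G eps S t) = t"
  by (induction t) (simp_all add: Let_def)

lemma run_Suc: "haar_run m d G eps S (Suc t) = haar_run m d G eps S t @
   [(haar_pred m d G eps (map snd (haar_run m d G eps S t)),
     S (map fst (haar_run m d G eps S t) @ [haar_pred m d G eps (map snd (haar_run m d G eps S t))]))]"
  by (simp add: Let_def)

lemma run_take: "t \<le> T \<Longrightarrow> take t (haar_run m d G eps S T) = haar_run m d G eps S t"
proof (induction T)
  case 0
  then show ?case by simp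
next
  case (Suc T)
  show ?case
  proof (cases "t \<le> T")
    case True
    then have "take t (haar_run m d G eps S (Suc T)) = take t (haar_run m d G eps S T)"
      by (simp add: Let_def)
    then show ?thesis using Suc True by simp
  next
    case False
    then have "t = Suc T" using Suc by simp
    then show ?thesis by (simp add: Let_def)
  qed
qed

lemma run_nth: assumes "t < T"
  shows "haar_run m d G eps S T ! t =
    (haar_pred m d G eps (map snd (haar_run m d G eps S t)),
     S (map fst (haar_run m d G eps S t) @ [haar_pred m d G eps (map snd (haar_run m d G eps S t))]))"
proof -
  have "haar_run m d G eps S T ! t = take (Suc t) (haar_run m d G eps S T) ! t" using assms by simp
  also have "\<dots> = haar_run m d G eps S (Suc t) ! t" using assms by (simp add: run_take)
  also have "\<dots> = (haar_pred m d G eps (map snd (haar_run m d G eps S t)),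
     S (map fst (haar_run m d G eps S t) @ [haar_pred m d G eps (map snd (haar_run m d G eps S t))]))"
    by (simp add: Let_def nth_append)
  finally show ?thesis .
qed

lemma fg_pred_zero: "fst sv i = 0 \<Longrightarrow> fg_pred d eps G sv i = 0"
  by (cases sv) (simp add: fg_pred_def)

lemma received_Vd: "set gs \<subseteq> Vd d \<Longrightarrow> set (received n gs) \<subseteq> Vd d"
  unfolding received_def Vd_def by (auto dest: set_zip_rightD)

lemma fg_state_fst_Vd: "set L \<subseteq> Vd d \<Longrightarrow> i \<ge> d \<Longrightarrow> fst (fg_state d G L) i = 0"
proof (induction L rule: rev_induct)
  case Nil
  then show ?case by (simp add: fg_state_def)
next
  case (snoc x L)
  then have "x i = 0" by (auto simp: Vd_def)
  then show ?case using snoc unfolding fg_state_def by (simp add: case_prod_beta)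
qed

lemma pred_Vd: "set gs \<subseteq> Vd d \<Longrightarrow> haar_pred m d G eps gs \<in> Vd d"
proof -
  assume gs: "set gs \<subseteq> Vd d"
  have "\<forall>i\<ge>d. haar_pred m d G eps gs i = 0"
  proof (intro allI impI)
    fix i assume i: "d \<le> i"
    have "\<And>n. fg_pred d (eps / 2^m) G (fg_state d G (received n gs)) i = 0"
      by (rule fg_pred_zero, rule fg_state_fst_Vd[OF received_Vd[OF gs] i])
    then show "haar_pred m d G eps gs i = 0" unfolding haar_pred_def by (simp add: Let_def)
  qed
  then show ?thesis unfolding Vd_def by simp
qed

lemma norm_d_nonneg': "0 \<le> norm_d d x"
  by (simp add: norm_d_def inner_d_def sum_nonneg)

lemma subgrad_norm:
  assumes G: "0 < G" and L: "lipschitz_d d G f" and sg: "subgrad_d d f x g" and x: "x \<in> Vd d"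
  shows "norm_d d g \<le> G"
proof -
  have g: "g \<in> Vd d" using sg by (simp add: subgrad_d_def)
  define y where "y = (\<lambda>i. x i + g i)"
  have y: "y \<in> Vd d" using x g by (simp add: y_def Vd_def)
  have yx: "(\<lambda>i. y i - x i) = g" by (simp add: y_def)
  have "f y \<ge> f x + inner_d d g g" using sg y unfolding subgrad_d_def yx[symmetric] by auto
  moreover have "\<bar>f y - f x\<bar> \<le> G * norm_d d g" using L x y unfolding lipschitz_d_def yx[symmetric] by auto
  moreover have "inner_d d g g = (norm_d d g)^2"
    by (simp add: norm_d_def inner_d_def sum_nonneg power2_eq_square[symmetric])
  ultimately have h: "norm_d d g * norm_d d g \<le> G * norm_d d g" by (simp add: power2_eq_square)
  show ?thesis
  proof (cases "norm_d d g = 0")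
    case True
    then show ?thesis using G by simp
  next
    case False
    then have "0 < norm_d d g" using norm_d_nonneg'[of d g] by linarith
    then show ?thesis using h by (simp add: mult_right_le_imp_le)
  qed
qed

lemma run_Vd:
  assumes G: "0 < G" and env: "valid_env d G A S"
  shows "\<forall>p\<in>set (haar_run m d G eps S t). fst p \<in> Vd d \<and> snd p \<in> Vd d \<and> norm_d d (snd p) \<le> G"
proof (induction t)
  case 0
  then show ?case by simp
next
  case (Suc t)
  let ?h = "haar_run m d G eps S t"
  let ?x = "haar_pred m d G eps (map snd ?h)"
  let ?xs = "map fst ?h @ [?x]"
  have x: "?x \<in> Vd d" by (rule pred_Vd) (use Suc in auto)
  have xs: "?xs \<noteq> [] \<and> set ?xs \<subseteq> Vd d" using Suc x by auto
  then have e: "convex_d d (A ?xs) \<and> lipschitz_d d G (A ?xs) \<and> subgrad_d d (A ?xs) (last ?xs) (S ?xs)"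
    using env unfolding valid_env_def by blast
  have g: "S ?xs \<in> Vd d" using e by (simp add: subgrad_d_def)
  have lx: "last ?xs = ?x" by simp
  have gn: "norm_d d (S ?xs) \<le> G" using subgrad_norm[OF G _ _ x, of "A ?xs" "S ?xs"] e unfolding lx by blast
  show ?case using Suc x g gn by (simp add: Let_def)
qed


lemma received_snoc: "received n (gs @ [g]) = received n gs @
   (if haar n (Suc (length gs)) \<noteq> 0 then [(\<lambda>i. haar n (Suc (length gs)) * g i)] else [])"
proof -
  have u: "[1..<length (gs @ [g]) + 1] = [1..<length gs + 1] @ [Suc (length gs)]" by simp
  have z: "zip ([1..<length gs + 1] @ [Suc (length gs)]) (gs @ [g]) = zip [1..<length gs + 1] gs @ [(Suc (length gs), g)]"
    by (subst zip_append) (auto simp: not_less_eq_eq)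
  show ?thesis unfolding received_def u z by simp
qed

lemma recv_reindex:
  fixes F :: "vec list \<Rightarrow> vec \<Rightarrow> real"
  shows "(\<Sum>t\<in>{t\<in>{1..length gs}. haar n t \<noteq> 0}. F (received n (take (t-1) gs)) (\<lambda>i. haar n t * (gs!(t-1)) i))
       = (\<Sum>k<length (received n gs). F (take k (received n gs)) (received n gs ! k))"
proof (induction gs rule: rev_induct)
  case Nil
  then show ?case by (simp add: received_def)
next
  case (snoc g gs)
  define t0 where "t0 = Suc (length gs)"
  define L where "L = received n gs"
  define old where "old = {t\<in>{1..length gs}. haar n t \<noteq> 0}"
  have fin: "finite old" unfolding old_def by simp
  have t0old: "t0 \<notin> old" unfolding old_def t0_def by simp
  have A: "(\<Sum>t\<in>old. F (received n (take (t-1) (gs@[g]))) (\<lambda>i. haar n t * ((gs@[g])!(t-1)) i))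
        = (\<Sum>t\<in>old. F (received n (take (t-1) gs)) (\<lambda>i. haar n t * (gs!(t-1)) i))"
    by (rule sum.cong) (auto simp: old_def nth_append)
  have B: "(\<Sum>k<length L. F (take k (L @ [y])) ((L @ [y]) ! k)) = (\<Sum>k<length L. F (take k L) (L ! k))" for y
    by (rule sum.cong) (auto simp: nth_append)
  show ?case
  proof (cases "haar n t0 \<noteq> 0")
    case True
    have S: "{t\<in>{1..length (gs@[g])}. haar n t \<noteq> 0} = insert t0 old"
      using True unfolding old_def t0_def by auto
    have R: "received n (gs@[g]) = L @ [(\<lambda>i. haar n t0 * g i)]"
      using True unfolding L_def t0_def by (simp add: received_snoc)
    have "(\<Sum>t\<in>{t\<in>{1..length (gs@[g])}. haar n t \<noteq> 0}. F (received n (take (t-1) (gs@[g]))) (\<lambda>i. haar n t * ((gs@[g])!(t-1)) i))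
        = F (received n (take (t0-1) (gs@[g]))) (\<lambda>i. haar n t0 * ((gs@[g])!(t0-1)) i)
          + (\<Sum>t\<in>old. F (received n (take (t-1) (gs@[g]))) (\<lambda>i. haar n t * ((gs@[g])!(t-1)) i))"
      unfolding S using fin t0old by simp
    also have "\<dots> = F L (\<lambda>i. haar n t0 * g i) + (\<Sum>k<length L. F (take k L) (L ! k))"
      unfolding A using snoc.IH unfolding old_def L_def t0_def by simp
    also have "\<dots> = (\<Sum>k<length (received n (gs@[g])). F (take k (received n (gs@[g]))) (received n (gs@[g]) ! k))"
      unfolding R using B by simp
    finally show ?thesis .
  next
    case False
    have S: "{t\<in>{1..length (gs@[g])}. haar n t \<noteq> 0} = old"
      using False unfolding old_def t0_def by (auto simp: le_Suc_eq)
    have R: "received n (gs@[g]) = L"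
      using False unfolding L_def t0_def by (simp add: received_snoc)
    show ?thesis unfolding S A R using snoc.IH unfolding old_def L_def by simp
  qed
qed

lemma received_length: "length (received n gs) = card {t\<in>{1..length gs}. haar n t \<noteq> 0}"
  using recv_reindex[where F="\<lambda>_ _. 1" and gs=gs and n=n] by simp

lemma norm_d_scale: "norm_d d (\<lambda>i. c * x i) = \<bar>c\<bar> * norm_d d x"
proof -
  have "inner_d d (\<lambda>i. c * x i) (\<lambda>i. c * x i) = c^2 * inner_d d x x"
    unfolding inner_d_def by (simp add: sum_distrib_left power2_eq_square mult_ac)
  then show ?thesis unfolding norm_d_def by (simp add: real_sqrt_mult)
qed

lemma haar_abs_le: "\<bar>haar n t\<bar> \<le> 1"
  by (cases n) auto

lemma received_norm:
  assumes "\<forall>g\<in>set gs. norm_d d g \<le> G"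
  shows "\<forall>x\<in>set (received n gs). norm_d d x \<le> G"
proof
  fix x assume "x \<in> set (received n gs)"
  then obtain t g where x: "x = (\<lambda>i. haar n t * g i)" and g: "g \<in> set gs"
    unfolding received_def by (auto dest: set_zip_rightD)
  have "norm_d d x = \<bar>haar n t\<bar> * norm_d d g" unfolding x by (rule norm_d_scale)
  also have "\<dots> \<le> 1 * norm_d d g" by (intro mult_right_mono haar_abs_le) (simp add: norm_d_nonneg')
  also have "\<dots> \<le> G" using assms g by simp
  finally show "norm_d d x \<le> G" .
qed

lemma haar_support:
  assumes "1 \<le> j"
  shows "{t\<in>{1..T}. haar (j,l) t \<noteq> 0} \<subseteq> {2^j*(l-1)+1 .. 2^j*(l-1)+2^j}"
proof
  fix t assume "t \<in> {t\<in>{1..T}. haar (j,l) t \<noteq> 0}"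
  then have h: "haar (j,l) t \<noteq> 0" by simp
  have e: "2^j*l = 2^j*(l-1)+2^j" if "1 \<le> l" using that by (cases l) auto
  obtain j' where j': "j = Suc j'" using assms by (cases j) auto
  show "t \<in> {2^j*(l-1)+1 .. 2^j*(l-1)+2^j}"
    using h unfolding j' by (cases l) (auto split: if_splits simp: algebra_simps)
qed

lemma haar_support_card:
  assumes "1 \<le> j"
  shows "card {t\<in>{1..T}. haar (j,l) t \<noteq> 0} \<le> 2^j"
proof -
  have "card {t\<in>{1..T}. haar (j,l) t \<noteq> 0} \<le> card {2^j*(l-1)+1 .. 2^j*(l-1)+2^j}"
    by (rule card_mono[OF _ haar_support[OF assms]]) simp
  then show ?thesis by simp
qed


lemma haar_idx_sub: "haar_idx m \<subseteq> {0..m} \<times> {0..2^m}"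
proof
  fix n assume "n \<in> haar_idx m"
  then show "n \<in> {0..m} \<times> {0..2^m}" unfolding haar_idx_def
  proof (auto)
    fix j l :: nat assume "l \<le> 2^(m-j)"
    moreover have "(2::nat)^(m-j) \<le> 2^m" by (rule power_increasing) auto
    ultimately show "l \<le> 2^m" by linarith
  qed
qed

lemma finite_haar_idx[simp]: "finite (haar_idx m)"
  using haar_idx_sub by (rule finite_subset) simp

lemma last_take_nth: "0 < t \<Longrightarrow> t \<le> length xs \<Longrightarrow> last (take t xs) = xs ! (t-1)"
  by (subst last_conv_nth) (auto simp: min_def)

lemma regret_decomp:
  fixes G :: real and c :: "nat \<times> nat \<Rightarrow> vec" and u :: "nat \<Rightarrow> vec"
  assumes G: "0 < G" and env: "valid_env d G A S" and uV: "\<forall>t\<in>{1..2^m}. u t \<in> Vd d"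
    and ex: "\<forall>t\<in>{1..2^m}. \<forall>i. u t i = (\<Sum>n\<in>haar_idx m. haar n t * c n i)"
  shows "haar_regret m d G 1 A S u \<le> (\<Sum>n\<in>haar_idx m.
     \<Sum>k<length (received n (map snd (haar_run m d G 1 S (2^m)))).
       inner_d d (received n (map snd (haar_run m d G 1 S (2^m))) ! k)
        (\<lambda>i. fg_pred d (1/2^m) G (fg_state d G (take k (received n (map snd (haar_run m d G 1 S (2^m)))))) i - c n i))"
proof -
  define T where "T = (2::nat)^m"
  define R where "R = haar_run m d G 1 S T"
  define xs where "xs = map fst R"
  define gs where "gs = map snd R"
  define I where "I = haar_idx m"
  have lenR: "length R = T" unfolding R_def by simp
  have lxs: "length xs = T" and lgs: "length gs = T" unfolding xs_def gs_def using lenR by auto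
  have RV: "\<forall>p\<in>set R. fst p \<in> Vd d \<and> snd p \<in> Vd d \<and> norm_d d (snd p) \<le> G"
    unfolding R_def by (rule run_Vd[OF G env])
  have xsV: "set xs \<subseteq> Vd d" unfolding xs_def using RV by auto
  have xg: "xs!(t-1) = haar_pred m d G 1 (take (t-1) gs) \<and> gs!(t-1) = S (take t xs)"
    if t: "1 \<le> t" "t \<le> T" for t
  proof -
    have tl: "t - 1 < T" using t by simp
    have n: "R!(t-1) = (haar_pred m d G 1 (map snd (haar_run m d G 1 S (t-1))),
       S (map fst (haar_run m d G 1 S (t-1)) @ [haar_pred m d G 1 (map snd (haar_run m d G 1 S (t-1)))]))"
      unfolding R_def by (rule run_nth[OF tl])
    have tg: "take (t-1) gs = map snd (haar_run m d G 1 S (t-1))"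
      unfolding gs_def R_def using t by (simp add: take_map run_take)
    have tx: "take t xs = map fst (haar_run m d G 1 S (t-1)) @ [haar_pred m d G 1 (map snd (haar_run m d G 1 S (t-1)))]"
    proof -
      have "take t xs = map fst (haar_run m d G 1 S t)"
        unfolding xs_def R_def using t by (simp add: take_map run_take)
      also have "haar_run m d G 1 S t = haar_run m d G 1 S (Suc (t-1))" using t by simp
      finally show ?thesis by (simp only: run_Suc) simp
    qed
    have a: "xs!(t-1) = fst (R!(t-1))" "gs!(t-1) = snd (R!(t-1))"
      unfolding xs_def gs_def using tl lenR by auto
    show ?thesis unfolding tg tx a n by simp
  qed
  have step1: "haar_regret m d G 1 A S u \<le> (\<Sum>t=1..T. inner_d d (gs!(t-1)) (\<lambda>i. (xs!(t-1)) i - u t i))"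
  proof -
    have "haar_regret m d G 1 A S u = (\<Sum>t=1..T. A (take t xs) (xs ! (t-1)) - A (take t xs) (u t))"
      unfolding haar_regret_def xs_def R_def T_def by (simp add: Let_def)
    also have "\<dots> \<le> (\<Sum>t=1..T. inner_d d (gs!(t-1)) (\<lambda>i. (xs!(t-1)) i - u t i))"
    proof (rule sum_mono)
      fix t assume "t \<in> {1..T}"
      then have t: "1 \<le> t" "t \<le> T" by auto
      let ?xt = "take t xs"
      have ne: "?xt \<noteq> [] \<and> set ?xt \<subseteq> Vd d" using t xsV lxs
        by (auto dest: in_set_takeD)
      then have sg: "subgrad_d d (A ?xt) (last ?xt) (S ?xt)" using env unfolding valid_env_def by blast
      have lt: "last ?xt = xs!(t-1)" using t lxs by (simp add: last_take_nth)
      have gt: "S ?xt = gs!(t-1)" using xg[OF t] by simp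
      have ut: "u t \<in> Vd d" using uV t unfolding T_def by auto
      have "A ?xt (u t) \<ge> A ?xt (xs!(t-1)) + inner_d d (gs!(t-1)) (\<lambda>i. u t i - (xs!(t-1)) i)"
        using sg ut unfolding subgrad_d_def lt gt by blast
      moreover have "inner_d d (gs!(t-1)) (\<lambda>i. u t i - (xs!(t-1)) i) = - inner_d d (gs!(t-1)) (\<lambda>i. (xs!(t-1)) i - u t i)"
        by (simp add: inner_d_diff_right)
      ultimately show "A ?xt (xs!(t-1)) - A ?xt (u t) \<le> inner_d d (gs!(t-1)) (\<lambda>i. (xs!(t-1)) i - u t i)"
        by linarith
    qed
    finally show ?thesis .
  qed
  define F where "F n t = inner_d d (\<lambda>i. haar n t * (gs!(t-1)) i)
        (\<lambda>i. fg_pred d (1/2^m) G (fg_state d G (received n (take (t-1) gs))) i - c n i)" for n t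
  have step2: "inner_d d (gs!(t-1)) (\<lambda>i. (xs!(t-1)) i - u t i) = (\<Sum>n\<in>I. if haar n t \<noteq> 0 then F n t else 0)"
    if t: "t \<in> {1..T}" for t
  proof -
    have t1: "1 \<le> t" "t \<le> T" using t by auto
    define g where "g = gs!(t-1)"
    define P where "P n = fg_pred d (1/2^m) G (fg_state d G (received n (take (t-1) gs)))" for n
    have lt: "length (take (t-1) gs) + 1 = t" using t1 lgs by simp
    have xt: "xs!(t-1) = (\<lambda>i. \<Sum>n\<in>{n\<in>I. haar n t \<noteq> 0}. haar n t * P n i)"
      using xg[OF t1] unfolding haar_pred_def P_def I_def Let_def lt by simp
    have uf: "u t = (\<lambda>i. \<Sum>n\<in>I. haar n t * c n i)" using ex t unfolding T_def I_def by auto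
    have "inner_d d g (\<lambda>i. (xs!(t-1)) i - u t i) = inner_d d g (xs!(t-1)) - inner_d d g (u t)"
      by (simp add: inner_d_diff_right)
    also have "inner_d d g (xs!(t-1)) = (\<Sum>n\<in>{n\<in>I. haar n t \<noteq> 0}. haar n t * inner_d d g (P n))"
      unfolding xt inner_d_sum_right inner_d_scale_right by simp
    also have "inner_d d g (u t) = (\<Sum>n\<in>I. haar n t * inner_d d g (c n))"
      unfolding uf inner_d_sum_right inner_d_scale_right by simp
    also have "\<dots> = (\<Sum>n\<in>{n\<in>I. haar n t \<noteq> 0}. haar n t * inner_d d g (c n))"
      by (rule sum.mono_neutral_right) (auto simp: I_def)
    finally have "inner_d d g (\<lambda>i. (xs!(t-1)) i - u t i)
        = (\<Sum>n\<in>{n\<in>I. haar n t \<noteq> 0}. haar n t * inner_d d g (P n) - haar n t * inner_d d g (c n))"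
      by (simp add: sum_subtractf)
    also have "\<dots> = (\<Sum>n\<in>{n\<in>I. haar n t \<noteq> 0}. F n t)"
      unfolding F_def P_def g_def by (rule sum.cong) (simp_all add: inner_d_scale_left inner_d_diff_right right_diff_distrib)
    also have "\<dots> = (\<Sum>n\<in>I. if haar n t \<noteq> 0 then F n t else 0)"
      by (simp add: sum.inter_filter I_def)
    finally show ?thesis unfolding g_def .
  qed
  have "(\<Sum>t=1..T. inner_d d (gs!(t-1)) (\<lambda>i. (xs!(t-1)) i - u t i))
      = (\<Sum>t=1..T. \<Sum>n\<in>I. if haar n t \<noteq> 0 then F n t else 0)"
    by (rule sum.cong[OF refl], rule step2)
  also have "\<dots> = (\<Sum>n\<in>I. \<Sum>t=1..T. if haar n t \<noteq> 0 then F n t else 0)"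
    by (rule sum.swap)
  also have "\<dots> = (\<Sum>n\<in>I. \<Sum>t\<in>{t\<in>{1..T}. haar n t \<noteq> 0}. F n t)"
    by (rule sum.cong[OF refl], rule sum.inter_filter[symmetric], simp)
  also have "\<dots> = (\<Sum>n\<in>I. \<Sum>k<length (received n gs). inner_d d (received n gs ! k)
        (\<lambda>i. fg_pred d (1/2^m) G (fg_state d G (take k (received n gs))) i - c n i))"
  proof (rule sum.cong)
    fix n assume "n \<in> I"
    show "(\<Sum>t\<in>{t\<in>{1..T}. haar n t \<noteq> 0}. F n t) = (\<Sum>k<length (received n gs). inner_d d (received n gs ! k)
        (\<lambda>i. fg_pred d (1/2^m) G (fg_state d G (take k (received n gs))) i - c n i))"
      using recv_reindex[where gs=gs and n=n and F="\<lambda>L y. inner_d d y (\<lambda>i. fg_pred d (1/2^m) G (fg_state d G L) i - c n i)"]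
      unfolding F_def lgs by simp
  qed simp
  finally show ?thesis using step1 unfolding gs_def R_def T_def I_def by simp
qed


definition blk :: "nat \<Rightarrow> nat \<Rightarrow> nat set" where "blk k b = {2^k*b+1..2^k*(b+1)}"
definition bsum :: "(nat \<Rightarrow> vec) \<Rightarrow> nat \<Rightarrow> nat \<Rightarrow> nat \<Rightarrow> real" where
  "bsum u k b i = (\<Sum>\<tau>\<in>blk k b. u \<tau> i)"
definition avg :: "(nat \<Rightarrow> vec) \<Rightarrow> nat \<Rightarrow> nat \<Rightarrow> nat \<Rightarrow> real" where
  "avg u k t i = bsum u k ((t-1) div 2^k) i / 2^k"
definition coef :: "nat \<Rightarrow> (nat \<Rightarrow> vec) \<Rightarrow> nat \<times> nat \<Rightarrow> vec" where
  "coef m u n = (if fst n = 0 then ubar (2^m) u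
     else (\<lambda>i. (bsum u (fst n - 1) (2*(snd n - 1)) i - bsum u (fst n - 1) (2*(snd n - 1)+1) i) / 2^(fst n)))"

lemma blk_mem: assumes "1 \<le> t" shows "t \<in> blk k b \<longleftrightarrow> (t-1) div 2^k = b"
proof -
  define q where "q = (t-1) div 2^k"
  define r where "r = (t-1) mod 2^k"
  have tq: "t - 1 = 2^k*q + r" unfolding q_def r_def by simp
  have r: "r < 2^k" unfolding r_def by simp
  show ?thesis
  proof
    assume "t \<in> blk k b"
    then have a: "2^k*b+1 \<le> t" "t \<le> 2^k*(b+1)" by (auto simp: blk_def)
    show "(t-1) div 2^k = b" by (rule div_nat_eqI) (use a in auto)
  next
    assume "(t-1) div 2^k = b"
    then have "q = b" unfolding q_def .
    moreover have "2^k*q + r + 1 \<le> 2^k*(q+1)" using r by simp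
    ultimately show "t \<in> blk k b" using tq assms unfolding blk_def by auto
  qed
qed

lemma card_blk[simp]: "card (blk k b) = 2^k"
  unfolding blk_def by simp

lemma finite_blk[simp]: "finite (blk k b)"
  unfolding blk_def by simp

lemma blk_split:
  assumes "1 \<le> j"
  shows "blk j b = blk (j-1) (2*b) \<union> blk (j-1) (2*b+1)" "blk (j-1) (2*b) \<inter> blk (j-1) (2*b+1) = {}"
proof -
  obtain j' where j: "j = Suc j'" using assms by (cases j) auto
  show "blk j b = blk (j-1) (2*b) \<union> blk (j-1) (2*b+1)"
    unfolding j blk_def by (auto simp: algebra_simps)
  show "blk (j-1) (2*b) \<inter> blk (j-1) (2*b+1) = {}"
    unfolding j blk_def by (auto simp: algebra_simps)
qed

lemma bsum_split: "1 \<le> j \<Longrightarrow> bsum u j b i = bsum u (j-1) (2*b) i + bsum u (j-1) (2*b+1) i"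
  unfolding bsum_def using blk_split[of j b] by (simp add: sum.union_disjoint)

lemma haar_alt:
  assumes j: "1 \<le> j" and l: "1 \<le> l"
  shows "haar (j,l) t = (if t \<in> blk (j-1) (2*(l-1)) then 1 else if t \<in> blk (j-1) (2*(l-1)+1) then -1 else 0)"
proof -
  obtain j' where jj: "j = Suc j'" using j by (cases j) auto
  obtain l' where ll: "l = Suc l'" using l by (cases l) auto
  show ?thesis unfolding jj ll blk_def by (auto simp: algebra_simps)
qed

lemma level_sum:
  assumes j: "1 \<le> j" "j \<le> m" and t: "1 \<le> t" "t \<le> 2^m"
  shows "(\<Sum>l\<in>{1..2^(m-j)}. haar (j,l) t * coef m u (j,l) i) = avg u (j-1) t i - avg u j t i"
proof -
  define b where "b = (t-1) div 2^j"
  define q where "q = (t-1) div 2^(j-1)"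
  have pj: "(2::nat)^j = 2^(j-1)*2" using j by (cases j) auto
  have bq: "b = q div 2" unfolding b_def q_def pj by (simp add: div_mult2_eq)
  have bl: "b < 2^(m-j)"
  proof -
    have "(2::nat)^m = 2^(m-j) * 2^j" using j by (simp add: power_add[symmetric])
    then have "t - 1 < 2^(m-j) * 2^j" using t by simp
    then show ?thesis unfolding b_def by (simp add: div_less_iff_less_mult)
  qed
  have l0: "b+1 \<in> {1..2^(m-j)}" using bl by simp
  have tq: "t \<in> blk (j-1) q" using blk_mem[OF t(1)] q_def by simp
  have zero: "haar (j,l) t = 0" if "l \<in> {1..2^(m-j)}" "l \<noteq> b+1" for l
  proof -
    have l1: "1 \<le> l" using that by simp
    have "t \<notin> blk (j-1) (2*(l-1))"
    proof
      assume "t \<in> blk (j-1) (2*(l-1))"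
      then have "q = 2*(l-1)" using blk_mem[OF t(1)] q_def by simp
      then have "b = l - 1" using bq by simp
      then show False using that l1 by simp
    qed
    moreover have "t \<notin> blk (j-1) (2*(l-1)+1)"
    proof
      assume "t \<in> blk (j-1) (2*(l-1)+1)"
      then have "q = 2*(l-1)+1" using blk_mem[OF t(1)] q_def by simp
      then have "b = l - 1" using bq by simp
      then show False using that l1 by simp
    qed
    ultimately show ?thesis using haar_alt[OF j(1) l1] by simp
  qed
  have "(\<Sum>l\<in>{1..2^(m-j)}. haar (j,l) t * coef m u (j,l) i) = haar (j,b+1) t * coef m u (j,b+1) i
      + (\<Sum>l\<in>{1..2^(m-j)} - {b+1}. haar (j,l) t * coef m u (j,l) i)"
    by (rule sum.remove) (use l0 in simp_all)
  also have "(\<Sum>l\<in>{1..2^(m-j)} - {b+1}. haar (j,l) t * coef m u (j,l) i) = 0"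
    by (rule sum.neutral) (use zero in auto)
  finally have "(\<Sum>l\<in>{1..2^(m-j)}. haar (j,l) t * coef m u (j,l) i) = haar (j,b+1) t * coef m u (j,b+1) i"
    by simp
  also have "\<dots> = avg u (j-1) t i - avg u j t i"
  proof -
    define B1 where "B1 = bsum u (j-1) (2*b) i"
    define B2 where "B2 = bsum u (j-1) (2*b+1) i"
    have j0: "j \<noteq> 0" using j by simp
    have cf: "coef m u (j,b+1) i = (B1 - B2)/2^j" unfolding coef_def B1_def B2_def using j0 by simp
    have aj: "avg u j t i = (B1 + B2)/2^j"
      unfolding avg_def B1_def B2_def b_def[symmetric] using bsum_split[OF j(1)] by simp
    have p2: "(2::real)^j = 2 * 2^(j-1)" using j by (cases j) auto
    show ?thesis
    proof (cases "q = 2*b")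
      case True
      then have h: "haar (j,b+1) t = 1" using haar_alt[OF j(1), of "b+1" t] tq by simp
      have a1: "avg u (j-1) t i = B1/2^(j-1)" unfolding avg_def B1_def q_def[symmetric] True ..
      show ?thesis unfolding h cf aj a1 p2 by (simp add: field_simps)
    next
      case False
      then have qq: "q = 2*b+1" using bq by presburger
      have nt: "t \<notin> blk (j-1) (2*b)" using blk_mem[OF t(1)] q_def False by simp
      then have h: "haar (j,b+1) t = -1" using haar_alt[OF j(1), of "b+1" t] tq qq by simp
      have a1: "avg u (j-1) t i = B2/2^(j-1)" unfolding avg_def B2_def q_def[symmetric] qq ..
      show ?thesis unfolding h cf aj a1 p2 by (simp add: field_simps)
    qed
  qed
  finally show ?thesis .
qed

lemma avg0: "1 \<le> t \<Longrightarrow> avg u 0 t i = u t i"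
proof -
  assume t: "1 \<le> t"
  have "blk 0 (t-1) = {t}" unfolding blk_def using t by auto
  then show ?thesis unfolding avg_def bsum_def by simp
qed

lemma avgm: assumes "1 \<le> t" "t \<le> 2^m" shows "avg u m t i = ubar (2^m) u i"
proof -
  have "(t-1) div 2^m = 0" using assms by simp
  moreover have "blk m 0 = {1..2^m}" unfolding blk_def by simp
  ultimately show ?thesis unfolding avg_def bsum_def ubar_def by simp
qed

lemma haar_idx_eq: "haar_idx m = insert (0,0) (Sigma {1..m} (\<lambda>j. {1..2^(m-j)}))"
  unfolding haar_idx_def by auto

lemma telescope: fixes f :: "nat \<Rightarrow> real" and n :: nat shows "(\<Sum>j\<in>{1..n}. f (j-1) - f j) = f 0 - f n"
  by (induction n) (simp_all add: sum.cl_ivl_Suc)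


lemma haar_expansion:
  assumes t: "1 \<le> t" "t \<le> 2^m"
  shows "u t i = (\<Sum>n\<in>haar_idx m. haar n t * coef m u n i)"
proof -
  define Sg where "Sg = Sigma {1..m} (\<lambda>j. {1..2^(m-j)::nat})"
  have fin: "finite Sg" unfolding Sg_def by simp
  have nz: "(0,0) \<notin> Sg" unfolding Sg_def by auto
  have "(\<Sum>n\<in>haar_idx m. haar n t * coef m u n i) = haar (0,0) t * coef m u (0,0) i + (\<Sum>n\<in>Sg. haar n t * coef m u n i)"
    unfolding haar_idx_eq Sg_def[symmetric] using fin nz by simp
  also have "(\<Sum>n\<in>Sg. haar n t * coef m u n i) = (\<Sum>j\<in>{1..m}. \<Sum>l\<in>{1..2^(m-j)}. haar (j,l) t * coef m u (j,l) i)"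
    unfolding Sg_def by (subst sum.Sigma) (simp_all add: case_prod_unfold del: haar.simps)
  also have "\<dots> = (\<Sum>j\<in>{1..m}. avg u (j-1) t i - avg u j t i)"
    by (rule sum.cong[OF refl]) (rule level_sum, use t in auto)
  also have "\<dots> = avg u 0 t i - avg u m t i" by (rule telescope)
  also have "\<dots> = u t i - ubar (2^m) u i" using avg0[OF t(1)] avgm[OF t] by simp
  finally show ?thesis by (simp add: coef_def)
qed

lemma norm_d_add_le: "norm_d d (\<lambda>i. x i + y i) \<le> norm_d d x + norm_d d y"
  unfolding norm_d_L2 by (rule L2_set_triangle_ineq)

lemma norm_d_diff_le: "norm_d d (\<lambda>i. x i - y i) \<le> norm_d d x + norm_d d y"
proof -
  have "norm_d d (\<lambda>i. x i - y i) = norm_d d (\<lambda>i. x i + (-1) * y i)" by simp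
  also have "\<dots> \<le> norm_d d x + norm_d d (\<lambda>i. (-1) * y i)" by (rule norm_d_add_le)
  also have "norm_d d (\<lambda>i. (-1) * y i) = norm_d d y" by (subst norm_d_scale) simp
  finally show ?thesis .
qed

lemma norm_d_sum_le: "norm_d d (\<lambda>i. \<Sum>\<tau>\<in>A. w \<tau> i) \<le> (\<Sum>\<tau>\<in>A. norm_d d (w \<tau>))"
proof (induction A rule: infinite_finite_induct)
  case (infinite A)
  then show ?case by simp
next
  case empty
  then show ?case by simp
next
  case (insert a A)
  have "norm_d d (\<lambda>i. \<Sum>\<tau>\<in>insert a A. w \<tau> i) = norm_d d (\<lambda>i. w a i + (\<Sum>\<tau>\<in>A. w \<tau> i))"
    using insert by simp
  also have "\<dots> \<le> norm_d d (w a) + norm_d d (\<lambda>i. \<Sum>\<tau>\<in>A. w \<tau> i)" by (rule norm_d_add_le)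
  also have "\<dots> \<le> norm_d d (w a) + (\<Sum>\<tau>\<in>A. norm_d d (w \<tau>))" using insert by simp
  finally show ?case using insert by simp
qed

lemma norm_d_div: "0 < c \<Longrightarrow> norm_d d (\<lambda>i. x i / c) = norm_d d x / c"
proof -
  assume c: "0 < c"
  have "norm_d d (\<lambda>i. x i / c) = norm_d d (\<lambda>i. (1/c) * x i)" by simp
  also have "\<dots> = norm_d d x / c" by (simp only: norm_d_scale) (use c in simp)
  finally show ?thesis .
qed

lemma umax_ge: assumes "\<tau> \<in> {1..T}" shows "norm_d d (u \<tau>) \<le> umax d T u"
  unfolding umax_def using assms by (intro Max_ge) auto

lemma umax_nonneg: assumes "1 \<le> T" shows "0 \<le> umax d T u"
  using order_trans[OF norm_d_nonneg'[of d "u 1"] umax_ge[of 1 T d u]] assms by simp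

lemma blk_sub: assumes "1 \<le> j" "j \<le> m" "l \<in> {1..2^(m-j)}"
  shows "blk j (l-1) \<subseteq> {1..2^m}"
proof -
  have "(2::nat)^j * l \<le> 2^j * 2^(m-j)" using assms by simp
  also have "\<dots> = 2^m" using assms by (simp add: power_add[symmetric])
  finally show ?thesis using assms unfolding blk_def by auto
qed

lemma ubar_norm: assumes "1 \<le> m \<or> True" shows "norm_d d (ubar (2^m) u) \<le> umax d (2^m) u"
proof -
  have "norm_d d (ubar (2^m) u) = norm_d d (\<lambda>i. \<Sum>t=1..2^m. u t i) / 2^m"
    unfolding ubar_def by (subst norm_d_div) simp_all
  also have "\<dots> \<le> (\<Sum>t=1..2^m. norm_d d (u t)) / 2^m"
    by (intro divide_right_mono norm_d_sum_le) simp
  also have "\<dots> \<le> (\<Sum>t=1..(2::nat)^m. umax d (2^m) u) / 2^m"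
    by (intro divide_right_mono sum_mono umax_ge) simp_all
  also have "\<dots> = umax d (2^m) u" by simp
  finally show ?thesis .
qed

lemma bsum_norm: "norm_d d (\<lambda>i. bsum u k b i) \<le> (\<Sum>\<tau>\<in>blk k b. norm_d d (u \<tau>))"
  unfolding bsum_def by (rule norm_d_sum_le)

lemma coef_norm:
  assumes j: "1 \<le> j" "j \<le> m" and l: "l \<in> {1..2^(m-j)}"
  shows "norm_d d (coef m u (j,l)) \<le> umax d (2^m) u"
proof -
  have j0: "j \<noteq> 0" using j by simp
  have sub: "blk (j-1) (2*(l-1)) \<subseteq> {1..2^m}" "blk (j-1) (2*(l-1)+1) \<subseteq> {1..2^m}"
    using blk_sub[OF j l] blk_split[OF j(1), of "l-1"] by auto
  have "norm_d d (coef m u (j,l)) = norm_d d (\<lambda>i. bsum u (j-1) (2*(l-1)) i - bsum u (j-1) (2*(l-1)+1) i) / 2^j"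
    unfolding coef_def using j0 by (simp add: norm_d_div)
  also have "\<dots> \<le> (norm_d d (\<lambda>i. bsum u (j-1) (2*(l-1)) i) + norm_d d (\<lambda>i. bsum u (j-1) (2*(l-1)+1) i)) / 2^j"
    by (intro divide_right_mono norm_d_diff_le) simp
  also have "\<dots> \<le> ((\<Sum>\<tau>\<in>blk (j-1) (2*(l-1)). umax d (2^m) u) + (\<Sum>\<tau>\<in>blk (j-1) (2*(l-1)+1). umax d (2^m) u)) / 2^j"
  proof (intro divide_right_mono add_mono)
    show "norm_d d (\<lambda>i. bsum u (j-1) (2*(l-1)) i) \<le> (\<Sum>\<tau>\<in>blk (j-1) (2*(l-1)). umax d (2^m) u)"
      using bsum_norm[of d u "j-1" "2*(l-1)"] sum_mono[of "blk (j-1) (2*(l-1))" "\<lambda>\<tau>. norm_d d (u \<tau>)" "\<lambda>_. umax d (2^m) u"]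
        umax_ge sub by force
    show "norm_d d (\<lambda>i. bsum u (j-1) (2*(l-1)+1) i) \<le> (\<Sum>\<tau>\<in>blk (j-1) (2*(l-1)+1). umax d (2^m) u)"
      using bsum_norm[of d u "j-1" "2*(l-1)+1"] sum_mono[of "blk (j-1) (2*(l-1)+1)" "\<lambda>\<tau>. norm_d d (u \<tau>)" "\<lambda>_. umax d (2^m) u"]
        umax_ge sub by force
  qed simp
  also have "\<dots> = umax d (2^m) u"
  proof -
    have "(2::real)^(j-1) + 2^(j-1) = 2^j" using j by (cases j) auto
    then show ?thesis by (simp add: distrib_right[symmetric])
  qed
  finally show ?thesis .
qed


lemma cs_sum: fixes a :: "'b \<Rightarrow> real" assumes "finite A"
  shows "(\<Sum>x\<in>A. a x) \<le> sqrt (real (card A)) * sqrt (\<Sum>x\<in>A. (a x)^2)"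
proof -
  have "(\<Sum>x\<in>A. a x) \<le> (\<Sum>x\<in>A. \<bar>(\<lambda>_. 1::real) x\<bar> * \<bar>a x\<bar>)" by (intro sum_mono) simp
  also have "\<dots> \<le> L2_set (\<lambda>_. 1::real) A * L2_set a A" by (rule L2_set_mult_ineq)
  also have "\<dots> = sqrt (real (card A)) * sqrt (\<Sum>x\<in>A. (a x)^2)"
    by (simp add: L2_set_constant L2_set_def)
  finally show ?thesis .
qed

lemma blocks_union: "(\<Sum>l\<in>{1..L}. \<Sum>\<tau>\<in>blk j (l-1). f \<tau>) = (\<Sum>\<tau>\<in>{1..2^j*L}. (f \<tau> :: real))"
proof (induction L)
  case 0
  then show ?case by simp
next
  case (Suc L)
  have e: "{1..2^j*Suc L} = {1..2^j*L} \<union> blk j L" unfolding blk_def by (auto simp: algebra_simps)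
  have dj: "{1..2^j*L} \<inter> blk j L = {}" unfolding blk_def by auto
  have "(\<Sum>l\<in>{1..Suc L}. \<Sum>\<tau>\<in>blk j (l-1). f \<tau>) = (\<Sum>l\<in>{1..L}. \<Sum>\<tau>\<in>blk j (l-1). f \<tau>) + (\<Sum>\<tau>\<in>blk j L. f \<tau>)"
    by simp
  also have "\<dots> = (\<Sum>\<tau>\<in>{1..2^j*Suc L}. f \<tau>)" unfolding Suc e using dj by (simp add: sum.union_disjoint)
  finally show ?case .
qed

lemma const_run: assumes "\<forall>t. a \<le> t \<and> t < b \<longrightarrow> u (Suc t) = u t" shows "a \<le> \<tau> \<Longrightarrow> \<tau> \<le> b \<Longrightarrow> u \<tau> = u a"
proof (induction \<tau>)
  case 0
  then show ?case by simp
next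
  case (Suc \<tau>)
  show ?case
  proof (cases "a = Suc \<tau>")
    case True
    then show ?thesis by simp
  next
    case False
    then have "a \<le> \<tau>" using Suc by simp
    then show ?thesis using Suc assms by simp
  qed
qed

context
  fixes m j :: nat and d :: nat and u :: "nat \<Rightarrow> vec"
  assumes j: "1 \<le> j" "j \<le> m"
begin

definition "wv \<tau> = (\<lambda>i. u \<tau> i - ubar (2^m) u i)"

lemma coef_w: assumes l: "l \<in> {1..2^(m-j)}"
  shows "coef m u (j,l) i = ((\<Sum>\<tau>\<in>blk (j-1) (2*(l-1)). wv \<tau> i) - (\<Sum>\<tau>\<in>blk (j-1) (2*(l-1)+1). wv \<tau> i)) / 2^j"
proof -
  have j0: "j \<noteq> 0" using j by simp
  show ?thesis unfolding coef_def wv_def bsum_def using j0 by (simp add: sum_subtractf)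
qed

lemma coef_norm_w: assumes l: "l \<in> {1..2^(m-j)}"
  shows "norm_d d (coef m u (j,l)) \<le> (\<Sum>\<tau>\<in>blk j (l-1). norm_d d (wv \<tau>)) / 2^j"
proof -
  have "coef m u (j,l) = (\<lambda>i. ((\<Sum>\<tau>\<in>blk (j-1) (2*(l-1)). wv \<tau> i) - (\<Sum>\<tau>\<in>blk (j-1) (2*(l-1)+1). wv \<tau> i)) / 2^j)"
    using coef_w[OF l] by (simp add: fun_eq_iff)
  then have "norm_d d (coef m u (j,l)) = norm_d d (\<lambda>i. (\<Sum>\<tau>\<in>blk (j-1) (2*(l-1)). wv \<tau> i) - (\<Sum>\<tau>\<in>blk (j-1) (2*(l-1)+1). wv \<tau> i)) / 2^j"
    by (simp add: norm_d_div)
  also have "\<dots> \<le> (norm_d d (\<lambda>i. \<Sum>\<tau>\<in>blk (j-1) (2*(l-1)). wv \<tau> i) + norm_d d (\<lambda>i. \<Sum>\<tau>\<in>blk (j-1) (2*(l-1)+1). wv \<tau> i)) / 2^j"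
    by (intro divide_right_mono norm_d_diff_le) simp
  also have "\<dots> \<le> ((\<Sum>\<tau>\<in>blk (j-1) (2*(l-1)). norm_d d (wv \<tau>)) + (\<Sum>\<tau>\<in>blk (j-1) (2*(l-1)+1). norm_d d (wv \<tau>))) / 2^j"
    by (intro divide_right_mono add_mono norm_d_sum_le) simp
  also have "(\<Sum>\<tau>\<in>blk (j-1) (2*(l-1)). norm_d d (wv \<tau>)) + (\<Sum>\<tau>\<in>blk (j-1) (2*(l-1)+1). norm_d d (wv \<tau>))
      = (\<Sum>\<tau>\<in>blk j (l-1). norm_d d (wv \<tau>))"
    using blk_split[OF j(1), of "l-1"] by (simp add: sum.union_disjoint)
  finally show ?thesis .
qed

lemma coef_e: assumes l: "l \<in> {1..2^(m-j)}"
  shows "norm_d d (coef m u (j,l)) * sqrt (2^j) \<le> sqrt (\<Sum>\<tau>\<in>blk j (l-1). (norm_d d (wv \<tau>))^2)"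
proof -
  have p: "(0::real) < 2^j" by simp
  have "(\<Sum>\<tau>\<in>blk j (l-1). norm_d d (wv \<tau>)) \<le> sqrt (2^j) * sqrt (\<Sum>\<tau>\<in>blk j (l-1). (norm_d d (wv \<tau>))^2)"
    using cs_sum[of "blk j (l-1)" "\<lambda>\<tau>. norm_d d (wv \<tau>)"] by simp
  then have "norm_d d (coef m u (j,l)) \<le> sqrt (2^j) * sqrt (\<Sum>\<tau>\<in>blk j (l-1). (norm_d d (wv \<tau>))^2) / 2^j"
    using coef_norm_w[OF l] p by (smt (verit) divide_right_mono)
  then have "norm_d d (coef m u (j,l)) * sqrt (2^j) \<le> sqrt (2^j) * sqrt (\<Sum>\<tau>\<in>blk j (l-1). (norm_d d (wv \<tau>))^2) / 2^j * sqrt (2^j)"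
    by (intro mult_right_mono) auto
  also have "\<dots> = sqrt (\<Sum>\<tau>\<in>blk j (l-1). (norm_d d (wv \<tau>))^2)"
  proof -
    have "sqrt ((2::real)^j) * sqrt (2^j) = 2^j" by simp
    then show ?thesis using p by (simp add: field_simps)
  qed
  finally show ?thesis .
qed

lemma coef_zero_if_const: assumes l: "l \<in> {1..2^(m-j)}"
  and c: "\<forall>t. 2^j*(l-1)+1 \<le> t \<and> t < 2^j*(l-1)+2^j \<longrightarrow> u (Suc t) = u t"
  shows "coef m u (j,l) = (\<lambda>i. 0)"
proof -
  define a where "a = 2^j*(l-1)+1"
  have cst: "u \<tau> = u a" if "\<tau> \<in> blk j (l-1)" for \<tau>
  proof -
    have "a \<le> \<tau>" "\<tau> \<le> 2^j*(l-1)+2^j" using that unfolding a_def blk_def by (auto simp: algebra_simps)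
    then show ?thesis using const_run[of a "2^j*(l-1)+2^j" u \<tau>] c unfolding a_def by auto
  qed
  have s1: "blk (j-1) (2*(l-1)) \<subseteq> blk j (l-1)" "blk (j-1) (2*(l-1)+1) \<subseteq> blk j (l-1)"
    using blk_split[OF j(1), of "l-1"] by auto
  have b1: "bsum u (j-1) (2*(l-1)) i = 2^(j-1) * u a i" for i
    unfolding bsum_def using s1(1) cst by (simp add: subset_iff)
  have b2: "bsum u (j-1) (2*(l-1)+1) i = 2^(j-1) * u a i" for i
    unfolding bsum_def using s1(2) cst by (simp add: subset_iff)
  have j0: "j \<noteq> 0" using j by simp
  show ?thesis unfolding coef_def using j0 b1 b2 by (simp add: fun_eq_iff)
qed

lemma nz_card: "card {l\<in>{1..2^(m-j)}. coef m u (j,l) \<noteq> (\<lambda>i. 0)} \<le> switches (2^m) u"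
proof -
  define Z where "Z = {l\<in>{1..2^(m-j)}. coef m u (j,l) \<noteq> (\<lambda>i. 0)}"
  define B where "B = {t\<in>{1..<2^m}. u (t+1) \<noteq> u t}"
  define P where "P l t = (2^j*(l-1)+1 \<le> t \<and> t < 2^j*(l-1)+2^j \<and> u (Suc t) \<noteq> u t)" for l t
  have ex: "\<exists>t. P l t" if "l \<in> Z" for l
  proof (rule ccontr)
    assume "\<not> (\<exists>t. P l t)"
    then have "\<forall>t. 2^j*(l-1)+1 \<le> t \<and> t < 2^j*(l-1)+2^j \<longrightarrow> u (Suc t) = u t" unfolding P_def by auto
    then have "coef m u (j,l) = (\<lambda>i. 0)" using coef_zero_if_const that unfolding Z_def by auto
    then show False using that unfolding Z_def by simp
  qed
  define f where "f l = (SOME t. P l t)" for l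
  have fP: "P l (f l)" if "l \<in> Z" for l unfolding f_def using ex[OF that] by (rule someI_ex)
  have fblk: "f l \<in> blk j (l-1)" if "l \<in> Z" for l
    using fP[OF that] unfolding P_def blk_def by (auto simp: algebra_simps)
  have inj: "inj_on f Z"
  proof (rule inj_onI)
    fix x y assume x: "x \<in> Z" and y: "y \<in> Z" and e: "f x = f y"
    have f1: "1 \<le> f x" using fP[OF x] unfolding P_def by simp
    have "(f x - 1) div 2^j = x - 1" using fblk[OF x] blk_mem[OF f1] by simp
    moreover have "(f y - 1) div 2^j = y - 1" using fblk[OF y] blk_mem[of "f y"] fP[OF y] unfolding P_def by simp
    moreover have "1 \<le> x" "1 \<le> y" using x y unfolding Z_def by auto
    ultimately show "x = y" using e by simp
  qed
  have img: "f ` Z \<subseteq> B"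
  proof
    fix t assume "t \<in> f ` Z"
    then obtain l where l: "l \<in> Z" and t: "t = f l" by auto
    have lr: "l \<in> {1..2^(m-j)}" using l unfolding Z_def by simp
    have "blk j (l-1) \<subseteq> {1..2^m}" by (rule blk_sub[OF j lr])
    moreover have "2^j*(l-1)+2^j \<in> blk j (l-1)"
    proof -
      obtain l' where "l = Suc l'" using lr by (cases l) auto
      then show ?thesis unfolding blk_def by (simp add: algebra_simps)
    qed
    ultimately have "2^j*(l-1)+2^j \<le> (2::nat)^m" by auto
    then show "t \<in> B" using fP[OF l] unfolding t B_def P_def by auto
  qed
  have "card Z \<le> card B" by (rule card_inj_on_le[OF inj img]) (simp add: B_def)
  then show ?thesis unfolding Z_def B_def switches_def by simp
qed

lemma level_bound:
  "(\<Sum>l\<in>{1..2^(m-j)}. norm_d d (coef m u (j,l)) * sqrt (2^j))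
     \<le> sqrt (real (switches (2^m) u)) * sqrt (Ebar d (2^m) u)"
proof -
  define Z where "Z = {l\<in>{1..2^(m-j)}. coef m u (j,l) \<noteq> (\<lambda>i. 0)}"
  define e where "e l = sqrt (\<Sum>\<tau>\<in>blk j (l-1). (norm_d d (wv \<tau>))^2)" for l
  have "(\<Sum>l\<in>{1..2^(m-j)}. norm_d d (coef m u (j,l)) * sqrt (2^j)) = (\<Sum>l\<in>Z. norm_d d (coef m u (j,l)) * sqrt (2^j))"
    unfolding Z_def by (rule sum.mono_neutral_right) auto
  also have "\<dots> \<le> (\<Sum>l\<in>Z. e l)" unfolding e_def by (rule sum_mono, rule coef_e) (simp add: Z_def)
  also have "\<dots> \<le> sqrt (real (card Z)) * sqrt (\<Sum>l\<in>Z. (e l)^2)" by (rule cs_sum) (simp add: Z_def)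
  also have "\<dots> \<le> sqrt (real (switches (2^m) u)) * sqrt (Ebar d (2^m) u)"
  proof (rule mult_mono)
    show "sqrt (real (card Z)) \<le> sqrt (real (switches (2^m) u))" using nz_card unfolding Z_def by simp
    have "(\<Sum>l\<in>Z. (e l)^2) \<le> (\<Sum>l\<in>{1..2^(m-j)}. (e l)^2)"
      by (rule sum_mono2) (auto simp: Z_def)
    also have "\<dots> = (\<Sum>l\<in>{1..2^(m-j)}. \<Sum>\<tau>\<in>blk j (l-1). (norm_d d (wv \<tau>))^2)"
      unfolding e_def by (simp add: sum_nonneg)
    also have "\<dots> = (\<Sum>\<tau>\<in>{1..2^j*2^(m-j)}. (norm_d d (wv \<tau>))^2)" by (rule blocks_union)
    also have "\<dots> = Ebar d (2^m) u"
    proof -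
      have "(2::nat)^j*2^(m-j) = 2^m" using j by (simp add: power_add[symmetric])
      then show ?thesis unfolding Ebar_def wv_def by simp
    qed
    finally show "sqrt (\<Sum>l\<in>Z. (e l)^2) \<le> sqrt (Ebar d (2^m) u)" by simp
  qed (simp_all add: sum_nonneg)
  finally show ?thesis .
qed
end


lemma lin_aux: fixes x a b :: real assumes "x \<le> a + 1 + 2*b" "0 \<le> b" "0 \<le> a" shows "1 + x \<le> 3*(1 + b + a)"
proof -
  have e: "3*(1+b+a) = 3 + 3*b + 3*a" by (simp add: algebra_simps)
  show ?thesis unfolding e using assms by linarith
qed

lemma ln_bound: fixes U T :: real assumes U: "0 \<le> U" and T: "1 \<le> T"
  shows "1 + ln (1 + U*(1+T)*T) \<le> 3*(1 + ln T + ln (1+U))"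
proof -
  have T0: "0 < T" using T by simp
  have a: "1 + U*(1+T)*T \<le> (1+U)*(2*T*T)"
  proof -
    have "1 \<le> 2*T*T" using T by (smt (verit) mult_le_cancel_left1 one_le_power power2_eq_square)
    moreover have "U*((1+T)*T) \<le> U*(2*T*T)"
    proof (rule mult_left_mono)
      show "(1+T)*T \<le> 2*T*T" using T by (simp add: algebra_simps)
    qed (use U in simp)
    ultimately show ?thesis by (simp add: algebra_simps)
  qed
  have p: "0 < 1 + U*(1+T)*T" using U T0 by (simp add: add_pos_nonneg)
  have p2: "0 < (1+U)*(2*T*T)" using U T0 by simp
  have "ln (1 + U*(1+T)*T) \<le> ln ((1+U)*(2*T*T))" using a p p2 by (subst ln_le_cancel_iff) auto
  also have "\<dots> = ln (1+U) + ln 2 + 2 * ln T" using U T0 by (simp add: ln_mult)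
  also have "ln (2::real) \<le> 1" using ln_le_minus_one[of 2] by simp
  then have "ln (1+U) + ln 2 + 2 * ln T \<le> ln (1+U) + 1 + 2 * ln T" by simp
  finally have "ln (1 + U*(1+T)*T) \<le> ln (1+U) + 1 + 2 * ln T" by simp
  moreover have "0 \<le> ln T" "0 \<le> ln (1+U)" using T U by simp_all
  ultimately show ?thesis by (rule lin_aux)
qed

lemma m_le_ln: "real m \<le> 2 * ln ((2::real)^m)"
proof -
  have "1 - 1/2 \<le> ln (2::real)" using ln_lb0[of 2] by simp
  then have "real m * (1/2) \<le> real m * ln 2" by (intro mult_left_mono) auto
  then show ?thesis by (simp add: ln_realpow)
qed

lemma card_haar_idx: "real (card (haar_idx m)) \<le> 1 + real m * 2^m"
proof -
  define Sg where "Sg = Sigma {1..m} (\<lambda>j. {1..2^(m-j)::nat})"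
  have "card Sg = (\<Sum>j\<in>{1..m}. card {1..2^(m-j)::nat})" unfolding Sg_def by (simp add: card_SigmaI)
  also have "\<dots> \<le> (\<Sum>j\<in>{1..m}. (2::nat)^m)" by (intro sum_mono) (simp add: power_increasing)
  finally have c: "card Sg \<le> m * 2^m" by simp
  have "card (haar_idx m) \<le> Suc (card Sg)" unfolding haar_idx_eq Sg_def[symmetric] by (rule card_insert_le_m1) (auto simp: card_insert_if) 
  then have "card (haar_idx m) \<le> 1 + m * 2^m" using c by simp
  then have "real (card (haar_idx m)) \<le> real (1 + m * 2^m)" by (simp only: of_nat_le_iff)
  then show ?thesis by simp
qed


lemma sum_haar_idx: fixes f :: "nat \<times> nat \<Rightarrow> real"
  shows "(\<Sum>n\<in>haar_idx m. f n) = f (0,0) + (\<Sum>j\<in>{1..m}. \<Sum>l\<in>{1..2^(m-j)}. f (j,l))"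
proof -
  define Sg where "Sg = Sigma {1..m} (\<lambda>j. {1..2^(m-j)::nat})"
  have fin: "finite Sg" unfolding Sg_def by simp
  have nz: "(0,0) \<notin> Sg" unfolding Sg_def by auto
  have "(\<Sum>n\<in>haar_idx m. f n) = f (0,0) + (\<Sum>n\<in>Sg. f n)"
    unfolding haar_idx_eq Sg_def[symmetric] using fin nz by simp
  also have "(\<Sum>n\<in>Sg. f n) = (\<Sum>j\<in>{1..m}. \<Sum>l\<in>{1..2^(m-j)}. f (j,l))"
    unfolding Sg_def by (subst sum.Sigma) (simp_all add: case_prod_unfold)
  finally show ?thesis .
qed

lemma final_alg: fixes L G X Y :: real assumes "1 \<le> L" "0 \<le> G" "0 \<le> X" "0 \<le> Y"
  shows "2*L*G + 48*L*G*(2*X + 4*L*Y) \<le> (192*G) * L^2 * (1 + X + Y)"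
proof -
  have "L*1 \<le> L*L" using assms(1) by (intro mult_left_mono) auto
  then have LL: "L \<le> L^2" by (simp add: power2_eq_square)
  have h1: "L*G \<le> L^2*G" using LL assms by (intro mult_right_mono) auto
  have h2: "L*G*X \<le> L^2*G*X" by (rule mult_right_mono[OF h1]) (use assms in simp)
  have h3: "0 \<le> L^2*G" using assms by simp
  have e1: "2*L*G + 48*L*G*(2*X + 4*L*Y) = 2*(L*G) + 96*(L*G*X) + 192*(L^2*G*Y)"
    by (simp add: algebra_simps power2_eq_square)
  have e2: "(192*G) * L^2 * (1 + X + Y) = 192*(L^2*G) + 192*(L^2*G*X) + 192*(L^2*G*Y)"
    by (simp add: algebra_simps)
  have h4: "0 \<le> L^2*G*X" using h3 assms by simp
  show ?thesis unfolding e1 e2 using h1 h2 h3 h4 by linarith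
qed

lemma main_bound:
  fixes G :: real and m d :: nat and u :: "nat \<Rightarrow> vec"
  assumes G: "0 < G" and m: "1 \<le> m" and uV: "\<forall>t\<in>{1..2^m}. u t \<in> Vd d" and env: "valid_env d G A S"
  shows "haar_regret m d G 1 A S u \<le> (192*G) * (1 + ln (2^m) + ln (1 + umax d (2^m) u))^2
     * (1 + norm_d d (ubar (2^m) u) * sqrt (2^m) + sqrt (real (switches (2^m) u) * Ebar d (2^m) u))"
proof -
  define gs where "gs = map snd (haar_run m d G 1 S (2^m))"
  define U where "U = umax d (2^m) u"
  define Lam where "Lam = 1 + ln ((2::real)^m) + ln (1 + U)"
  define Nn where "Nn n = (if fst n = 0 then (2::nat)^m else 2^(fst n))" for n :: "nat \<times> nat"
  define eps where "eps = (1::real)/2^m"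
  define I where "I = haar_idx m"
  define K where "K = real (switches (2^m) u)"
  define E where "E = Ebar d (2^m) u"
  define cn where "cn n = norm_d d (coef m u n)" for n
  have eps0: "0 < eps" unfolding eps_def by simp
  have U0: "0 \<le> U" unfolding U_def by (rule umax_nonneg) simp
  have lnT: "0 \<le> ln ((2::real)^m)" by simp
  have Lam1: "1 \<le> Lam" unfolding Lam_def using U0 lnT by simp
  have lnU0: "0 \<le> ln (1 + U)" using U0 by simp
  have m2: "2 + real m \<le> 2*Lam"
  proof -
    have "2*Lam = 2 + 2*ln ((2::real)^m) + 2*ln (1+U)" unfolding Lam_def by simp
    then show ?thesis using m_le_ln[of m] lnU0 by linarith
  qed
  have K0: "0 \<le> K" "0 \<le> E" unfolding K_def E_def Ebar_def by (auto intro: sum_nonneg)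
  have ex: "\<forall>t\<in>{1..2^m}. \<forall>i. u t i = (\<Sum>n\<in>haar_idx m. haar n t * coef m u n i)"
    using haar_expansion by auto
  have dec: "haar_regret m d G 1 A S u \<le> (\<Sum>n\<in>I. \<Sum>k<length (received n gs).
       inner_d d (received n gs ! k) (\<lambda>i. fg_pred d eps G (fg_state d G (take k (received n gs))) i - coef m u n i))"
    using regret_decomp[OF G env uV ex] unfolding gs_def I_def eps_def .
  have RV: "\<forall>p\<in>set (haar_run m d G 1 S (2^m)). fst p \<in> Vd d \<and> snd p \<in> Vd d \<and> norm_d d (snd p) \<le> G"
    by (rule run_Vd[OF G env])
  have gsn: "\<forall>g\<in>set gs. norm_d d g \<le> G" unfolding gs_def using RV by auto
  have lgs: "length gs = 2^m" unfolding gs_def by simp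
  have mem: "n = (0,0) \<or> (\<exists>j l. n = (j,l) \<and> 1 \<le> j \<and> j \<le> m \<and> l \<in> {1..2^(m-j)})" if "n \<in> I" for n
    using that unfolding I_def haar_idx_def by auto
  have cnU: "cn n \<le> U" if "n \<in> I" for n
  proof -
    from mem[OF that] show ?thesis
    proof
      assume "n = (0,0)"
      then show ?thesis unfolding cn_def U_def coef_def by (simp add: ubar_norm)
    next
      assume "\<exists>j l. n = (j,l) \<and> 1 \<le> j \<and> j \<le> m \<and> l \<in> {1..2^(m-j)}"
      then obtain j l where "n = (j,l)" "1 \<le> j" "j \<le> m" "l \<in> {1..2^(m-j)}" by blast
      then show ?thesis unfolding cn_def U_def using coef_norm by blast
    qed
  qed
  have NnT: "Nn n \<le> 2^m" if "n \<in> I" for n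
  proof -
    from mem[OF that] show ?thesis
    proof
      assume "n = (0,0)" then show ?thesis unfolding Nn_def by simp
    next
      assume "\<exists>j l. n = (j,l) \<and> 1 \<le> j \<and> j \<le> m \<and> l \<in> {1..2^(m-j)}"
      then obtain j l where "n = (j,l)" "1 \<le> j" "j \<le> m" by blast
      then show ?thesis unfolding Nn_def by (simp add: power_increasing)
    qed
  qed
  have lenN: "length (received n gs) \<le> Nn n" if "n \<in> I" for n
  proof -
    have l: "length (received n gs) = card {t\<in>{1..2^m}. haar n t \<noteq> 0}"
      using received_length[of n gs] lgs by simp
    from mem[OF that] show ?thesis
    proof
      assume n0: "n = (0,0)"
      have "card {t\<in>{1..2^m}. haar n t \<noteq> 0} \<le> card {1..(2::nat)^m}" by (rule card_mono) auto
      then have "length (received n gs) \<le> 2^m" using l by simp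
      then show ?thesis unfolding Nn_def using n0 by simp
    next
      assume "\<exists>j l. n = (j,l) \<and> 1 \<le> j \<and> j \<le> m \<and> l \<in> {1..2^(m-j)}"
      then obtain j l where n: "n = (j,l)" "1 \<le> j" by blast
      then show ?thesis unfolding l Nn_def using haar_support_card[of j "2^m" l] by simp
    qed
  qed
  have per: "(\<Sum>k<length (received n gs).
       inner_d d (received n gs ! k) (\<lambda>i. fg_pred d eps G (fg_state d G (take k (received n gs))) i - coef m u n i))
      \<le> eps*G + 48*Lam*G*(cn n * sqrt (1 + real (Nn n)))" if n: "n \<in> I" for n
  proof -
    have fc: "(\<Sum>k<length (received n gs).
       inner_d d (received n gs ! k) (\<lambda>i. fg_pred d eps G (fg_state d G (take k (received n gs))) i - coef m u n i))
      \<le> eps*G + cn n * (G*sqrt(1+real (Nn n))) * 16 * (1 + ln(1 + cn n*(1+real (Nn n))/eps))"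
      unfolding cn_def by (rule fg_copy[OF G eps0 received_norm[OF gsn] lenN[OF n]])
    have cn0: "0 \<le> cn n" unfolding cn_def by (rule norm_d_nonneg')
    have Tr: "(1::real) \<le> 2^m" by simp
    have a: "cn n*(1+real (Nn n))/eps \<le> U*(1+2^m)*2^m"
    proof -
      have "cn n*(1+real (Nn n))/eps = cn n*(1+real (Nn n))*2^m" unfolding eps_def by simp
      also have "\<dots> \<le> U*(1+2^m)*2^m"
      proof (intro mult_right_mono mult_mono)
        show "cn n \<le> U" by (rule cnU[OF n])
        have "real (Nn n) \<le> 2^m" using NnT[OF n] by (metis of_nat_le_iff of_nat_numeral of_nat_power)
        then show "1 + real (Nn n) \<le> 1 + 2^m" by simp
      qed (use U0 in auto)
      finally show ?thesis .
    qed
    have b: "ln (1 + cn n*(1+real (Nn n))/eps) \<le> ln (1 + U*(1+2^m)*2^m)"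
    proof -
      have p1: "0 < 1 + cn n*(1+real (Nn n))/eps" using cn0 eps0 by (simp add: add_pos_nonneg)
      have p2: "0 < 1 + U*(1+2^m)*(2::real)^m" using U0 by (simp add: add_pos_nonneg)
      show ?thesis using a p1 p2 by (subst ln_le_cancel_iff) auto
    qed
    have c: "1 + ln (1 + U*(1+2^m)*2^m) \<le> 3*Lam" unfolding Lam_def by (rule ln_bound[OF U0 Tr])
    have d0: "1 + ln(1 + cn n*(1+real (Nn n))/eps) \<le> 3*Lam" using b c by linarith
    have "16 * (1 + ln(1 + cn n*(1+real (Nn n))/eps)) \<le> 16 * (3*Lam)" using d0 by (rule mult_left_mono) simp
    then have d: "16 * (1 + ln(1 + cn n*(1+real (Nn n))/eps)) \<le> 48*Lam" by simp
    have e: "0 \<le> cn n * (G*sqrt(1+real (Nn n)))" using cn0 G by simp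
    have "cn n * (G*sqrt(1+real (Nn n))) * 16 * (1 + ln(1 + cn n*(1+real (Nn n))/eps))
        = (cn n * (G*sqrt(1+real (Nn n)))) * (16 * (1 + ln(1 + cn n*(1+real (Nn n))/eps)))" by simp
    also have "\<dots> \<le> (cn n * (G*sqrt(1+real (Nn n)))) * (48*Lam)" using d e by (rule mult_left_mono)
    also have "\<dots> = 48*Lam*G*(cn n * sqrt (1 + real (Nn n)))" by simp
    finally show ?thesis using fc by linarith
  qed
  have s1: "haar_regret m d G 1 A S u \<le> (\<Sum>n\<in>I. eps*G + 48*Lam*G*(cn n * sqrt (1 + real (Nn n))))"
    using dec sum_mono[of I _ "\<lambda>n. eps*G + 48*Lam*G*(cn n * sqrt (1 + real (Nn n)))", OF per] by linarith
  have s2: "(\<Sum>n\<in>I. eps*G + 48*Lam*G*(cn n * sqrt (1 + real (Nn n))))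
      = real (card I) * eps * G + 48*Lam*G*(\<Sum>n\<in>I. cn n * sqrt (1 + real (Nn n)))"
    by (simp add: sum.distrib sum_distrib_left)
  have s3: "real (card I) * eps * G \<le> 2*Lam*G"
  proof -
    have "real (card I) * eps \<le> (1 + real m * 2^m) / 2^m"
      unfolding I_def eps_def using card_haar_idx[of m] by (simp add: divide_right_mono)
    also have "\<dots> \<le> 1 + real m" by (simp add: field_simps)
    also have "\<dots> \<le> 2*Lam" using m2 by linarith
    finally show ?thesis using G by (simp add: mult_right_mono)
  qed
  have s4: "(\<Sum>n\<in>I. cn n * sqrt (1 + real (Nn n))) \<le> 2*(norm_d d (ubar (2^m) u) * sqrt (2^m)) + 4*Lam*sqrt (K*E)"
  proof -
    have split: "(\<Sum>n\<in>I. cn n * sqrt (1 + real (Nn n))) = norm_d d (ubar (2^m) u) * sqrt (1 + 2^m)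
        + (\<Sum>j\<in>{1..m}. \<Sum>l\<in>{1..2^(m-j)}. norm_d d (coef m u (j,l)) * sqrt (1 + 2^j))"
      unfolding I_def sum_haar_idx cn_def Nn_def by (simp add: coef_def)
    have a1: "sqrt (1 + (2::real)^m) \<le> 2 * sqrt (2^m)"
    proof -
      have o: "(1::real) \<le> 2^m" by simp
      have "sqrt (1 + (2::real)^m) \<le> sqrt (4 * 2^m)" by (intro real_sqrt_le_mono) (use o in linarith)
      also have "\<dots> = 2 * sqrt (2^m)" by (simp add: real_sqrt_mult)
      finally show ?thesis .
    qed
    have a2: "(\<Sum>l\<in>{1..2^(m-j)}. norm_d d (coef m u (j,l)) * sqrt (1 + 2^j)) \<le> 2 * (sqrt K * sqrt E)"
      if j: "j \<in> {1..m}" for j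
    proof -
      have "(\<Sum>l\<in>{1..2^(m-j)}. norm_d d (coef m u (j,l)) * sqrt (1 + 2^j))
          \<le> (\<Sum>l\<in>{1..2^(m-j)}. 2 * (norm_d d (coef m u (j,l)) * sqrt (2^j)))"
      proof (rule sum_mono)
        fix l
        have o: "(1::real) \<le> 2^j" by simp
        have "sqrt (1 + (2::real)^j) \<le> sqrt (4 * 2^j)" by (intro real_sqrt_le_mono) (use o in linarith)
        also have "\<dots> = 2 * sqrt (2^j)" by (simp add: real_sqrt_mult)
        finally have "sqrt (1 + (2::real)^j) \<le> 2 * sqrt (2^j)" .
        then have "norm_d d (coef m u (j,l)) * sqrt (1 + 2^j) \<le> norm_d d (coef m u (j,l)) * (2 * sqrt (2^j))"
          by (intro mult_left_mono) (simp_all add: norm_d_nonneg')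
        then show "norm_d d (coef m u (j,l)) * sqrt (1 + 2^j) \<le> 2 * (norm_d d (coef m u (j,l)) * sqrt (2^j))"
          by simp
      qed
      also have "\<dots> = 2 * (\<Sum>l\<in>{1..2^(m-j)}. norm_d d (coef m u (j,l)) * sqrt (2^j))"
        by (simp add: sum_distrib_left)
      also have "\<dots> \<le> 2 * (sqrt K * sqrt E)"
        using level_bound[of j m d u] j unfolding K_def E_def by simp
      finally show ?thesis .
    qed
    have a3: "(\<Sum>j\<in>{1..m}. \<Sum>l\<in>{1..2^(m-j)}. norm_d d (coef m u (j,l)) * sqrt (1 + 2^j)) \<le> 4*Lam*sqrt (K*E)"
    proof -
      have "(\<Sum>j\<in>{1..m}. \<Sum>l\<in>{1..2^(m-j)}. norm_d d (coef m u (j,l)) * sqrt (1 + 2^j))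
         \<le> (\<Sum>j\<in>{1..m}. 2 * (sqrt K * sqrt E))" by (rule sum_mono) (rule a2)
      also have "\<dots> = real m * (2 * sqrt (K*E))" by (simp add: real_sqrt_mult)
      also have "\<dots> \<le> (2*Lam) * (2 * sqrt (K*E))"
      proof (rule mult_right_mono)
        show "real m \<le> 2*Lam" using m2 by linarith
      qed (use K0 in simp)
      finally show ?thesis by simp
    qed
    have nn: "0 \<le> norm_d d (ubar (2^m) u)" by (rule norm_d_nonneg')
    have "norm_d d (ubar (2^m) u) * sqrt (1 + 2^m) \<le> norm_d d (ubar (2^m) u) * (2 * sqrt (2^m))"
      using a1 nn by (rule mult_left_mono)
    then show ?thesis unfolding split using a3 by simp
  qed
  have X0: "0 \<le> norm_d d (ubar (2^m) u) * sqrt (2^m)" by (simp add: norm_d_nonneg')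
  have Y0: "0 \<le> sqrt (K*E)" using K0 by simp
  have "haar_regret m d G 1 A S u \<le> 2*Lam*G + 48*Lam*G*(2*(norm_d d (ubar (2^m) u) * sqrt (2^m)) + 4*Lam*sqrt (K*E))"
  proof -
    have "48*Lam*G*(\<Sum>n\<in>I. cn n * sqrt (1 + real (Nn n))) \<le> 48*Lam*G*(2*(norm_d d (ubar (2^m) u) * sqrt (2^m)) + 4*Lam*sqrt (K*E))"
      using s4 Lam1 G by (intro mult_left_mono) auto
    then show ?thesis using s1 s2 s3 by linarith
  qed
  also have "\<dots> \<le> (192*G) * Lam^2 * (1 + norm_d d (ubar (2^m) u) * sqrt (2^m) + sqrt (K*E))"
    by (rule final_alg[OF Lam1 _ X0 Y0]) (use G in simp)
  finally show ?thesis unfolding Lam_def U_def K_def E_def .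
qed

theorem lemma5:
  fixes G :: real
  assumes "G > 0"
  shows "\<exists>C::real. \<exists>k::nat. C > 0 \<and>
    (\<forall>m d u A S. 1 \<le> m \<and> 1 \<le> d \<and> (\<forall>t\<in>{1..2^m}. u t \<in> Vd d) \<and> valid_env d G A S \<longrightarrow>
       haar_regret m d G 1 A S u
         \<le> C * (1 + ln (2^m) + ln (1 + umax d (2^m) u)) ^ k
             * (1 + norm_d d (ubar (2^m) u) * sqrt (2^m)
                  + sqrt (real (switches (2^m) u) * Ebar d (2^m) u)))"
proof -
  have *: "\<forall>m d u A S. 1 \<le> m \<and> 1 \<le> d \<and> (\<forall>t\<in>{1..2^m}. u t \<in> Vd d) \<and> valid_env d G A S \<longrightarrow>
       haar_regret m d G 1 A S u
         \<le> (192*G) * (1 + ln (2^m) + ln (1 + umax d (2^m) u)) ^ 2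
             * (1 + norm_d d (ubar (2^m) u) * sqrt (2^m)
                  + sqrt (real (switches (2^m) u) * Ebar d (2^m) u))"
  proof (intro allI impI)
    fix m d u A S
    assume h: "1 \<le> m \<and> 1 \<le> d \<and> (\<forall>t\<in>{1..(2::nat)^m}. u t \<in> Vd d) \<and> valid_env d G A S"
    then show "haar_regret m d G 1 A S u
         \<le> (192*G) * (1 + ln (2^m) + ln (1 + umax d (2^m) u)) ^ 2
             * (1 + norm_d d (ubar (2^m) u) * sqrt (2^m)
                  + sqrt (real (switches (2^m) u) * Ebar d (2^m) u))"
      using main_bound[of G m u d A S] assms by blast
  qed
  show ?thesis
    by (rule exI[where x="192*G"], rule exI[where x="2::nat"], rule conjI[OF _ *]) (use assms in simp)
qed

end
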